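(* Assume (A1) $X$ is $C^\infty$; (A2) $\sigma_{\min}\big[\int_{\mathcal{R}}\frac{\rho}{\Delta t^2}\frac{\partial X}{\partial\theta}(x,\theta_-)^T\frac{\partial X}{\partial\theta}(x,\theta_-)\,dx\big]\ge\sigma_X>0$; (A3) for every $x\in\mathcal{C}$, $\partial^3 v_x/\partial\theta^3$ exists and is continuous. Then there exist $r>0$ and an $\alpha$-independent constant $M_V>0$ such that for every $\beta\in(0,1]$ there is $\alpha_3(\beta)>0$ with the following property: for every $\alpha\in(0,\alpha_3(\beta)]$, the first-order PGM generates a sequence $\{(\theta^k,w^k)\}$ such that (1) $V_\alpha(\theta^k,w^k)\le M_V$ for all $k$; (2) $\theta^k\in\mathcal{B}(\theta_-,r\beta/2)$ for all $k$; (3) each manifold projection converges at a rate of at least $3/4$, i.e. every projection update $\theta\mapsto\theta^+$ satisfies $V_\alpha(\theta^+,w)\le\frac34V_\alpha(\theta,w)$.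
   Context: Setting. $\theta\in\mathbb{R}^n$; robot region $\mathcal{R}\subset\mathbb{R}^3$ with density $\rho>0$; forward kinematics $X(x,\theta)\in\mathbb{R}^3$; finite contact set $\mathcal{C}\subset\mathcal{R}$; for $x\in\mathcal{C}$, $v_x:\mathbb{R}^n\to\mathbb{R}^{3\times V_x}$ and $w_x\in\mathbb{R}^{V_x}$; $w$ is the concatenation, feasible if $w_x\ge0$ and $\mathbf{1}^Tw_x\le1$ for every $x$. Fixed data $\Delta t>0$, $\theta_-,\theta_{--},\tau\in\mathbb{R}^n$, $\alpha\in(0,1]$. $A(\theta)=\int_{\mathcal{R}}\frac{\rho}{\Delta t^2}\frac{\partial X}{\partial\theta}(x,\theta)^T(X(x,\theta)-X(x,\theta_-))dx$, $B(\theta,w)=\int_{\mathcal{R}}\frac{\rho}{\Delta t^2}\frac{\partial X}{\partial\theta}(x,\theta)^T(X(x,\theta_{--})-X(x,\theta_-))dx-\sum_{x\in\mathcal{C}}\frac{\partial X}{\partial\theta}(x,\theta)^Tv_x(\theta)w_x-\tau$, $G_\alpha=\frac1\alpha A+B$, $V_\alpha(\theta,w)=\|G_\alpha(\theta,w)\|^2$, $K(\theta)=\int_{\mathcal{R}}\frac{\rho\|X(x,\theta)-X(x,\theta_-)\|^2}{2\Delta t^2}dx$. $\mathcal{B}(\theta_-,s)$ is the closed ball of radius $s$ about $\theta_-$. First-order PGM. Fix $\eta>1$, $\epsilon>0$. Manifold projection of $\theta$ for a given $w$: repeat $\theta\leftarrow\theta^+:=\theta-\frac{\partial G_\alpha}{\partial\theta}(\theta,w)^{-1}G_\alpha(\theta,w)$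 while $\|G_\alpha(\theta,w)\|\ne0$. Initialize $w^0=0$, $\theta^0=\theta_-$, $\gamma=1$, and project $\theta^0$ with $w^0$. For $k=1,2,\dots$: with $J=\frac{\partial G_\alpha}{\partial\theta}^{-1}\frac{\partial G_\alpha}{\partial w}$ at $(\theta^{k-1},w^{k-1})$, let $\Delta w$ minimize $-\nabla K(\theta^{k-1})^TJ\Delta w+\frac12\Delta w^TJ^T\nabla^2K(\theta^{k-1})J\Delta w+\|\Delta w\|^2/\gamma$ subject to $w^{k-1}+\Delta w$ feasible; set $w^k=w^{k-1}+\Delta w$, $\theta^k=\theta^{k-1}$, and project $\theta^k$ with $w^k$. If $K(\theta^k)>K(\theta^{k-1})$, set $\gamma\leftarrow\eta\gamma$, $\theta^k\leftarrow\theta^{k-1}$, $w^k\leftarrow w^{k-1}$; otherwise $\gamma\leftarrow\gamma/\eta$, returning if $\|\theta^k-\theta^{k-1}\|_\infty<\epsilon$. *)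

theory Defs
  imports "HOL-Analysis.Analysis" "HOL-Library.Extended_Nat"
begin

section \<open>Smoothness classes (via iterated Frechet directional derivatives)\<close>

fun iter_dir :: "('a::real_normed_vector \<Rightarrow> 'b::real_normed_vector) \<Rightarrow> 'a list \<Rightarrow> 'a \<Rightarrow> 'b" where
  "iter_dir f [] = f"
| "iter_dir f (u # us) = (\<lambda>x. frechet_derivative (iter_dir f us) (at x) u)"

definition Ck_on :: "nat \<Rightarrow> 'a::real_normed_vector set \<Rightarrow> ('a \<Rightarrow> 'b::real_normed_vector) \<Rightarrow> bool" where
  "Ck_on k U f \<longleftrightarrow> open U \<and>
     (\<forall>us. length us < k \<longrightarrow> (\<forall>x\<in>U. iter_dir f us differentiable (at x))) \<and>
     (\<forall>us. length us \<le> k \<longrightarrow> continuous_on U (iter_dir f us))"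

definition smooth_on :: "'a::real_normed_vector set \<Rightarrow> ('a \<Rightarrow> 'b::real_normed_vector) \<Rightarrow> bool" where
  "smooth_on U f \<longleftrightarrow> (\<forall>k. Ck_on k U f)"

definition sigma_min :: "real^'n^'n \<Rightarrow> real" where
  "sigma_min M = Inf {norm (M *v u) | u. norm u = 1}"

text \<open>Contact forces: for a contact point x in C, the matrix v_x(theta) has columns
  rv x theta j (j < V x); the weights w_x are w x j (j < V x).\<close>
record ('n::finite) robot =
  rX    :: "real^3 \<Rightarrow> real^'n \<Rightarrow> real^3"   (* forward kinematics X(x,theta) *)
  rho   :: "real^3 \<Rightarrow> real"
  rR    :: "(real^3) set"                     (* robot region *)
  rC    :: "(real^3) set"                     (* contact set *)
  rV    :: "real^3 \<Rightarrow> nat"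
  rv    :: "real^3 \<Rightarrow> real^'n \<Rightarrow> nat \<Rightarrow> real^3"  (* columns of v_x(theta) *)
  dt    :: real
  thm1  :: "real^'n"                          (* theta_- *)
  thm2  :: "real^'n"                          (* theta_-- *)
  tau   :: "real^'n"

type_synonym weights = "real^3 \<Rightarrow> nat \<Rightarrow> real"

definition DX :: "('n::finite) robot \<Rightarrow> real^3 \<Rightarrow> real^'n \<Rightarrow> real^'n^3" where
  "DX P x \<theta> = jacobian (rX P x) (at \<theta>)"

definition Aop :: "('n::finite) robot \<Rightarrow> real^'n \<Rightarrow> real^'n" where
  "Aop P \<theta> = integral (rR P) (\<lambda>x. (rho P x / (dt P)\<^sup>2) *\<^sub>R
       (transpose (DX P x \<theta>) *v (rX P x \<theta> - rX P x (thm1 P))))"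

definition Fc :: "('n::finite) robot \<Rightarrow> real^'n \<Rightarrow> weights \<Rightarrow> real^'n" where
  "Fc P \<theta> w = (\<Sum>x\<in>rC P. \<Sum>j<rV P x. w x j *\<^sub>R (transpose (DX P x \<theta>) *v rv P x \<theta> j))"

definition Bop :: "('n::finite) robot \<Rightarrow> real^'n \<Rightarrow> weights \<Rightarrow> real^'n" where
  "Bop P \<theta> w = integral (rR P) (\<lambda>x. (rho P x / (dt P)\<^sup>2) *\<^sub>R
       (transpose (DX P x \<theta>) *v (rX P x (thm2 P) - rX P x (thm1 P)))) - Fc P \<theta> w - tau P"

definition Gop :: "('n::finite) robot \<Rightarrow> real \<Rightarrow> real^'n \<Rightarrow> weights \<Rightarrow> real^'n" where
  "Gop P \<alpha> \<theta> w = (1 / \<alpha>) *\<^sub>R Aop P \<theta> + Bop P \<theta> w"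

definition Vop :: "('n::finite) robot \<Rightarrow> real \<Rightarrow> real^'n \<Rightarrow> weights \<Rightarrow> real" where
  "Vop P \<alpha> \<theta> w = (norm (Gop P \<alpha> \<theta> w))\<^sup>2"

definition Kop :: "('n::finite) robot \<Rightarrow> real^'n \<Rightarrow> real" where
  "Kop P \<theta> = integral (rR P) (\<lambda>x. rho P x * (norm (rX P x \<theta> - rX P x (thm1 P)))\<^sup>2 / (2 * (dt P)\<^sup>2))"

definition dGth :: "('n::finite) robot \<Rightarrow> real \<Rightarrow> real^'n \<Rightarrow> weights \<Rightarrow> real^'n \<Rightarrow> real^'n" where
  "dGth P \<alpha> \<theta> w = frechet_derivative (\<lambda>t. Gop P \<alpha> t w) (at \<theta>)"

text \<open>Partial derivative of G_alpha w.r.t. w applied to dw; G_alpha is affine in w,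
  with w entering only through - Fc.\<close>
definition dGw :: "('n::finite) robot \<Rightarrow> real^'n \<Rightarrow> weights \<Rightarrow> real^'n" where
  "dGw P \<theta> dw = - Fc P \<theta> dw"

definition dGth_ok :: "('n::finite) robot \<Rightarrow> real \<Rightarrow> real^'n \<Rightarrow> weights \<Rightarrow> bool" where
  "dGth_ok P \<alpha> \<theta> w \<longleftrightarrow> (\<lambda>t. Gop P \<alpha> t w) differentiable (at \<theta>) \<and> bij (dGth P \<alpha> \<theta> w)"

definition supp_ok :: "('n::finite) robot \<Rightarrow> weights \<Rightarrow> bool" where
  "supp_ok P w \<longleftrightarrow> (\<forall>x j. x \<notin> rC P \<or> rV P x \<le> j \<longrightarrow> w x j = 0)"

definition feasible :: "('n::finite) robot \<Rightarrow> weights \<Rightarrow> bool" where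
  "feasible P w \<longleftrightarrow> (\<forall>x\<in>rC P. (\<forall>j<rV P x. 0 \<le> w x j) \<and> (\<Sum>j<rV P x. w x j) \<le> 1)"

definition wnorm2 :: "('n::finite) robot \<Rightarrow> weights \<Rightarrow> real" where
  "wnorm2 P w = (\<Sum>x\<in>rC P. \<Sum>j<rV P x. (w x j)\<^sup>2)"

definition projection :: "('n::finite) robot \<Rightarrow> real \<Rightarrow> weights \<Rightarrow> real^'n \<Rightarrow> (nat \<Rightarrow> real^'n) \<Rightarrow> real^'n \<Rightarrow> bool" where
  "projection P \<alpha> w th0 th thstar \<longleftrightarrow> th 0 = th0 \<and>
     (\<forall>i. if Gop P \<alpha> (th i) w = 0 then th (Suc i) = th i
          else dGth_ok P \<alpha> (th i) w \<and>
               th (Suc i) = th i - inv (dGth P \<alpha> (th i) w) (Gop P \<alpha> (th i) w)) \<and>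
     th \<longlonglongrightarrow> thstar"

definition DK :: "('n::finite) robot \<Rightarrow> real^'n \<Rightarrow> real^'n \<Rightarrow> real" where
  "DK P \<theta> u = frechet_derivative (Kop P) (at \<theta>) u"

definition D2K :: "('n::finite) robot \<Rightarrow> real^'n \<Rightarrow> real^'n \<Rightarrow> real^'n \<Rightarrow> real" where
  "D2K P \<theta> u u' = frechet_derivative (\<lambda>t. DK P t u) (at \<theta>) u'"

definition Jmap :: "('n::finite) robot \<Rightarrow> real \<Rightarrow> real^'n \<Rightarrow> weights \<Rightarrow> weights \<Rightarrow> real^'n" where
  "Jmap P \<alpha> \<theta> w dw = inv (dGth P \<alpha> \<theta> w) (dGw P \<theta> dw)"

definition qp_obj :: "('n::finite) robot \<Rightarrow> real \<Rightarrow> real \<Rightarrow> real^'n \<Rightarrow> weights \<Rightarrow> weights \<Rightarrow> real" where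
  "qp_obj P \<alpha> \<gamma> \<theta> w dw =
     - DK P \<theta> (Jmap P \<alpha> \<theta> w dw)
     + 1/2 * D2K P \<theta> (Jmap P \<alpha> \<theta> w dw) (Jmap P \<alpha> \<theta> w dw)
     + wnorm2 P dw / \<gamma>"

definition qp_dom :: "('n::finite) robot \<Rightarrow> weights \<Rightarrow> weights set" where
  "qp_dom P w = {dw. supp_ok P dw \<and> feasible P (\<lambda>x j. w x j + dw x j)}"

text \<open>A run: th k, w k, gam k are the iterates and step parameter after iteration k
  (k = 0: initialisation); wt k, tht k are the tentative weights / projected configuration of
  iteration k >= 1; pr k is the Newton sequence of the projection performed in iteration k
  (pr 0: the initial projection). T is the iteration at which the method returns
  (infinity if it never returns).\<close>
definition pgm_run :: "('n::finite) robot \<Rightarrow> real \<Rightarrow> real \<Rightarrow> real \<Rightarrow>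
    (nat \<Rightarrow> real^'n) \<Rightarrow> (nat \<Rightarrow> weights) \<Rightarrow> (nat \<Rightarrow> real) \<Rightarrow>
    (nat \<Rightarrow> real^'n) \<Rightarrow> (nat \<Rightarrow> weights) \<Rightarrow> (nat \<Rightarrow> nat \<Rightarrow> real^'n) \<Rightarrow> enat \<Rightarrow> bool" where
  "pgm_run P \<alpha> \<eta> \<epsilon> th w gam tht wt pr T \<longleftrightarrow>
     w 0 = (\<lambda>x j. 0) \<and> gam 0 = 1 \<and>
     projection P \<alpha> (w 0) (thm1 P) (pr 0) (th 0) \<and>
     (\<forall>k. 1 \<le> k \<and> enat k \<le> T \<longrightarrow>
        dGth_ok P \<alpha> (th (k-1)) (w (k-1)) \<and>
        (let dw = (\<lambda>x j. wt k x j - w (k-1) x j) in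
          dw \<in> qp_dom P (w (k-1)) \<and>
          (\<forall>d\<in>qp_dom P (w (k-1)).
              qp_obj P \<alpha> (gam (k-1)) (th (k-1)) (w (k-1)) dw
                \<le> qp_obj P \<alpha> (gam (k-1)) (th (k-1)) (w (k-1)) d)) \<and>
        projection P \<alpha> (wt k) (th (k-1)) (pr k) (tht k) \<and>
        (if Kop P (tht k) > Kop P (th (k-1))
         then gam k = \<eta> * gam (k-1) \<and> th k = th (k-1) \<and> w k = w (k-1)
         else gam k = gam (k-1) / \<eta> \<and> th k = tht k \<and> w k = wt k)) \<and>
     (\<forall>k. 1 \<le> k \<and> enat k < T \<longrightarrow>
        \<not> (\<not> Kop P (tht k) > Kop P (th (k-1)) \<and> infnorm (tht k - th (k-1)) < \<epsilon>)) \<and>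
     (\<forall>k. T = enat k \<longrightarrow> 1 \<le> k \<and>
        \<not> Kop P (tht k) > Kop P (th (k-1)) \<and> infnorm (tht k - th (k-1)) < \<epsilon>)"

definition proj_w :: "(nat \<Rightarrow> weights) \<Rightarrow> (nat \<Rightarrow> weights) \<Rightarrow> nat \<Rightarrow> weights" where
  "proj_w w wt k = (if k = 0 then w 0 else wt k)"

end

theory Submission
  imports Defs
begin
lemma lin_basis_bound:
  fixes f :: "real^'n \<Rightarrow> 'b::real_normed_vector"
  assumes "linear f"
  shows "norm (f u) \<le> (\<Sum>i\<in>UNIV. norm (f (axis i 1))) * norm u"
proof -
  have "f u = f (\<Sum>i\<in>UNIV. u$i *\<^sub>R axis i 1)"
    using basis_expansion[of u] by (simp add: scalar_mult_eq_scaleR)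
  also have "\<dots> = (\<Sum>i\<in>UNIV. u$i *\<^sub>R f (axis i 1))"
    using assms by (simp add: linear_sum linear_scale)
  finally have "norm (f u) \<le> (\<Sum>i\<in>UNIV. norm (u$i *\<^sub>R f (axis i 1)))"
    by (metis norm_sum)
  also have "\<dots> \<le> (\<Sum>i\<in>UNIV. norm u * norm (f (axis i 1)))"
    by (intro sum_mono) (simp add: component_le_norm_cart mult_right_mono)
  finally show ?thesis by (simp add: sum_distrib_left mult.commute)
qed

lemma taylor_lip:
  fixes g :: "'a::real_normed_vector \<Rightarrow> 'b::real_normed_vector"
  assumes S: "convex S" and d: "\<And>t. t\<in>S \<Longrightarrow> (g has_derivative g' t) (at t within S)"
    and lip: "\<And>t s v. t\<in>S \<Longrightarrow> s\<in>S \<Longrightarrow> norm (g' t v - g' s v) \<le> L * norm (t - s) * norm v"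
    and t: "t\<in>S" and t': "t'\<in>S" and L: "L \<ge> 0"
  shows "norm (g t' - g t - g' t (t' - t)) \<le> L * (norm (t' - t))\<^sup>2"
proof -
  define T where "T = closed_segment t t'"
  have TS: "T \<subseteq> S" using S t t' by (simp add: T_def closed_segment_subset)
  have lin: "bounded_linear (g' t)" using d[OF t] has_derivative_bounded_linear by blast
  have dT: "((\<lambda>z. g z - g' t z) has_derivative (\<lambda>v. g' z v - g' t v)) (at z within T)" if "z\<in>T" for z
  proof -
    have "(g has_derivative g' z) (at z within T)"
      using d[of z] TS that has_derivative_subset by blast
    moreover have "(g' t has_derivative g' t) (at z within T)"
      using lin by (rule bounded_linear_imp_has_derivative)
    ultimately show ?thesis by (rule has_derivative_diff)
  qed
  have on: "onorm (\<lambda>v. g' z v - g' t v) \<le> L * norm (t' - t)" if "z\<in>T" for z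
  proof (rule onorm_bound)
    show "0 \<le> L * norm (t' - t)" using L by simp
    fix v :: 'a
    have "norm (z - t) \<le> norm (t' - t)" using that unfolding T_def
      by (rule segment_bound1)
    then have "L * norm (z - t) * norm v \<le> L * norm (t' - t) * norm v"
      using L by (simp add: mult_mono mult_right_mono)
    then show "norm (g' z v - g' t v) \<le> L * norm (t' - t) * norm v"
      using lip[of z t v] TS that t by fastforce
  qed
  have "norm ((g t' - g' t t') - (g t - g' t t)) \<le> L * norm (t' - t) * norm (t' - t)"
    by (rule differentiable_bound[OF _ dT on]) (auto simp: T_def)
  moreover have "(g t' - g' t t') - (g t - g' t t) = g t' - g t - g' t (t' - t)"
    using lin by (simp add: linear_diff bounded_linear.linear algebra_simps)
  ultimately show ?thesis by (simp add: power2_eq_square mult.assoc)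
qed

lemma int_scaled:
  fixes h :: "'a::euclidean_space \<Rightarrow> 'b::euclidean_space"
  assumes S: "compact S" and r: "r measurable_on S" and rB: "\<forall>x\<in>S. \<bar>r x\<bar> \<le> B"
    and h: "continuous_on S h"
  shows "(\<lambda>x. r x *\<^sub>R h x) integrable_on S"
proof -
  have Sl: "S \<in> sets lebesgue" using lmeasurable_compact[OF S] fmeasurableD by blast
  obtain K where K: "\<forall>x\<in>S. norm (h x) \<le> K"
    using compact_continuous_image[OF h S] compact_imp_bounded bounded_iff by (metis imageI)
  have "(\<lambda>x. r x *\<^sub>R h x) absolutely_integrable_on S"
  proof (rule measurable_bounded_by_integrable_imp_absolutely_integrable[OF _ Sl])
    show "(\<lambda>x. r x *\<^sub>R h x) \<in> borel_measurable (lebesgue_on S)"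
      using r h Sl by (intro borel_measurable_scaleR) (simp_all add: measurable_on_iff_borel_measurable continuous_imp_measurable_on_sets_lebesgue)
    show "(\<lambda>x. B * K) integrable_on S" using integrable_on_const lmeasurable_compact S by blast
    show "norm (r x *\<^sub>R h x) \<le> B * K" if "x\<in>S" for x
      using rB K that by (simp add: mult_mono')
  qed
  then show ?thesis using absolutely_integrable_on_def by blast
qed

lemma int_scaled_real:
  assumes S: "compact S" and r: "r measurable_on S" and rB: "\<forall>x\<in>S. \<bar>r x\<bar> \<le> B"
  shows "(r :: 'a::euclidean_space \<Rightarrow> real) integrable_on S"
  using int_scaled[OF S r rB, of "\<lambda>x. 1::real"] by simp

lemma int_scaled_bound:
  fixes h :: "'a::euclidean_space \<Rightarrow> 'b::euclidean_space"
  assumes S: "compact S" and r: "r measurable_on S" and rB: "\<forall>x\<in>S. 0 \<le> r x \<and> r x \<le> B"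
    and h: "continuous_on S h" and hK: "\<forall>x\<in>S. norm (h x) \<le> K"
  shows "norm (integral S (\<lambda>x. r x *\<^sub>R h x)) \<le> K * integral S r"
proof -
  have rB': "\<forall>x\<in>S. \<bar>r x\<bar> \<le> B" using rB by auto
  have ri: "r integrable_on S" by (rule int_scaled_real[OF S r rB'])
  have "norm (integral S (\<lambda>x. r x *\<^sub>R h x)) \<le> integral S (\<lambda>x. K * r x)"
  proof (rule integral_norm_bound_integral)
    show "(\<lambda>x. r x *\<^sub>R h x) integrable_on S" by (rule int_scaled[OF S r rB' h])
    show "(\<lambda>x. K * r x) integrable_on S" using integrable_cmul[OF ri, of K] by simp
    show "norm (r x *\<^sub>R h x) \<le> K * r x" if "x\<in>S" for x
      using rB hK that mult_left_mono[of "norm (h x)" K "r x"] by (simp add: mult.commute)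
  qed
  also have "\<dots> = K * integral S r" using integral_mult[OF ri, of K] by simp
  finally show ?thesis .
qed

lemma int_deriv:
  fixes h :: "'a::euclidean_space \<Rightarrow> 'c::euclidean_space \<Rightarrow> 'b::euclidean_space"
  assumes S: "compact S" and r: "r measurable_on S" and rB: "\<forall>x\<in>S. 0 \<le> r x \<and> r x \<le> B"
    and T: "open T" and t: "t \<in> T"
    and ch: "\<And>t. t\<in>T \<Longrightarrow> continuous_on S (\<lambda>x. h x t)"
    and ch': "\<And>v. continuous_on S (\<lambda>x. h' x t v)"
    and lin: "\<And>x. x\<in>S \<Longrightarrow> linear (h' x t)"
    and bd: "\<And>x v. x\<in>S \<Longrightarrow> norm (h' x t v) \<le> C * norm v"
    and tay: "\<And>x t'. x\<in>S \<Longrightarrow> t'\<in>T \<Longrightarrow> norm (h x t' - h x t - h' x t (t' - t)) \<le> L * (norm (t' - t))\<^sup>2"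
  shows "((\<lambda>t. integral S (\<lambda>x. r x *\<^sub>R h x t)) has_derivative (\<lambda>v. integral S (\<lambda>x. r x *\<^sub>R h' x t v))) (at t)"
proof -
  have rB': "\<forall>x\<in>S. \<bar>r x\<bar> \<le> B" using rB by auto
  have ri: "r integrable_on S" by (rule int_scaled_real[OF S r rB'])
  have I0: "0 \<le> integral S r" using ri rB by (simp add: integral_nonneg)
  have i': "(\<lambda>x. r x *\<^sub>R h' x t v) integrable_on S" for v by (rule int_scaled[OF S r rB' ch'])
  have ih: "(\<lambda>x. r x *\<^sub>R h x t') integrable_on S" if "t'\<in>T" for t' by (rule int_scaled[OF S r rB' ch[OF that]])
  have bl: "bounded_linear (\<lambda>v. integral S (\<lambda>x. r x *\<^sub>R h' x t v))"
  proof (rule bounded_linear_intro)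
    fix a b
    have "integral S (\<lambda>x. r x *\<^sub>R h' x t (a + b)) = integral S (\<lambda>x. r x *\<^sub>R h' x t a + r x *\<^sub>R h' x t b)"
      by (rule integral_cong) (simp add: lin linear_add scaleR_add_right)
    also have "\<dots> = integral S (\<lambda>x. r x *\<^sub>R h' x t a) + integral S (\<lambda>x. r x *\<^sub>R h' x t b)"
      by (rule integral_add[OF i' i'])
    finally show "integral S (\<lambda>x. r x *\<^sub>R h' x t (a + b)) = integral S (\<lambda>x. r x *\<^sub>R h' x t a) + integral S (\<lambda>x. r x *\<^sub>R h' x t b)" .
  next
    fix c a
    have "integral S (\<lambda>x. r x *\<^sub>R h' x t (c *\<^sub>R a)) = integral S (\<lambda>x. c *\<^sub>R (r x *\<^sub>R h' x t a))"
      by (rule integral_cong) (simp add: lin linear_scale)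
    then show "integral S (\<lambda>x. r x *\<^sub>R h' x t (c *\<^sub>R a)) = c *\<^sub>R integral S (\<lambda>x. r x *\<^sub>R h' x t a)"
      by (metis integral_cmul)
  next
    fix v
    have "norm (integral S (\<lambda>x. r x *\<^sub>R h' x t v)) \<le> (C * norm v) * integral S r"
      by (rule int_scaled_bound[OF S r rB ch']) (simp add: bd)
    then show "norm (integral S (\<lambda>x. r x *\<^sub>R h' x t v)) \<le> norm v * (C * integral S r)"
      by (simp add: algebra_simps)
  qed
  show ?thesis
    unfolding has_derivative_at_alt
  proof (intro conjI allI impI bl)
    fix e :: real assume e: "e > 0"
    obtain d0 where d0: "d0 > 0" "ball t d0 \<subseteq> T" using T t open_contains_ball by blast
    define d where "d = min d0 (e / (\<bar>L\<bar> * integral S r + 1))"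
    have "\<bar>L\<bar> * integral S r + 1 > 0" using I0 by (simp add: add_nonneg_pos)
    then have dpos: "d > 0" using d0 e by (simp add: d_def)
    show "\<exists>d>0. \<forall>y. norm (y - t) < d \<longrightarrow>
      norm (integral S (\<lambda>x. r x *\<^sub>R h x y) - integral S (\<lambda>x. r x *\<^sub>R h x t) - integral S (\<lambda>x. r x *\<^sub>R h' x t (y - t))) \<le> e * norm (y - t)"
    proof (intro exI[of _ d] conjI allI impI dpos)
      fix y assume y: "norm (y - t) < d"
      then have yT: "y \<in> T" using d0 by (auto simp: d_def dist_norm norm_minus_commute)
      have "integral S (\<lambda>x. r x *\<^sub>R h x y) - integral S (\<lambda>x. r x *\<^sub>R h x t) - integral S (\<lambda>x. r x *\<^sub>R h' x t (y - t))
          = integral S (\<lambda>x. r x *\<^sub>R (h x y - h x t - h' x t (y - t)))"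
        using ih[OF yT] ih[OF t] i'[of "y - t"]
        by (simp add: integral_diff integrable_diff scaleR_diff_right)
      also have "norm \<dots> \<le> (\<bar>L\<bar> * (norm (y - t))\<^sup>2) * integral S r"
      proof (rule int_scaled_bound[OF S r rB])
        show "continuous_on S (\<lambda>x. h x y - h x t - h' x t (y - t))"
          using ch[OF yT] ch[OF t] ch' by (intro continuous_intros)
        show "\<forall>x\<in>S. norm (h x y - h x t - h' x t (y - t)) \<le> \<bar>L\<bar> * (norm (y - t))\<^sup>2"
          using tay yT by (meson abs_ge_self mult_right_mono order_trans zero_le_power2)
      qed
      also have "\<dots> = (\<bar>L\<bar> * integral S r * norm (y - t)) * norm (y - t)"
        by (simp add: power2_eq_square)
      also have "\<dots> \<le> e * norm (y - t)"
      proof (rule mult_right_mono)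
        have "\<bar>L\<bar> * integral S r * norm (y - t) \<le> (\<bar>L\<bar> * integral S r + 1) * d"
          using y I0 by (intro mult_mono) auto
        also have "\<dots> \<le> (\<bar>L\<bar> * integral S r + 1) * (e / (\<bar>L\<bar> * integral S r + 1))"
          using I0 by (intro mult_left_mono) (auto simp: d_def)
        also have "\<dots> = e" using \<open>\<bar>L\<bar> * integral S r + 1 > 0\<close> by simp
        finally show "\<bar>L\<bar> * integral S r * norm (y - t) \<le> e" .
      qed simp
      finally show "norm (integral S (\<lambda>x. r x *\<^sub>R h x y) - integral S (\<lambda>x. r x *\<^sub>R h x t) - integral S (\<lambda>x. r x *\<^sub>R h' x t (y - t))) \<le> e * norm (y - t)" .
    qed
  qed
qed

definition nice :: "'i set \<Rightarrow> ('a::real_normed_vector) set \<Rightarrow> ('i \<Rightarrow> 'a \<Rightarrow> 'b::real_normed_vector) \<Rightarrow> ('i \<Rightarrow> 'a \<Rightarrow> 'a \<Rightarrow> 'b) \<Rightarrow> real \<Rightarrow> bool" where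
  "nice I Bl h h' C \<longleftrightarrow> C \<ge> 0 \<and>
     (\<forall>i\<in>I. \<forall>t\<in>Bl. ((\<lambda>s. h i s) has_derivative h' i t) (at t)) \<and>
     (\<forall>i\<in>I. \<forall>t\<in>Bl. norm (h i t) \<le> C) \<and>
     (\<forall>i\<in>I. \<forall>t\<in>Bl. \<forall>v. norm (h' i t v) \<le> C * norm v) \<and>
     (\<forall>i\<in>I. \<forall>t\<in>Bl. \<forall>s\<in>Bl. \<forall>v. norm (h' i t v - h' i s v) \<le> C * norm (t - s) * norm v)"

lemma niceD:
  assumes "nice I Bl h h' C"
  shows "C \<ge> 0" "\<And>i t. i\<in>I \<Longrightarrow> t\<in>Bl \<Longrightarrow> ((\<lambda>s. h i s) has_derivative h' i t) (at t)"
    "\<And>i t. i\<in>I \<Longrightarrow> t\<in>Bl \<Longrightarrow> norm (h i t) \<le> C"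
    "\<And>i t v. i\<in>I \<Longrightarrow> t\<in>Bl \<Longrightarrow> norm (h' i t v) \<le> C * norm v"
    "\<And>i t s v. i\<in>I \<Longrightarrow> t\<in>Bl \<Longrightarrow> s\<in>Bl \<Longrightarrow> norm (h' i t v - h' i s v) \<le> C * norm (t - s) * norm v"
  using assms unfolding nice_def by simp_all

lemma nice_lin: "nice I Bl h h' C \<Longrightarrow> i\<in>I \<Longrightarrow> t\<in>Bl \<Longrightarrow> bounded_linear (h' i t)"
  by (meson niceD(2) has_derivative_bounded_linear)

lemma nice_val_lip:
  assumes n: "nice I Bl h h' C" and Bl: "convex Bl" and i: "i\<in>I" and t: "t\<in>Bl" and s: "s\<in>Bl"
  shows "norm (h i t - h i s) \<le> C * norm (t - s)"
proof (rule differentiable_bound[OF Bl _ _ t s])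
  show "((\<lambda>s. h i s) has_derivative h' i x) (at x within Bl)" if "x\<in>Bl" for x
    using niceD(2)[OF n i that] has_derivative_at_withinI by blast
  show "onorm (h' i x) \<le> C" if "x\<in>Bl" for x
    by (rule onorm_bound) (use niceD(1,4)[OF n] i that in auto)
qed

lemma nice_taylor:
  assumes n: "nice I Bl h h' C" and Bl: "convex Bl" and i: "i\<in>I" and t: "t\<in>Bl" and s: "s\<in>Bl"
  shows "norm (h i s - h i t - h' i t (s - t)) \<le> C * (norm (s - t))\<^sup>2"
proof (rule taylor_lip[OF Bl _ _ t s niceD(1)[OF n]])
  show "((\<lambda>s. h i s) has_derivative h' i x) (at x within Bl)" if "x\<in>Bl" for x
    using niceD(2)[OF n i that] has_derivative_at_withinI by blast
  show "norm (h' i x v - h' i y v) \<le> C * norm (x - y) * norm v" if "x\<in>Bl" "y\<in>Bl" for x y v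
    using niceD(5)[OF n i that] .
qed

lemma nice_mono:
  assumes n: "nice I Bl h h' C" and CC: "C \<le> C'" and J: "J \<subseteq> I"
  shows "nice J Bl h h' C'"
  unfolding nice_def
proof (intro conjI ballI allI)
  show "0 \<le> C'" using niceD(1)[OF n] CC by simp
  fix i t assume i: "i\<in>J" and t: "t\<in>Bl"
  have i': "i \<in> I" using i J by blast
  show "((\<lambda>s. h i s) has_derivative h' i t) (at t)" using niceD(2)[OF n i' t] .
  show "norm (h i t) \<le> C'" using niceD(3)[OF n i' t] CC by simp
  fix v
  show "norm (h' i t v) \<le> C' * norm v"
    using niceD(4)[OF n i' t, of v] mult_right_mono[OF CC norm_ge_zero[of v]] by simp
  fix s assume s: "s\<in>Bl"
  have "C * norm (t - s) * norm v \<le> C' * norm (t - s) * norm v"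
    using CC by (simp add: mult_right_mono)
  then show "norm (h' i t v - h' i s v) \<le> C' * norm (t - s) * norm v"
    using niceD(5)[OF n i' t s, of v] by simp
qed

lemma nice_reindex: "nice I Bl h h' C \<Longrightarrow> \<phi> ` J \<subseteq> I \<Longrightarrow> nice J Bl (\<lambda>j. h (\<phi> j)) (\<lambda>j. h' (\<phi> j)) C"
  unfolding nice_def by (auto simp: image_subset_iff)

lemma nice_const:
  assumes "C \<ge> 0" "\<And>i. i\<in>I \<Longrightarrow> norm (c i) \<le> C"
  shows "nice I Bl (\<lambda>i t. c i) (\<lambda>i t v. 0) C"
  using assms unfolding nice_def by auto

lemma nice_add:
  assumes f: "nice I Bl f f' C" and g: "nice I Bl g g' C"
  shows "nice I Bl (\<lambda>i t. f i t + g i t) (\<lambda>i t v. f' i t v + g' i t v) (2 * C)"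
  unfolding nice_def
proof (intro conjI ballI allI)
  show "0 \<le> 2 * C" using niceD(1)[OF f] by simp
  fix i t assume i: "i\<in>I" and t: "t\<in>Bl"
  show "((\<lambda>s. f i s + g i s) has_derivative (\<lambda>v. f' i t v + g' i t v)) (at t)"
    by (intro has_derivative_add niceD(2)[OF f i t] niceD(2)[OF g i t])
  show "norm (f i t + g i t) \<le> 2 * C"
    using niceD(3)[OF f i t] niceD(3)[OF g i t] norm_triangle_ineq[of "f i t" "g i t"] by linarith
  fix v
  show "norm (f' i t v + g' i t v) \<le> 2 * C * norm v"
    using niceD(4)[OF f i t, of v] niceD(4)[OF g i t, of v] norm_triangle_ineq[of "f' i t v" "g' i t v"] by linarith
  fix s assume s: "s\<in>Bl"
  show "norm (f' i t v + g' i t v - (f' i s v + g' i s v)) \<le> 2 * C * norm (t - s) * norm v"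
    using niceD(5)[OF f i t s, of v] niceD(5)[OF g i t s, of v]
      norm_triangle_ineq[of "f' i t v - f' i s v" "g' i t v - g' i s v"]
    by (simp add: algebra_simps)
qed

lemma nice_scale:
  assumes f: "nice I Bl f f' C"
  shows "nice I Bl (\<lambda>i t. c *\<^sub>R f i t) (\<lambda>i t v. c *\<^sub>R f' i t v) (\<bar>c\<bar> * C)"
  unfolding nice_def
proof (intro conjI ballI allI)
  show "0 \<le> \<bar>c\<bar> * C" using niceD(1)[OF f] by simp
  fix i t assume i: "i\<in>I" and t: "t\<in>Bl"
  show "((\<lambda>s. c *\<^sub>R f i s) has_derivative (\<lambda>v. c *\<^sub>R f' i t v)) (at t)"
    by (intro has_derivative_scaleR_right niceD(2)[OF f i t])
  show "norm (c *\<^sub>R f i t) \<le> \<bar>c\<bar> * C"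
    using niceD(3)[OF f i t] by (simp add: mult_left_mono)
  fix v
  show "norm (c *\<^sub>R f' i t v) \<le> \<bar>c\<bar> * C * norm v"
    using niceD(4)[OF f i t, of v] by (simp add: mult_left_mono mult.assoc)
  fix s assume s: "s\<in>Bl"
  have "norm (c *\<^sub>R f' i t v - c *\<^sub>R f' i s v) = \<bar>c\<bar> * norm (f' i t v - f' i s v)"
    by (metis norm_scaleR scaleR_diff_right)
  also have "\<dots> \<le> \<bar>c\<bar> * (C * norm (t - s) * norm v)"
    using niceD(5)[OF f i t s, of v] by (simp add: mult_left_mono)
  finally show "norm (c *\<^sub>R f' i t v - c *\<^sub>R f' i s v) \<le> \<bar>c\<bar> * C * norm (t - s) * norm v"
    by (simp add: mult.assoc)
qed

lemma nice_diff:
  assumes f: "nice I Bl f f' C" and g: "nice I Bl g g' C"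
  shows "nice I Bl (\<lambda>i t. f i t - g i t) (\<lambda>i t v. f' i t v - g' i t v) (2 * C)"
proof -
  have g': "nice I Bl (\<lambda>i t. (-1) *\<^sub>R g i t) (\<lambda>i t v. (-1) *\<^sub>R g' i t v) C"
    using nice_scale[OF g, of "-1"] by simp
  have "nice I Bl (\<lambda>i t. f i t + (-1) *\<^sub>R g i t) (\<lambda>i t v. f' i t v + (-1) *\<^sub>R g' i t v) (2 * C)"
    using nice_add[OF f g'] by simp
  then show ?thesis by simp
qed

lemma nice_sum:
  assumes K: "finite K" and f: "\<And>k. k\<in>K \<Longrightarrow> nice I Bl (f k) (f' k) C" and C: "C \<ge> 0"
  shows "nice I Bl (\<lambda>i t. \<Sum>k\<in>K. f k i t) (\<lambda>i t v. \<Sum>k\<in>K. f' k i t v) (real (card K) * C)"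
  unfolding nice_def
proof (intro conjI ballI allI)
  show "0 \<le> real (card K) * C" using C by simp
  fix i t assume i: "i\<in>I" and t: "t\<in>Bl"
  show "((\<lambda>s. \<Sum>k\<in>K. f k i s) has_derivative (\<lambda>v. \<Sum>k\<in>K. f' k i t v)) (at t)"
    by (intro has_derivative_sum niceD(2)[OF f i t])
  show "norm (\<Sum>k\<in>K. f k i t) \<le> real (card K) * C"
  proof -
    have "norm (\<Sum>k\<in>K. f k i t) \<le> (\<Sum>k\<in>K. C)"
      by (rule sum_norm_le) (metis niceD(3) f i t)
    then show ?thesis by simp
  qed
  fix v
  show "norm (\<Sum>k\<in>K. f' k i t v) \<le> real (card K) * C * norm v"
  proof -
    have "norm (\<Sum>k\<in>K. f' k i t v) \<le> (\<Sum>k\<in>K. C * norm v)"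
      by (rule sum_norm_le) (metis niceD(4) f i t)
    then show ?thesis by simp
  qed
  fix s assume s: "s\<in>Bl"
  have "norm ((\<Sum>k\<in>K. f' k i t v) - (\<Sum>k\<in>K. f' k i s v)) = norm (\<Sum>k\<in>K. f' k i t v - f' k i s v)"
    by (simp add: sum_subtractf)
  also have "\<dots> \<le> (\<Sum>k\<in>K. C * norm (t - s) * norm v)"
    by (rule sum_norm_le) (metis niceD(5) f i t s)
  finally show "norm ((\<Sum>k\<in>K. f' k i t v) - (\<Sum>k\<in>K. f' k i s v)) \<le> real (card K) * C * norm (t - s) * norm v"
    by simp
qed

lemma nice_cong:
  assumes n: "nice I Bl h h' C" and hg: "\<And>i t. i\<in>I \<Longrightarrow> h i t = g i t"
    and hg': "\<And>i t v. i\<in>I \<Longrightarrow> t\<in>Bl \<Longrightarrow> h' i t v = g' i t v"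
  shows "nice I Bl g g' C"
  unfolding nice_def
proof (intro conjI ballI allI)
  show "0 \<le> C" using niceD(1)[OF n] .
  fix i t assume i: "i\<in>I" and t: "t\<in>Bl"
  have e1: "(\<lambda>s. g i s) = (\<lambda>s. h i s)" using hg[OF i] by simp
  have e2: "g' i t = h' i t" using hg'[OF i t] by (simp add: fun_eq_iff)
  show "((\<lambda>s. g i s) has_derivative g' i t) (at t)" unfolding e1 e2 using niceD(2)[OF n i t] .
  show "norm (g i t) \<le> C" using niceD(3)[OF n i t] hg[OF i] by simp
  fix v show "norm (g' i t v) \<le> C * norm v" using niceD(4)[OF n i t] e2 by simp
  fix s assume s: "s\<in>Bl"
  show "norm (g' i t v - g' i s v) \<le> C * norm (t - s) * norm v"
    using niceD(5)[OF n i t s] hg'[OF i t] hg'[OF i s] by simp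
qed

lemma nice_scaleR_vec:
  assumes f: "nice I Bl f f' C"
  shows "nice I Bl (\<lambda>i t. f i t *\<^sub>R a) (\<lambda>i t v. f' i t v *\<^sub>R a) (C * norm a)"
  unfolding nice_def
proof (intro conjI ballI allI)
  show "0 \<le> C * norm a" using niceD(1)[OF f] by simp
  fix i t assume i: "i\<in>I" and t: "t\<in>Bl"
  show "((\<lambda>s. f i s *\<^sub>R a) has_derivative (\<lambda>v. f' i t v *\<^sub>R a)) (at t)"
    by (intro has_derivative_scaleR_left niceD(2)[OF f i t])
  show "norm (f i t *\<^sub>R a) \<le> C * norm a"
    using niceD(3)[OF f i t] by (simp add: mult_right_mono)
  fix v
  show "norm (f' i t v *\<^sub>R a) \<le> C * norm a * norm v"
    using mult_right_mono[OF niceD(4)[OF f i t, of v] norm_ge_zero[of a]] by (simp add: algebra_simps)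
  fix s assume s: "s\<in>Bl"
  have "norm (f' i t v *\<^sub>R a - f' i s v *\<^sub>R a) = norm (f' i t v - f' i s v) * norm a"
    by (metis norm_scaleR scaleR_diff_left real_norm_def)
  also have "\<dots> \<le> (C * norm (t - s) * norm v) * norm a"
    using niceD(5)[OF f i t s, of v] by (simp add: mult_right_mono)
  finally show "norm (f' i t v *\<^sub>R a - f' i s v *\<^sub>R a) \<le> C * norm a * norm (t - s) * norm v"
    by (simp add: algebra_simps)
qed

lemma inner_bound_helper:
  fixes a b :: "'b::real_inner"
  assumes "norm a \<le> x" "norm b \<le> y"
  shows "\<bar>inner a b\<bar> \<le> x * y"
proof -
  have "\<bar>inner a b\<bar> \<le> norm a * norm b" by (rule Cauchy_Schwarz_ineq2)
  also have "\<dots> \<le> x * y" using assms by (intro mult_mono) (auto intro: order_trans[OF norm_ge_zero])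
  finally show ?thesis .
qed

lemma nice_inner:
  fixes f g :: "'i \<Rightarrow> 'a::real_normed_vector \<Rightarrow> 'b::real_inner"
  assumes f: "nice I Bl f f' C" and g: "nice I Bl g g' C" and Bl: "convex Bl"
  shows "nice I Bl (\<lambda>i t. inner (f i t) (g i t)) (\<lambda>i t v. inner (f' i t v) (g i t) + inner (f i t) (g' i t v)) (4 * C\<^sup>2)"
  unfolding nice_def
proof (intro conjI ballI allI)
  have C: "C \<ge> 0" using niceD(1)[OF f] .
  show "0 \<le> 4 * C\<^sup>2" by simp
  fix i t assume i: "i\<in>I" and t: "t\<in>Bl"
  show "((\<lambda>s. inner (f i s) (g i s)) has_derivative (\<lambda>v. inner (f' i t v) (g i t) + inner (f i t) (g' i t v))) (at t)"
    using has_derivative_inner[OF niceD(2)[OF f i t] niceD(2)[OF g i t]] by (simp add: add.commute)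
  have "norm (inner (f i t) (g i t)) \<le> norm (f i t) * norm (g i t)" by (simp add: Cauchy_Schwarz_ineq2)
  also have "\<dots> \<le> C * C" using niceD(3)[OF f i t] niceD(3)[OF g i t] by (simp add: mult_mono')
  finally show "norm (inner (f i t) (g i t)) \<le> 4 * C\<^sup>2" using C by (simp add: power2_eq_square)
  fix v
  have "norm (inner (f' i t v) (g i t) + inner (f i t) (g' i t v))
      \<le> norm (f' i t v) * norm (g i t) + norm (f i t) * norm (g' i t v)"
    using Cauchy_Schwarz_ineq2[of "f' i t v" "g i t"] Cauchy_Schwarz_ineq2[of "f i t" "g' i t v"] by simp
  also have "\<dots> \<le> (C * norm v) * C + C * (C * norm v)"
    using niceD(3)[OF f i t] niceD(3)[OF g i t] niceD(4)[OF f i t, of v] niceD(4)[OF g i t, of v] C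
    by (intro add_mono mult_mono') auto
  also have "\<dots> \<le> 4 * C\<^sup>2 * norm v" using C by (simp add: power2_eq_square algebra_simps)
  finally show "norm (inner (f' i t v) (g i t) + inner (f i t) (g' i t v)) \<le> 4 * C\<^sup>2 * norm v" .
  fix s assume s: "s\<in>Bl"
  have e: "inner (f' i t v) (g i t) + inner (f i t) (g' i t v) - (inner (f' i s v) (g i s) + inner (f i s) (g' i s v))
     = inner (f' i t v - f' i s v) (g i t) + inner (f' i s v) (g i t - g i s)
       + inner (f i t - f i s) (g' i t v) + inner (f i s) (g' i t v - g' i s v)"
    by (simp add: inner_diff_left inner_diff_right)
  have b1: "norm (inner (f' i t v - f' i s v) (g i t)) \<le> (C * norm (t - s) * norm v) * C"
    using inner_bound_helper[OF niceD(5)[OF f i t s, of v] niceD(3)[OF g i t]] by simp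
  have b2: "norm (inner (f' i s v) (g i t - g i s)) \<le> (C * norm v) * (C * norm (t - s))"
    using inner_bound_helper[OF niceD(4)[OF f i s, of v] nice_val_lip[OF g Bl i t s]] by simp
  have b3: "norm (inner (f i t - f i s) (g' i t v)) \<le> (C * norm (t - s)) * (C * norm v)"
    using inner_bound_helper[OF nice_val_lip[OF f Bl i t s] niceD(4)[OF g i t, of v]] by simp
  have b4: "norm (inner (f i s) (g' i t v - g' i s v)) \<le> C * (C * norm (t - s) * norm v)"
    using inner_bound_helper[OF niceD(3)[OF f i s] niceD(5)[OF g i t s, of v]] by simp
  have "norm (inner (f' i t v) (g i t) + inner (f i t) (g' i t v) - (inner (f' i s v) (g i s) + inner (f i s) (g' i s v)))
      \<le> (C * norm (t - s) * norm v) * C + (C * norm v) * (C * norm (t - s)) + (C * norm (t - s)) * (C * norm v) + C * (C * norm (t - s) * norm v)"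
    using b1 b2 b3 b4 unfolding e real_norm_def by (smt (verit))
  also have "\<dots> = 4 * C\<^sup>2 * norm (t - s) * norm v" by (simp add: power2_eq_square algebra_simps)
  finally show "norm (inner (f' i t v) (g i t) + inner (f i t) (g' i t v) - (inner (f' i s v) (g i s) + inner (f i s) (g' i s v)))
     \<le> 4 * C\<^sup>2 * norm (t - s) * norm v" .
qed

lemma nice_integral:
  fixes h :: "'a::euclidean_space \<Rightarrow> 'c::euclidean_space \<Rightarrow> 'b::euclidean_space"
  assumes n: "nice S Bl h h' C" and S: "compact S" and r: "r measurable_on S"
    and rB: "\<forall>x\<in>S. 0 \<le> r x \<and> r x \<le> B" and Bl: "open Bl" "convex Bl"
    and ch: "\<And>t. t\<in>Bl \<Longrightarrow> continuous_on S (\<lambda>x. h x t)"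
    and ch': "\<And>t v. t\<in>Bl \<Longrightarrow> continuous_on S (\<lambda>x. h' x t v)"
  shows "nice UNIV Bl (\<lambda>_ t. integral S (\<lambda>x. r x *\<^sub>R h x t)) (\<lambda>_ t v. integral S (\<lambda>x. r x *\<^sub>R h' x t v)) (C * integral S r)"
  unfolding nice_def
proof (intro conjI ballI allI)
  have rB': "\<forall>x\<in>S. \<bar>r x\<bar> \<le> B" using rB by auto
  have ri: "r integrable_on S" by (rule int_scaled_real[OF S r rB'])
  have I0: "0 \<le> integral S r" using ri rB by (simp add: integral_nonneg)
  show "0 \<le> C * integral S r" using niceD(1)[OF n] I0 by simp
  fix i :: 'd and t assume t: "t\<in>Bl"
  show "((\<lambda>t. integral S (\<lambda>x. r x *\<^sub>R h x t)) has_derivative (\<lambda>v. integral S (\<lambda>x. r x *\<^sub>R h' x t v))) (at t)"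
  proof (rule int_deriv[where h=h and h'=h', OF S r rB Bl(1) t ch ch'[OF t]])
    show "linear (h' x t)" if "x\<in>S" for x using nice_lin[OF n that t] bounded_linear.linear by blast
    show "norm (h' x t v) \<le> C * norm v" if "x\<in>S" for x v using niceD(4)[OF n that t] .
    show "norm (h x t' - h x t - h' x t (t' - t)) \<le> C * (norm (t' - t))\<^sup>2" if "x\<in>S" "t'\<in>Bl" for x t'
      using nice_taylor[OF n Bl(2) that(1) t that(2)] .
  qed (auto)
  show "norm (integral S (\<lambda>x. r x *\<^sub>R h x t)) \<le> C * integral S r"
    by (rule int_scaled_bound[OF S r rB ch[OF t]]) (use niceD(3)[OF n _ t] in auto)
  fix v
  have "norm (integral S (\<lambda>x. r x *\<^sub>R h' x t v)) \<le> (C * norm v) * integral S r"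
    by (rule int_scaled_bound[OF S r rB ch'[OF t]]) (use niceD(4)[OF n _ t] in auto)
  then show "norm (integral S (\<lambda>x. r x *\<^sub>R h' x t v)) \<le> C * integral S r * norm v"
    by (simp add: algebra_simps)
  fix s assume s: "s\<in>Bl"
  have "integral S (\<lambda>x. r x *\<^sub>R h' x t v) - integral S (\<lambda>x. r x *\<^sub>R h' x s v)
      = integral S (\<lambda>x. r x *\<^sub>R (h' x t v - h' x s v))"
    using int_scaled[OF S r rB' ch'[OF t]] int_scaled[OF S r rB' ch'[OF s]]
    by (simp add: integral_diff scaleR_diff_right)
  also have "norm \<dots> \<le> (C * norm (t - s) * norm v) * integral S r"
    by (rule int_scaled_bound[OF S r rB]) (use ch'[OF t] ch'[OF s] niceD(5)[OF n _ t s] in \<open>auto intro!: continuous_intros\<close>)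
  finally show "norm (integral S (\<lambda>x. r x *\<^sub>R h' x t v) - integral S (\<lambda>x. r x *\<^sub>R h' x s v)) \<le> C * integral S r * norm (t - s) * norm v"
    by (simp add: algebra_simps)
qed

lemma lip_from_deriv:
  fixes g :: "'a::real_normed_vector \<Rightarrow> 'b::real_normed_vector"
  assumes Bl: "convex Bl" and d: "\<And>t. t\<in>Bl \<Longrightarrow> (g has_derivative g' t) (at t)"
    and b: "\<And>t v. t\<in>Bl \<Longrightarrow> norm (g' t v) \<le> K * norm v" and K: "K \<ge> 0"
    and t: "t\<in>Bl" and s: "s\<in>Bl"
  shows "norm (g t - g s) \<le> K * norm (t - s)"
proof (rule differentiable_bound[OF Bl _ _ t s])
  show "(g has_derivative g' x) (at x within Bl)" if "x\<in>Bl" for x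
    using d[OF that] has_derivative_at_withinI by blast
  show "onorm (g' x) \<le> K" if "x\<in>Bl" for x
    by (rule onorm_bound) (use K b that in auto)
qed

lemma smooth3_nice:
  fixes g :: "'i \<Rightarrow> real^'n \<Rightarrow> 'b::real_normed_vector"
  assumes Bl: "convex Bl" and M: "M \<ge> 0"
    and H0: "\<And>i t. i\<in>I \<Longrightarrow> t\<in>Bl \<Longrightarrow> ((\<lambda>s. g i s) has_derivative ga i t) (at t)"
    and H1: "\<And>i t k. i\<in>I \<Longrightarrow> t\<in>Bl \<Longrightarrow> ((\<lambda>s. ga i s (axis k 1)) has_derivative gb i t (axis k 1)) (at t)"
    and H2: "\<And>i t k l. i\<in>I \<Longrightarrow> t\<in>Bl \<Longrightarrow> ((\<lambda>s. gb i s (axis k 1) (axis l 1)) has_derivative gc i t k l) (at t)"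
    and B0: "\<And>i t. i\<in>I \<Longrightarrow> t\<in>Bl \<Longrightarrow> norm (g i t) \<le> M"
    and B1: "\<And>i t k. i\<in>I \<Longrightarrow> t\<in>Bl \<Longrightarrow> norm (ga i t (axis k 1)) \<le> M"
    and B2: "\<And>i t k l. i\<in>I \<Longrightarrow> t\<in>Bl \<Longrightarrow> norm (gb i t (axis k 1) (axis l 1)) \<le> M"
    and B3: "\<And>i t k l m. i\<in>I \<Longrightarrow> t\<in>Bl \<Longrightarrow> norm (gc i t k l (axis m 1)) \<le> M"
  shows "nice I Bl g ga (real CARD('n) ^ 2 * M)"
    and "nice I Bl (\<lambda>i t. ga i t (axis k 1)) (\<lambda>i t. gb i t (axis k 1)) (real CARD('n) ^ 2 * M)"
proof -
  define N where "N = real CARD('n)"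
  have N1: "N \<ge> 1" by (simp add: N_def)
  have NM1: "M \<le> N * M" using mult_right_mono[OF N1 M] by simp
  have "N * M \<le> N * (N * M)" using mult_right_mono[OF N1, of "N * M"] M N1 by simp
  then have NM: "M \<le> N * M" "N * M \<le> N^2 * M" using NM1 by (auto simp: power2_eq_square algebra_simps)
  have lin1: "linear (ga i t)" if "i\<in>I" "t\<in>Bl" for i t
    using H0[OF that] has_derivative_linear by blast
  have lin2: "linear (gb i t (axis k 1))" if "i\<in>I" "t\<in>Bl" for i t k
    using H1[OF that] has_derivative_linear by blast
  have lin3: "linear (gc i t k l)" if "i\<in>I" "t\<in>Bl" for i t k l
    using H2[OF that] has_derivative_linear by blast
  have sumM: "(\<Sum>k\<in>(UNIV::'n set). f k) \<le> N * M" if "\<And>k. f k \<le> M" for f :: "'n \<Rightarrow> real"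
    using sum_mono[of UNIV f "\<lambda>_. M"] that by (simp add: N_def)
  have bd1: "norm (ga i t v) \<le> N * M * norm v" if "i\<in>I" "t\<in>Bl" for i t v
    using lin_basis_bound[OF lin1[OF that], of v] sumM[of "\<lambda>k. norm (ga i t (axis k 1))"] B1[OF that]
    by (meson mult_right_mono norm_ge_zero order_trans)
  have bd2: "norm (gb i t (axis k 1) u) \<le> N * M * norm u" if "i\<in>I" "t\<in>Bl" for i t k u
    using lin_basis_bound[OF lin2[OF that, of k], of u] sumM[of "\<lambda>l. norm (gb i t (axis k 1) (axis l 1))"] B2[OF that]
    by (meson mult_right_mono norm_ge_zero order_trans)
  have bd3: "norm (gc i t k l w) \<le> N * M * norm w" if "i\<in>I" "t\<in>Bl" for i t k l w
    using lin_basis_bound[OF lin3[OF that, of k l], of w] sumM[of "\<lambda>m. norm (gc i t k l (axis m 1))"] B3[OF that]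
    by (meson mult_right_mono norm_ge_zero order_trans)
  have NM0: "N * M \<ge> 0" using M N1 by simp
  have lip1k: "norm (ga i t (axis k 1) - ga i s (axis k 1)) \<le> N * M * norm (t - s)"
    if "i\<in>I" "t\<in>Bl" "s\<in>Bl" for i t s k
    by (rule lip_from_deriv[OF Bl H1[OF that(1)] bd2[OF that(1)] NM0 that(2,3)])
  have lip2k: "norm (gb i t (axis k 1) (axis l 1) - gb i s (axis k 1) (axis l 1)) \<le> N * M * norm (t - s)"
    if "i\<in>I" "t\<in>Bl" "s\<in>Bl" for i t s k l
    by (rule lip_from_deriv[OF Bl H2[OF that(1)] bd3[OF that(1)] NM0 that(2,3)])
  have lip1: "norm (ga i t v - ga i s v) \<le> N^2 * M * norm (t - s) * norm v"
    if "i\<in>I" "t\<in>Bl" "s\<in>Bl" for i t s v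
  proof -
    have "linear (\<lambda>v. ga i t v - ga i s v)"
      using lin1[OF that(1,2)] lin1[OF that(1,3)] by (rule linear_compose_sub)
    from lin_basis_bound[OF this, of v]
    have "norm (ga i t v - ga i s v) \<le> (\<Sum>k\<in>UNIV. norm (ga i t (axis k 1) - ga i s (axis k 1))) * norm v" .
    also have "\<dots> \<le> (N * (N * M * norm (t - s))) * norm v"
      using sumM[of "\<lambda>k. norm (ga i t (axis k 1) - ga i s (axis k 1))"] lip1k[OF that]
        sum_mono[of UNIV "\<lambda>k. norm (ga i t (axis k 1) - ga i s (axis k 1))" "\<lambda>_. N * M * norm (t - s)"]
      by (intro mult_right_mono) (auto simp: N_def)
    finally show ?thesis by (simp add: power2_eq_square algebra_simps)
  qed
  have lip2: "norm (gb i t (axis k 1) u - gb i s (axis k 1) u) \<le> N^2 * M * norm (t - s) * norm u"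
    if "i\<in>I" "t\<in>Bl" "s\<in>Bl" for i t s k u
  proof -
    have "linear (\<lambda>u. gb i t (axis k 1) u - gb i s (axis k 1) u)"
      using lin2[OF that(1,2)] lin2[OF that(1,3)] by (rule linear_compose_sub)
    from lin_basis_bound[OF this, of u]
    have "norm (gb i t (axis k 1) u - gb i s (axis k 1) u) \<le> (\<Sum>l\<in>UNIV. norm (gb i t (axis k 1) (axis l 1) - gb i s (axis k 1) (axis l 1))) * norm u" .
    also have "\<dots> \<le> (N * (N * M * norm (t - s))) * norm u"
      using lip2k[OF that]
        sum_mono[of UNIV "\<lambda>l. norm (gb i t (axis k 1) (axis l 1) - gb i s (axis k 1) (axis l 1))" "\<lambda>_. N * M * norm (t - s)"]
      by (intro mult_right_mono) (auto simp: N_def)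
    finally show ?thesis by (simp add: power2_eq_square algebra_simps)
  qed
  show "nice I Bl g ga (real CARD('n) ^ 2 * M)"
    unfolding nice_def N_def[symmetric]
  proof (intro conjI ballI allI)
    show "0 \<le> N\<^sup>2 * M" using M by simp
    fix i t assume it: "i\<in>I" "t\<in>Bl"
    show "((\<lambda>s. g i s) has_derivative ga i t) (at t)" by (rule H0[OF it])
    show "norm (g i t) \<le> N\<^sup>2 * M" using B0[OF it] NM by linarith
    fix v show "norm (ga i t v) \<le> N\<^sup>2 * M * norm v"
      using bd1[OF it, of v] mult_right_mono[OF NM(2) norm_ge_zero[of v]] by linarith
    fix s assume "s\<in>Bl"
    then show "norm (ga i t v - ga i s v) \<le> N\<^sup>2 * M * norm (t - s) * norm v" using lip1 it by blast
  qed
  show "nice I Bl (\<lambda>i t. ga i t (axis k 1)) (\<lambda>i t. gb i t (axis k 1)) (real CARD('n) ^ 2 * M)"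
    unfolding nice_def N_def[symmetric]
  proof (intro conjI ballI allI)
    show "0 \<le> N\<^sup>2 * M" using M by simp
    fix i t assume it: "i\<in>I" "t\<in>Bl"
    show "((\<lambda>s. ga i s (axis k 1)) has_derivative gb i t (axis k 1)) (at t)" by (rule H1[OF it])
    show "norm (ga i t (axis k 1)) \<le> N\<^sup>2 * M" using B1[OF it, of k] NM by linarith
    fix v show "norm (gb i t (axis k 1) v) \<le> N\<^sup>2 * M * norm v"
      using bd2[OF it, of k v] mult_right_mono[OF NM(2) norm_ge_zero[of v]] by linarith
    fix s assume "s\<in>Bl"
    then show "norm (gb i t (axis k 1) v - gb i s (axis k 1) v) \<le> N\<^sup>2 * M * norm (t - s) * norm v" using lip2 it by blast
  qed
qed

lemma nice_vecsum:
  fixes f :: "'k::finite \<Rightarrow> 'i \<Rightarrow> 'a::real_normed_vector \<Rightarrow> real"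
  assumes "\<And>k. nice I T (f k) (f' k) C"
  shows "nice I T (\<lambda>i t. \<Sum>k\<in>UNIV. f k i t *\<^sub>R axis k (1::real)) (\<lambda>i t v. \<Sum>k\<in>UNIV. f' k i t v *\<^sub>R axis k (1::real)) (real CARD('k) * C)"
proof -
  have nk: "nice I T (\<lambda>i t. f k i t *\<^sub>R axis k (1::real)) (\<lambda>i t v. f' k i t v *\<^sub>R axis k (1::real)) C" for k
    using nice_scaleR_vec[OF assms[of k], of "axis k (1::real)"] by simp
  have fin: "finite (UNIV :: 'k set)" by simp
  from nice_sum[where f="\<lambda>k i t. f k i t *\<^sub>R axis k (1::real)" and f'="\<lambda>k i t v. f' k i t v *\<^sub>R axis k (1::real)", OF fin nk niceD(1)[OF assms]]
  show ?thesis by simp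
qed

lemma vec_as_sum: "(x :: real^'n) = (\<Sum>i\<in>UNIV. x $ i *\<^sub>R axis i 1)"
  using basis_expansion[of x] by (simp add: scalar_mult_eq_scaleR)

lemma sum_axis_nth: "(\<Sum>i\<in>UNIV. (c i :: real) *\<^sub>R axis i 1) $ j = c j"
  by (simp add: axis_def sum.delta if_distrib cong: if_cong)

lemma transpose_matrix_mult: 
  "transpose (matrix (f :: real^'n \<Rightarrow> real^'m)) *v y = (\<Sum>i\<in>UNIV. inner (f (axis i 1)) y *\<^sub>R axis i 1)"
  by (simp only: vec_eq_iff sum_axis_nth) (simp add: matrix_vector_mult_def transpose_def matrix_def inner_vec_def mult.commute)

lemma transpose_jac:
  fixes f f' :: "real^'n \<Rightarrow> real^'m"
  assumes "(f has_derivative f') (at t)"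
  shows "transpose (jacobian f (at t)) *v y = (\<Sum>i\<in>UNIV. inner (f' (axis i 1)) y *\<^sub>R axis i 1)"
  unfolding jacobian_def frechet_derivative_at[OF assms, symmetric] using transpose_matrix_mult[of f' y] by simp

lemma partial_deriv:
  assumes "g differentiable (at (x, t))"
  shows "((\<lambda>s. g (x, s)) has_derivative (\<lambda>v. frechet_derivative g (at (x, t)) (0, v))) (at t)"
proof -
  have "((\<lambda>s. (x, s)) has_derivative (\<lambda>v. (0, v))) (at t)"
    by (intro has_derivative_Pair has_derivative_const has_derivative_ident)
  from diff_chain_at[OF this, of g] assms show ?thesis
    by (simp add: o_def frechet_derivative_works)
qed

lemma cont_bound:
  fixes f :: "'a::metric_space \<Rightarrow> 'b::real_normed_vector"
  assumes "compact K" "continuous_on K f"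
  shows "\<exists>M. \<forall>z\<in>K. norm (f z) \<le> M"
  using compact_continuous_image[OF assms(2,1)] compact_imp_bounded bounded_iff by (metis imageI)

lemma fin_bound:
  assumes "finite A" "\<And>a. a\<in>A \<Longrightarrow> \<exists>M. \<forall>z\<in>Z a. norm (f a z :: 'b::real_normed_vector) \<le> M"
  shows "\<exists>M\<ge>0. \<forall>a\<in>A. \<forall>z\<in>Z a. norm (f a z) \<le> M"
proof -
  obtain Mf where Mf: "\<And>a z. a\<in>A \<Longrightarrow> z\<in>Z a \<Longrightarrow> norm (f a z) \<le> Mf a"
    using assms(2) by metis
  show ?thesis
  proof (intro exI[of _ "\<Sum>a\<in>A. \<bar>Mf a\<bar>"] conjI ballI)
    show "0 \<le> (\<Sum>a\<in>A. \<bar>Mf a\<bar>)" by (simp add: sum_nonneg)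
    fix a z assume a: "a\<in>A" and z: "z\<in>Z a"
    have "norm (f a z) \<le> \<bar>Mf a\<bar>" using Mf[OF a z] by simp
    also have "\<dots> \<le> (\<Sum>a\<in>A. \<bar>Mf a\<bar>)"
      using a assms(1) by (intro member_le_sum) auto
    finally show "norm (f a z) \<le> (\<Sum>a\<in>A. \<bar>Mf a\<bar>)" .
  qed
qed

locale rob =
  fixes P :: "('n::finite) robot" and U :: "((real^3) \<times> (real^'n)) set" and B\<rho> :: real
  assumes R_compact: "compact (rR P)"
    and rho_meas: "rho P measurable_on rR P"
    and rho_bdd: "\<forall>x\<in>rR P. rho P x \<le> B\<rho>"
    and rho_pos: "\<forall>x\<in>rR P. rho P x > 0"
    and C_fin: "finite (rC P)" and C_sub: "rC P \<subseteq> rR P"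
    and dt_pos: "dt P > 0"
    and U_sup: "rR P \<times> UNIV \<subseteq> U" and U_smooth: "smooth_on U (\<lambda>p. rX P (fst p) (snd p))"
    and A3: "\<forall>x\<in>rC P. \<forall>j<rV P x. Ck_on 3 UNIV (\<lambda>\<theta>. rv P x \<theta> j)"
begin

definition F where "F = (\<lambda>p. rX P (fst p) (snd p))"
definition Bl where "Bl = ball (thm1 P) 1"
definition r where "r x = rho P x / (dt P)\<^sup>2"
definition D1 where "D1 x t v = iter_dir F [(0,v)] (x,t)"
definition D2 where "D2 x t v u = iter_dir F [(0,u),(0,v)] (x,t)"
definition D3 where "D3 x t k l w = iter_dir F [(0,w),(0,axis l 1),(0,axis k 1)] (x,t)"

lemma Bl_open: "open Bl" and Bl_convex: "convex Bl" and tm_Bl: "thm1 P \<in> Bl"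
  by (auto simp: Bl_def)

lemma F_Ck: "Ck_on 3 U F"
  using U_smooth unfolding smooth_on_def F_def by blast

lemma U_open: "open U" using F_Ck unfolding Ck_on_def by blast

lemma F_diff: "p\<in>U \<Longrightarrow> length us < 3 \<Longrightarrow> iter_dir F us differentiable (at p)"
  using F_Ck unfolding Ck_on_def by blast

lemma F_cont: "length us \<le> 3 \<Longrightarrow> continuous_on U (iter_dir F us)"
  using F_Ck unfolding Ck_on_def by blast

lemma inU: "x \<in> rR P \<Longrightarrow> (x, t) \<in> U" using U_sup by blast

lemma D1_eq: "D1 x t = (\<lambda>v. frechet_derivative F (at (x,t)) (0,v))"
  by (rule ext) (simp add: D1_def)
lemma D2_eq: "D2 x t v = (\<lambda>u. frechet_derivative (iter_dir F [(0,v)]) (at (x,t)) (0,u))"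
  by (rule ext) (simp add: D2_def)
lemma D3_eq: "D3 x t k l = (\<lambda>w. frechet_derivative (iter_dir F [(0,axis l 1),(0,axis k 1)]) (at (x,t)) (0,w))"
  by (rule ext) (simp add: D3_def)
lemma Fx_eq: "(\<lambda>s. F (x, s)) = rX P x" by (rule ext) (simp add: F_def)

lemma H0: "x \<in> rR P \<Longrightarrow> ((\<lambda>s. rX P x s) has_derivative D1 x t) (at t)"
  using partial_deriv[OF F_diff[OF inU, of x "[]" t]] unfolding D1_eq by (simp add: Fx_eq)

lemma H1: "x \<in> rR P \<Longrightarrow> ((\<lambda>s. D1 x s v) has_derivative D2 x t v) (at t)"
proof -
  assume x: "x \<in> rR P"
  have e: "(\<lambda>s. D1 x s v) = (\<lambda>s. iter_dir F [(0,v)] (x, s))" by (simp add: D1_def)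
  show ?thesis unfolding e D2_eq using partial_deriv[OF F_diff[OF inU[OF x], of "[(0,v)]" t]] by simp
qed

lemma H2: "x \<in> rR P \<Longrightarrow> ((\<lambda>s. D2 x s (axis k 1) (axis l 1)) has_derivative D3 x t k l) (at t)"
proof -
  assume x: "x \<in> rR P"
  have e: "(\<lambda>s. D2 x s (axis k 1) (axis l 1)) = (\<lambda>s. iter_dir F [(0,axis l 1),(0,axis k 1)] (x, s))" by (simp add: D2_def)
  show ?thesis unfolding e D3_eq using partial_deriv[OF F_diff[OF inU[OF x], of "[(0,axis l 1),(0,axis k 1)]" t]] by simp
qed

lemma D_cont:
  "continuous_on (rR P) (\<lambda>x. rX P x t)" "continuous_on (rR P) (\<lambda>x. D1 x t v)"
  "continuous_on (rR P) (\<lambda>x. D2 x t v u)"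
proof -
  have c: "continuous_on (rR P) (\<lambda>x. iter_dir F us (x, t))" if "length us \<le> 3" for us
  proof -
    have "continuous_on (rR P) (\<lambda>x. (x, t))" by (intro continuous_intros)
    moreover have "(\<lambda>x. (x, t)) ` rR P \<subseteq> U" using inU by blast
    ultimately show ?thesis using continuous_on_compose2[OF F_cont[OF that]] by blast
  qed
  show "continuous_on (rR P) (\<lambda>x. rX P x t)" using c[of "[]"] by (simp add: F_def)
  show "continuous_on (rR P) (\<lambda>x. D1 x t v)" using c[of "[(0,v)]"] by (simp add: D1_def)
  show "continuous_on (rR P) (\<lambda>x. D2 x t v u)" using c[of "[(0,u),(0,v)]"] by (simp add: D2_def)
qed

lemma F_bound: "\<exists>M\<ge>0. \<forall>us\<in>{us. set us \<subseteq> range (\<lambda>k. (0, axis k 1)) \<and> length us \<le> 3}.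
    \<forall>z\<in>rR P \<times> cball (thm1 P) 1. norm (iter_dir F us z) \<le> M"
proof (rule fin_bound)
  show "finite {us. set us \<subseteq> range (\<lambda>k::'n. (0::real^3, axis k (1::real))) \<and> length us \<le> 3}"
    by (rule finite_lists_length_le) simp
  fix us assume "us \<in> {us. set us \<subseteq> range (\<lambda>k::'n. (0::real^3, axis k (1::real))) \<and> length us \<le> 3}"
  then have l: "length us \<le> 3" by simp
  have K: "compact (rR P \<times> cball (thm1 P) 1)" using R_compact by (simp add: compact_Times)
  have "rR P \<times> cball (thm1 P) 1 \<subseteq> U" using U_sup by blast
  then show "\<exists>M. \<forall>z\<in>rR P \<times> cball (thm1 P) 1. norm (iter_dir F us z) \<le> M"
    using cont_bound[OF K continuous_on_subset[OF F_cont[OF l]]] by blast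
qed

definition CX where "CX = (SOME C. nice (rR P) Bl (\<lambda>x t. rX P x t) D1 C \<and>
   (\<forall>k. nice (rR P) Bl (\<lambda>x t. D1 x t (axis k 1)) (\<lambda>x t. D2 x t (axis k 1)) C))"

lemma niceX_ex: "\<exists>C. nice (rR P) Bl (\<lambda>x t. rX P x t) D1 C \<and>
   (\<forall>k. nice (rR P) Bl (\<lambda>x t. D1 x t (axis k 1)) (\<lambda>x t. D2 x t (axis k 1)) C)"
proof -
  obtain M where M: "M \<ge> 0" and Mb: "\<And>us z. set us \<subseteq> range (\<lambda>k. (0, axis k 1)) \<Longrightarrow> length us \<le> 3 \<Longrightarrow>
      z \<in> rR P \<times> cball (thm1 P) 1 \<Longrightarrow> norm (iter_dir F us z) \<le> M"
    using F_bound by auto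
  have zin: "(x, t) \<in> rR P \<times> cball (thm1 P) 1" if "x \<in> rR P" "t \<in> Bl" for x t
    using that by (auto simp: Bl_def)
  have h0: "\<And>i t. i \<in> rR P \<Longrightarrow> t\<in>Bl \<Longrightarrow> ((\<lambda>s. rX P i s) has_derivative D1 i t) (at t)" using H0 by blast
  have h1: "\<And>i t k. i \<in> rR P \<Longrightarrow> t\<in>Bl \<Longrightarrow> ((\<lambda>s. D1 i s (axis k 1)) has_derivative D2 i t (axis k 1)) (at t)" using H1 by blast
  have h2: "\<And>i t k l. i \<in> rR P \<Longrightarrow> t\<in>Bl \<Longrightarrow> ((\<lambda>s. D2 i s (axis k 1) (axis l 1)) has_derivative D3 i t k l) (at t)" using H2 by blast
  have b0: "\<And>i t. i \<in> rR P \<Longrightarrow> t\<in>Bl \<Longrightarrow> norm (rX P i t) \<le> M"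
    using Mb[of "[]", OF _ _ zin] by (simp add: F_def)
  have b1: "\<And>i t k. i \<in> rR P \<Longrightarrow> t\<in>Bl \<Longrightarrow> norm (D1 i t (axis k 1)) \<le> M"
    using Mb[of "[(0, axis k 1)]" for k, OF _ _ zin] by (simp add: D1_def)
  have b2: "\<And>i t k l. i \<in> rR P \<Longrightarrow> t\<in>Bl \<Longrightarrow> norm (D2 i t (axis k 1) (axis l 1)) \<le> M"
    using Mb[of "[(0, axis l 1), (0, axis k 1)]" for k l, OF _ _ zin] by (simp add: D2_def)
  have b3: "\<And>i t k l m. i \<in> rR P \<Longrightarrow> t\<in>Bl \<Longrightarrow> norm (D3 i t k l (axis m 1)) \<le> M"
    using Mb[of "[(0, axis m 1), (0, axis l 1), (0, axis k 1)]" for k l m, OF _ _ zin] by (simp add: D3_def)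
  note sm = smooth3_nice[OF Bl_convex M h0 h1 h2 b0 b1 b2 b3]
  have a: "nice (rR P) Bl (\<lambda>x t. rX P x t) D1 (real CARD('n) ^ 2 * M) \<and>
      (\<forall>k. nice (rR P) Bl (\<lambda>x t. D1 x t (axis k 1)) (\<lambda>x t. D2 x t (axis k 1)) (real CARD('n) ^ 2 * M))"
    by (intro conjI allI sm)
  then show ?thesis by (rule exI)
qed

lemma niceX: "nice (rR P) Bl (\<lambda>x t. rX P x t) D1 CX"
  and niceD1: "nice (rR P) Bl (\<lambda>x t. D1 x t (axis k 1)) (\<lambda>x t. D2 x t (axis k 1)) CX"
proof -
  note a = someI_ex[OF niceX_ex, folded CX_def]
  show "nice (rR P) Bl (\<lambda>x t. rX P x t) D1 CX" using a by (rule conjunct1)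
  show "nice (rR P) Bl (\<lambda>x t. D1 x t (axis k 1)) (\<lambda>x t. D2 x t (axis k 1)) CX" using a by simp
qed

end

context rob begin

definition RI where "RI = {(x,j). x \<in> rC P \<and> j < rV P x}"
definition rvf where "rvf p = (\<lambda>\<theta>. rv P (fst p) \<theta> (snd p))"
definition R1 where "R1 p t v = iter_dir (rvf p) [v] t"
definition R2 where "R2 p t v u = iter_dir (rvf p) [u, v] t"
definition R3 where "R3 p t k l w = iter_dir (rvf p) [w, axis l 1, axis k 1] t"

lemma RI_fin: "finite RI"
proof -
  have "RI \<subseteq> rC P \<times> (\<Union>x\<in>rC P. {..<rV P x})" by (auto simp: RI_def)
  moreover have "finite (rC P \<times> (\<Union>x\<in>rC P. {..<rV P x}))" using C_fin by auto
  ultimately show ?thesis using finite_subset by blast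
qed

lemma rv_Ck: "p \<in> RI \<Longrightarrow> Ck_on 3 UNIV (rvf p)"
  using A3 by (auto simp: RI_def rvf_def)

lemma rv_diff: "p \<in> RI \<Longrightarrow> length us < 3 \<Longrightarrow> iter_dir (rvf p) us differentiable (at t)"
  using rv_Ck unfolding Ck_on_def by blast

lemma rv_cont: "p \<in> RI \<Longrightarrow> length us \<le> 3 \<Longrightarrow> continuous_on UNIV (iter_dir (rvf p) us)"
  using rv_Ck unfolding Ck_on_def by blast

lemma R1_eq: "R1 p t = frechet_derivative (rvf p) (at t)" by (rule ext) (simp add: R1_def)
lemma R2_eq: "R2 p t v = frechet_derivative (iter_dir (rvf p) [v]) (at t)" by (rule ext) (simp add: R2_def)
lemma R3_eq: "R3 p t k l = frechet_derivative (iter_dir (rvf p) [axis l 1, axis k 1]) (at t)" by (rule ext) (simp add: R3_def)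

lemma niceRV_ex: "\<exists>C. nice RI Bl (\<lambda>p t. rv P (fst p) t (snd p)) R1 C"
proof -
  have "\<exists>M\<ge>0. \<forall>a\<in>RI \<times> {us. set us \<subseteq> range (\<lambda>k. axis k 1) \<and> length us \<le> 3}.
      \<forall>z\<in>cball (thm1 P) 1. norm (iter_dir (rvf (fst a)) (snd a) z) \<le> M"
  proof (rule fin_bound)
    show "finite (RI \<times> {us. set us \<subseteq> range (\<lambda>k::'n. axis k (1::real)) \<and> length us \<le> 3})"
      using RI_fin by (intro finite_cartesian_product finite_lists_length_le) auto
    fix a assume a: "a \<in> RI \<times> {us. set us \<subseteq> range (\<lambda>k::'n. axis k (1::real)) \<and> length us \<le> 3}"
    then have "fst a \<in> RI" "length (snd a) \<le> 3" by auto
    from cont_bound[OF compact_cball continuous_on_subset[OF rv_cont[OF this]]]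
    show "\<exists>M. \<forall>z\<in>cball (thm1 P) 1. norm (iter_dir (rvf (fst a)) (snd a) z) \<le> M" by blast
  qed
  then obtain M where M: "M \<ge> 0" and Mb: "\<And>p us z. p \<in> RI \<Longrightarrow> set us \<subseteq> range (\<lambda>k. axis k 1) \<Longrightarrow> length us \<le> 3 \<Longrightarrow>
      z \<in> cball (thm1 P) 1 \<Longrightarrow> norm (iter_dir (rvf p) us z) \<le> M"
    by fastforce
  have zin: "t \<in> cball (thm1 P) 1" if "t \<in> Bl" for t using that by (auto simp: Bl_def)
  have h0: "\<And>i t. i \<in> RI \<Longrightarrow> t\<in>Bl \<Longrightarrow> ((\<lambda>s. rv P (fst i) s (snd i)) has_derivative R1 i t) (at t)"
  proof -
    fix i t assume i: "i \<in> RI"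
    have "(\<lambda>s. rv P (fst i) s (snd i)) = rvf i" by (simp add: rvf_def)
    then show "((\<lambda>s. rv P (fst i) s (snd i)) has_derivative R1 i t) (at t)"
      using rv_diff[OF i, of "[]" t] by (simp add: R1_eq frechet_derivative_works)
  qed
  have h1: "\<And>i t k. i \<in> RI \<Longrightarrow> t\<in>Bl \<Longrightarrow> ((\<lambda>s. R1 i s (axis k 1)) has_derivative R2 i t (axis k 1)) (at t)"
  proof -
    fix i t k assume i: "i \<in> RI"
    have "(\<lambda>s. R1 i s (axis k 1)) = iter_dir (rvf i) [axis k 1]" by (rule ext) (simp add: R1_def)
    then show "((\<lambda>s. R1 i s (axis k 1)) has_derivative R2 i t (axis k 1)) (at t)"
      using rv_diff[OF i, of "[axis k 1]" t] by (simp add: R2_eq frechet_derivative_works)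
  qed
  have h2: "\<And>i t k l. i \<in> RI \<Longrightarrow> t\<in>Bl \<Longrightarrow> ((\<lambda>s. R2 i s (axis k 1) (axis l 1)) has_derivative R3 i t k l) (at t)"
  proof -
    fix i t k l assume i: "i \<in> RI"
    have "(\<lambda>s. R2 i s (axis k 1) (axis l 1)) = iter_dir (rvf i) [axis l 1, axis k 1]" by (rule ext) (simp add: R2_def)
    then show "((\<lambda>s. R2 i s (axis k 1) (axis l 1)) has_derivative R3 i t k l) (at t)"
      using rv_diff[OF i, of "[axis l 1, axis k 1]" t] by (simp add: R3_eq frechet_derivative_works)
  qed
  have b0: "\<And>i t. i \<in> RI \<Longrightarrow> t\<in>Bl \<Longrightarrow> norm (rv P (fst i) t (snd i)) \<le> M"
    using Mb[of _ "[]", OF _ _ _ zin] by (simp add: rvf_def)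
  have b1: "\<And>i t k. i \<in> RI \<Longrightarrow> t\<in>Bl \<Longrightarrow> norm (R1 i t (axis k 1)) \<le> M"
    using Mb[of _ "[axis k 1]" for k, OF _ _ _ zin] by (simp add: R1_def)
  have b2: "\<And>i t k l. i \<in> RI \<Longrightarrow> t\<in>Bl \<Longrightarrow> norm (R2 i t (axis k 1) (axis l 1)) \<le> M"
    using Mb[of _ "[axis l 1, axis k 1]" for k l, OF _ _ _ zin] by (simp add: R2_def)
  have b3: "\<And>i t k l m. i \<in> RI \<Longrightarrow> t\<in>Bl \<Longrightarrow> norm (R3 i t k l (axis m 1)) \<le> M"
    using Mb[of _ "[axis m 1, axis l 1, axis k 1]" for k l m, OF _ _ _ zin] by (simp add: R3_def)
  show ?thesis using smooth3_nice(1)[OF Bl_convex M h0 h1 h2 b0 b1 b2 b3] by (rule exI)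
qed

end

context rob begin

definition dd where "dd x t = rX P x t - rX P x (thm1 P)"
definition ee where "ee x = rX P x (thm2 P) - rX P x (thm1 P)"
definition hA where "hA x t = (\<Sum>k\<in>UNIV. inner (D1 x t (axis k 1)) (dd x t) *\<^sub>R axis k (1::real))"
definition hA' where "hA' x t v = (\<Sum>k\<in>UNIV. (inner (D2 x t (axis k 1) v) (dd x t) + inner (D1 x t (axis k 1)) (D1 x t v)) *\<^sub>R axis k (1::real))"
definition hB where "hB x t = (\<Sum>k\<in>UNIV. inner (D1 x t (axis k 1)) (ee x) *\<^sub>R axis k (1::real))"
definition hB' where "hB' x t v = (\<Sum>k\<in>UNIV. inner (D2 x t (axis k 1) v) (ee x) *\<^sub>R axis k (1::real))"
definition hK where "hK x t = (1/2) * inner (dd x t) (dd x t)"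
definition hK' where "hK' x t v = inner (dd x t) (D1 x t v)"
definition hF where "hF p t = (\<Sum>k\<in>UNIV. inner (D1 (fst p) t (axis k 1)) (rv P (fst p) t (snd p)) *\<^sub>R axis k (1::real))"
definition hF' where "hF' p t v = (\<Sum>k\<in>UNIV. (inner (D2 (fst p) t (axis k 1) v) (rv P (fst p) t (snd p)) + inner (D1 (fst p) t (axis k 1)) (R1 p t v)) *\<^sub>R axis k (1::real))"

definition AA where "AA t = integral (rR P) (\<lambda>x. r x *\<^sub>R hA x t)"
definition dA where "dA t v = integral (rR P) (\<lambda>x. r x *\<^sub>R hA' x t v)"
definition BB where "BB t = integral (rR P) (\<lambda>x. r x *\<^sub>R hB x t)"
definition dB where "dB t v = integral (rR P) (\<lambda>x. r x *\<^sub>R hB' x t v)"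
definition KK where "KK t = integral (rR P) (\<lambda>x. r x *\<^sub>R hK x t)"
definition dK where "dK t v = integral (rR P) (\<lambda>x. r x *\<^sub>R hK' x t v)"
definition FF where "FF w t = (\<Sum>p\<in>RI. w (fst p) (snd p) *\<^sub>R hF p t)"
definition dF where "dF w t v = (\<Sum>p\<in>RI. w (fst p) (snd p) *\<^sub>R hF' p t v)"

lemma r_meas: "r measurable_on rR P"
  unfolding r_def by (rule measurable_on_cdivide[OF rho_meas])

lemma r_bd: "\<forall>x\<in>rR P. 0 \<le> r x \<and> r x \<le> B\<rho> / (dt P)\<^sup>2"
  using rho_bdd rho_pos dt_pos by (auto simp: r_def divide_right_mono less_imp_le)

lemma nice_dd: "nice (rR P) Bl dd (\<lambda>x t v. D1 x t v) (2 * CX)"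
proof -
  have c: "nice (rR P) Bl (\<lambda>x t. rX P x (thm1 P)) (\<lambda>x t v. 0) CX"
    by (rule nice_const) (use niceD(1,3)[OF niceX] tm_Bl in auto)
  show ?thesis using nice_diff[OF niceX c] by (simp add: dd_def[abs_def])
qed

lemma nice_ee: "\<exists>C. nice (rR P) Bl (\<lambda>x t. ee x) (\<lambda>x t v. 0) C"
proof -
  have "continuous_on (rR P) ee"
    unfolding ee_def[abs_def] using D_cont(1) by (intro continuous_intros)
  from cont_bound[OF R_compact this] obtain M where M: "\<forall>x\<in>rR P. norm (ee x) \<le> M" by blast
  have "nice (rR P) Bl (\<lambda>x t. ee x) (\<lambda>x t v. 0) \<bar>M\<bar>"
    by (rule nice_const) (use M in auto)
  then show ?thesis by blast
qed

lemma nice_hA_ex: "\<exists>C. nice (rR P) Bl hA hA' C"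
proof -
  have d1: "nice (rR P) Bl (\<lambda>x t. D1 x t (axis k 1)) (\<lambda>x t. D2 x t (axis k 1)) (2 * CX)" for k
    by (rule nice_mono[OF niceD1]) (use niceD(1)[OF niceX] in auto)
  have "nice (rR P) Bl (\<lambda>x t. inner (D1 x t (axis k 1)) (dd x t)) (\<lambda>x t v. inner (D2 x t (axis k 1) v) (dd x t) + inner (D1 x t (axis k 1)) (D1 x t v)) (4 * (2 * CX)\<^sup>2)" for k
    by (rule nice_inner[OF d1 nice_dd Bl_convex])
  from nice_vecsum[where f="\<lambda>k x t. inner (D1 x t (axis k 1)) (dd x t)" and f'="\<lambda>k x t v. inner (D2 x t (axis k 1) v) (dd x t) + inner (D1 x t (axis k 1)) (D1 x t v)", OF this]
  show ?thesis unfolding hA_def[abs_def] hA'_def[abs_def] by blast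
qed

lemma nice_hB_ex: "\<exists>C. nice (rR P) Bl hB hB' C"
proof -
  obtain Ce where Ce: "nice (rR P) Bl (\<lambda>x t. ee x) (\<lambda>x t v. 0) Ce" using nice_ee by blast
  define C where "C = CX + Ce"
  have d1: "nice (rR P) Bl (\<lambda>x t. D1 x t (axis k 1)) (\<lambda>x t. D2 x t (axis k 1)) C" for k
    by (rule nice_mono[OF niceD1]) (use niceD(1)[OF niceX] niceD(1)[OF Ce] in \<open>auto simp: C_def\<close>)
  have e: "nice (rR P) Bl (\<lambda>x t. ee x) (\<lambda>x t v. 0) C"
    by (rule nice_mono[OF Ce]) (use niceD(1)[OF niceX] niceD(1)[OF Ce] in \<open>auto simp: C_def\<close>)
  have "nice (rR P) Bl (\<lambda>x t. inner (D1 x t (axis k 1)) (ee x)) (\<lambda>x t v. inner (D2 x t (axis k 1) v) (ee x) + inner (D1 x t (axis k 1)) 0) (4 * C\<^sup>2)" for k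
    by (rule nice_inner[OF d1 e Bl_convex])
  then have "nice (rR P) Bl (\<lambda>x t. inner (D1 x t (axis k 1)) (ee x)) (\<lambda>x t v. inner (D2 x t (axis k 1) v) (ee x)) (4 * C\<^sup>2)" for k
    by simp
  from nice_vecsum[where f="\<lambda>k x t. inner (D1 x t (axis k 1)) (ee x)" and f'="\<lambda>k x t v. inner (D2 x t (axis k 1) v) (ee x)", OF this]
  show ?thesis unfolding hB_def[abs_def] hB'_def[abs_def] by blast
qed

lemma nice_hK_ex: "\<exists>C. nice (rR P) Bl hK hK' C"
proof -
  have "nice (rR P) Bl (\<lambda>x t. (1/2) *\<^sub>R inner (dd x t) (dd x t)) (\<lambda>x t v. (1/2) *\<^sub>R (inner (D1 x t v) (dd x t) + inner (dd x t) (D1 x t v))) (\<bar>1/2\<bar> * (4 * (2 * CX)\<^sup>2))"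
    by (rule nice_scale[OF nice_inner[OF nice_dd nice_dd Bl_convex]])
  then have "nice (rR P) Bl hK hK' (\<bar>1/2\<bar> * (4 * (2 * CX)\<^sup>2))"
    by (rule nice_cong) (simp_all add: hK_def hK'_def inner_commute)
  then show ?thesis by blast
qed

lemma nice_hF_ex: "\<exists>C. nice RI Bl hF hF' C"
proof -
  obtain Cr where Cr: "nice RI Bl (\<lambda>p t. rv P (fst p) t (snd p)) R1 Cr" using niceRV_ex by blast
  define C where "C = CX + Cr"
  have fstRI: "fst ` RI \<subseteq> rR P" using C_sub by (auto simp: RI_def)
  have d1: "nice RI Bl (\<lambda>p t. D1 (fst p) t (axis k 1)) (\<lambda>p t. D2 (fst p) t (axis k 1)) C" for k
    by (rule nice_mono[OF nice_reindex[OF niceD1 fstRI]]) (use niceD(1)[OF niceX] niceD(1)[OF Cr] in \<open>auto simp: C_def\<close>)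
  have e: "nice RI Bl (\<lambda>p t. rv P (fst p) t (snd p)) R1 C"
    by (rule nice_mono[OF Cr]) (use niceD(1)[OF niceX] niceD(1)[OF Cr] in \<open>auto simp: C_def\<close>)
  have "nice RI Bl (\<lambda>p t. inner (D1 (fst p) t (axis k 1)) (rv P (fst p) t (snd p))) (\<lambda>p t v. inner (D2 (fst p) t (axis k 1) v) (rv P (fst p) t (snd p)) + inner (D1 (fst p) t (axis k 1)) (R1 p t v)) (4 * C\<^sup>2)" for k
    by (rule nice_inner[OF d1 e Bl_convex])
  from nice_vecsum[where f="\<lambda>k p t. inner (D1 (fst p) t (axis k 1)) (rv P (fst p) t (snd p))" and f'="\<lambda>k p t v. inner (D2 (fst p) t (axis k 1) v) (rv P (fst p) t (snd p)) + inner (D1 (fst p) t (axis k 1)) (R1 p t v)", OF this]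
  show ?thesis unfolding hF_def[abs_def] hF'_def[abs_def] by blast
qed

end

context rob begin

lemma cont_h:
  "continuous_on (rR P) (\<lambda>x. hA x t)" "continuous_on (rR P) (\<lambda>x. hA' x t v)"
  "continuous_on (rR P) (\<lambda>x. hB x t)" "continuous_on (rR P) (\<lambda>x. hB' x t v)"
  "continuous_on (rR P) (\<lambda>x. hK x t)" "continuous_on (rR P) (\<lambda>x. hK' x t v)"
  unfolding hA_def hA'_def hB_def hB'_def hK_def hK'_def dd_def ee_def
  by (intro continuous_intros D_cont)+

lemma AA_nice_ex: "\<exists>C. nice UNIV Bl (\<lambda>_ t. AA t) (\<lambda>_ t. dA t) C"
proof -
  obtain C where C: "nice (rR P) Bl hA hA' C" using nice_hA_ex by blast
  from nice_integral[OF C R_compact r_meas r_bd Bl_open Bl_convex cont_h(1) cont_h(2)]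
  show ?thesis unfolding AA_def[abs_def] dA_def[abs_def] by blast
qed

lemma BB_nice_ex: "\<exists>C. nice UNIV Bl (\<lambda>_ t. BB t) (\<lambda>_ t. dB t) C"
proof -
  obtain C where C: "nice (rR P) Bl hB hB' C" using nice_hB_ex by blast
  from nice_integral[OF C R_compact r_meas r_bd Bl_open Bl_convex cont_h(3) cont_h(4)]
  show ?thesis unfolding BB_def[abs_def] dB_def[abs_def] by blast
qed

lemma KK_nice_ex: "\<exists>C. nice UNIV Bl (\<lambda>_ t. KK t) (\<lambda>_ t. dK t) C"
proof -
  obtain C where C: "nice (rR P) Bl hK hK' C" using nice_hK_ex by blast
  from nice_integral[OF C R_compact r_meas r_bd Bl_open Bl_convex cont_h(5) cont_h(6)]
  show ?thesis unfolding KK_def[abs_def] dK_def[abs_def] by blast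
qed

lemma FF_nice_ex: "\<exists>C. \<forall>w. (\<forall>p\<in>RI. \<bar>w (fst p) (snd p)\<bar> \<le> 1) \<longrightarrow> nice UNIV Bl (\<lambda>_ t. FF w t) (\<lambda>_ t. dF w t) C"
proof -
  obtain C where C: "nice RI Bl hF hF' C" using nice_hF_ex by blast
  have C0: "C \<ge> 0" using niceD(1)[OF C] .
  have "nice UNIV Bl (\<lambda>_ t. FF w t) (\<lambda>_ t. dF w t) (real (card RI) * C)"
    if w: "\<forall>p\<in>RI. \<bar>w (fst p) (snd p)\<bar> \<le> 1" for w
  proof -
    have np: "nice UNIV Bl (\<lambda>_ t. w (fst p) (snd p) *\<^sub>R hF p t) (\<lambda>_ t v. w (fst p) (snd p) *\<^sub>R hF' p t v) C" if p: "p \<in> RI" for p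
    proof -
      have "nice UNIV Bl (\<lambda>_. hF p) (\<lambda>_. hF' p) C" using nice_reindex[OF C, of "\<lambda>_. p" UNIV] p by auto
      from nice_scale[OF this, of "w (fst p) (snd p)"]
      have "nice UNIV Bl (\<lambda>_ t. w (fst p) (snd p) *\<^sub>R hF p t) (\<lambda>_ t v. w (fst p) (snd p) *\<^sub>R hF' p t v) (\<bar>w (fst p) (snd p)\<bar> * C)" .
      then show ?thesis by (rule nice_mono) (use w p C0 in \<open>auto intro: mult_left_le_one_le\<close>)
    qed
    from nice_sum[where f="\<lambda>p _ t. w (fst p) (snd p) *\<^sub>R hF p t" and f'="\<lambda>p _ t v. w (fst p) (snd p) *\<^sub>R hF' p t v", OF RI_fin np C0]
    show ?thesis unfolding FF_def[abs_def] dF_def[abs_def] by simp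
  qed
  then show ?thesis by blast
qed

lemma DX_transpose: "x \<in> rR P \<Longrightarrow> transpose (DX P x t) *v y = (\<Sum>k\<in>UNIV. inner (D1 x t (axis k 1)) y *\<^sub>R axis k (1::real))"
  unfolding DX_def by (rule transpose_jac[OF H0])

lemma DX_transpose': "x \<in> rR P \<Longrightarrow> y v* DX P x t = (\<Sum>k\<in>UNIV. inner (D1 x t (axis k 1)) y *\<^sub>R axis k (1::real))"
  using DX_transpose by (simp add: vector_transpose_matrix[symmetric])

lemma Aop_eq: "Aop P t = AA t"
  unfolding Aop_def AA_def
  by (rule integral_cong) (simp add: DX_transpose' hA_def dd_def r_def)

lemma RI_Sigma: "RI = Sigma (rC P) (\<lambda>x. {..<rV P x})"
  by (auto simp: RI_def)

lemma Fc_eq: "Fc P t w = FF w t"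
proof -
  have "Fc P t w = (\<Sum>x\<in>rC P. \<Sum>j<rV P x. w x j *\<^sub>R hF (x, j) t)"
    unfolding Fc_def
    by (intro sum.cong refl) (use C_sub in \<open>auto simp: DX_transpose' hF_def\<close>)
  also have "\<dots> = (\<Sum>p\<in>RI. w (fst p) (snd p) *\<^sub>R hF p t)"
    unfolding RI_Sigma using C_fin by (subst sum.Sigma) (auto simp: split_def)
  finally show ?thesis unfolding FF_def .
qed

lemma Bop_eq: "Bop P t w = BB t - FF w t - tau P"
  unfolding Bop_def BB_def Fc_eq
  by (rule arg_cong2[where f="\<lambda>a b. a - b - tau P"], rule integral_cong)
     (simp_all add: DX_transpose' hB_def ee_def r_def)

lemma Kop_eq: "Kop P t = KK t"
  unfolding Kop_def KK_def
  by (rule integral_cong) (simp add: hK_def dd_def r_def power2_norm_eq_inner field_simps)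

end

lemma lin_bij_from_low:
  fixes f :: "real^'n \<Rightarrow> real^'n"
  assumes "linear f" "\<And>v. m * norm v \<le> norm (f v)" "m > 0"
  shows "bij f"
proof -
  have "inj f"
  proof (rule linear_injective_0[THEN iffD2, OF assms(1)], intro allI impI)
    fix v assume "f v = 0"
    then have "m * norm v \<le> 0" using assms(2)[of v] by simp
    then show "v = 0" using assms(3) by (simp add: mult_le_0_iff)
  qed
  moreover have "surj f" using linear_inj_imp_surj[OF assms(1) \<open>inj f\<close>] .
  ultimately show ?thesis by (simp add: bij_def)
qed

lemma div_pow2_le: "0 \<le> g \<Longrightarrow> g / 2^i \<le> (g::real)"
  using divide_left_mono[of 1 "2^i" g] by simp

lemma newton:
  fixes G :: "real^'n \<Rightarrow> real^'n" and DG :: "real^'n \<Rightarrow> real^'n \<Rightarrow> real^'n" and th :: "nat \<Rightarrow> real^'n"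
  assumes dG: "\<And>t. t \<in> Bo \<Longrightarrow> (G has_derivative DG t) (at t)"
    and low: "\<And>t v. t \<in> Bo \<Longrightarrow> m * norm v \<le> norm (DG t v)" and m: "m > 0"
    and tay: "\<And>t s. t \<in> Bo \<Longrightarrow> s \<in> Bo \<Longrightarrow> norm (G s - G t - DG t (s - t)) \<le> L * (norm (s - t))\<^sup>2"
    and L: "L \<ge> 0"
    and sub: "cball t0 (2 * g0 / m) \<subseteq> Bo"
    and g0: "norm (G t0) \<le> g0" and Lg: "L * g0 \<le> m\<^sup>2 / 2"
    and th0: "th 0 = t0"
    and step: "\<And>i. th i \<in> Bo \<Longrightarrow> G (th i) \<noteq> 0 \<Longrightarrow> th (Suc i) = th i - inv (DG (th i)) (G (th i))"
    and stay: "\<And>i. G (th i) = 0 \<Longrightarrow> th (Suc i) = th i"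
  shows "\<forall>i. norm (th i - t0) \<le> 2 * g0 / m * (1 - 1 / 2^i) \<and> norm (G (th i)) \<le> g0 / 2^i
           \<and> norm (th (Suc i) - th i) \<le> g0 / m / 2^i \<and> norm (G (th (Suc i))) \<le> norm (G (th i)) / 2"
    and "\<exists>l. th \<longlonglongrightarrow> l \<and> l \<in> cball t0 (2 * g0 / m) \<and> G l = 0"
proof -
  have g00: "g0 \<ge> 0" using g0 norm_ge_zero order_trans by blast
  have R0: "2 * g0 / m \<ge> 0" using g00 m by simp
  have inBo: "t \<in> Bo" if "norm (t - t0) \<le> 2 * g0 / m * (1 - 1 / 2^i)" for t i
  proof -
    have "2 * g0 / m * (1 - 1 / 2^i) \<le> 2 * g0 / m" using mult_left_le[OF _ R0, of "1 - 1 / 2^i"] by simp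
    then show ?thesis using that sub by (auto simp: dist_norm norm_minus_commute)
  qed
  have inv_eq: "DG t (inv (DG t) y) = y" if "t \<in> Bo" for t y
  proof -
    have "bij (DG t)" using lin_bij_from_low[OF has_derivative_linear[OF dG[OF that]] low[OF that] m] .
    then show ?thesis by (meson bij_inv_eq_iff)
  qed
  have lin: "linear (DG t)" if "t \<in> Bo" for t using has_derivative_linear[OF dG[OF that]] .
  have inv: "norm (th i - t0) \<le> 2 * g0 / m * (1 - 1 / 2^i) \<and> norm (G (th i)) \<le> g0 / 2^i" for i
  proof (induction i)
    case 0 then show ?case using th0 g0 by simp
  next
    case (Suc i)
    then have a: "norm (th i - t0) \<le> 2 * g0 / m * (1 - 1 / 2^i)" and b: "norm (G (th i)) \<le> g0 / 2^i" by auto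
    have mono: "2 * g0 / m * (1 - 1 / 2^i) \<le> 2 * g0 / m * (1 - 1 / 2^Suc i)"
      using R0 by (intro mult_left_mono) (auto simp: field_simps)
    show ?case
    proof (cases "G (th i) = 0")
      case True
      then show ?thesis using stay[OF True] a mono g00 by simp
    next
      case False
      have tB: "th i \<in> Bo" using inBo[OF a] .
      define d where "d = inv (DG (th i)) (G (th i))"
      have thS: "th (Suc i) = th i - d" using step[OF tB False] by (simp add: d_def)
      have Dd: "DG (th i) d = G (th i)" using inv_eq[OF tB] by (simp add: d_def)
      have nd: "norm d \<le> norm (G (th i)) / m"
        using low[OF tB, of d] Dd m by (simp add: field_simps mult.commute)
      have nd2: "norm d \<le> g0 / m / 2^i"
        using order_trans[OF nd divide_right_mono[OF b less_imp_le[OF m]]] by (simp add: field_simps)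
      have a': "norm (th (Suc i) - t0) \<le> 2 * g0 / m * (1 - 1 / 2^Suc i)"
      proof -
        have "norm (th (Suc i) - t0) \<le> norm (th i - t0) + norm d"
          unfolding thS using norm_triangle_ineq4[of "th i - t0" d] by (simp add: algebra_simps)
        also have "\<dots> \<le> 2 * g0 / m * (1 - 1 / 2^i) + g0 / m / 2^i" using a nd2 by simp
        also have "\<dots> = 2 * g0 / m * (1 - 1 / 2^Suc i)" using m by (simp add: field_simps)
        finally show ?thesis .
      qed
      have sB: "th (Suc i) \<in> Bo" using inBo[OF a'] .
      have e: "G (th (Suc i)) - G (th i) - DG (th i) (th (Suc i) - th i) = G (th (Suc i))"
        using Dd lin[OF tB] by (simp add: thS linear_neg)
      have "norm (G (th (Suc i))) \<le> L * (norm d)\<^sup>2"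
        using tay[OF tB sB] unfolding e by (simp add: thS)
      also have "\<dots> \<le> L * (norm (G (th i)) / m)\<^sup>2"
        using nd L by (intro mult_left_mono power_mono) auto
      also have "\<dots> = (L * norm (G (th i)) / m\<^sup>2) * norm (G (th i))"
        by (simp add: power2_eq_square field_simps)
      also have "\<dots> \<le> (1/2) * norm (G (th i))"
      proof (rule mult_right_mono)
        have "norm (G (th i)) \<le> g0" using b div_pow2_le[OF g00, of i] by linarith
        then have "L * norm (G (th i)) \<le> L * g0" using L by (rule mult_left_mono)
        then show "L * norm (G (th i)) / m\<^sup>2 \<le> 1/2" using Lg m by (simp add: field_simps)
      qed simp
      finally have h: "norm (G (th (Suc i))) \<le> norm (G (th i)) / 2" by simp
      have "norm (G (th (Suc i))) \<le> g0 / 2^i / 2"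
        using order_trans[OF h divide_right_mono[OF b, of 2]] by simp
      then have "norm (G (th (Suc i))) \<le> g0 / 2 ^ Suc i" by (simp add: field_simps)
      then show ?thesis using a' by simp
    qed
  qed
  have stepb: "norm (th (Suc i) - th i) \<le> g0 / m / 2^i \<and> norm (G (th (Suc i))) \<le> norm (G (th i)) / 2" for i
  proof (cases "G (th i) = 0")
    case True then show ?thesis using stay[OF True] g00 m by simp
  next
    case False
    have a: "norm (th i - t0) \<le> 2 * g0 / m * (1 - 1 / 2^i)" and b: "norm (G (th i)) \<le> g0 / 2^i" using inv[of i] by auto
    have tB: "th i \<in> Bo" using inBo[OF a] .
    define d where "d = inv (DG (th i)) (G (th i))"
    have thS: "th (Suc i) = th i - d" using step[OF tB False] by (simp add: d_def)
    have Dd: "DG (th i) d = G (th i)" using inv_eq[OF tB] by (simp add: d_def)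
    have nd: "norm d \<le> norm (G (th i)) / m"
      using low[OF tB, of d] Dd m by (simp add: field_simps mult.commute)
    have nd2: "norm d \<le> g0 / m / 2^i"
      using order_trans[OF nd divide_right_mono[OF b less_imp_le[OF m]]] by (simp add: field_simps)
    have sB: "th (Suc i) \<in> Bo" using inBo inv[of "Suc i"] by blast
    have e: "G (th (Suc i)) - G (th i) - DG (th i) (th (Suc i) - th i) = G (th (Suc i))"
      using Dd lin[OF tB] by (simp add: thS linear_neg)
    have "norm (G (th (Suc i))) \<le> L * (norm d)\<^sup>2"
      using tay[OF tB sB] unfolding e by (simp add: thS)
    also have "\<dots> \<le> L * (norm (G (th i)) / m)\<^sup>2"
      using nd L by (intro mult_left_mono power_mono) auto
    also have "\<dots> = (L * norm (G (th i)) / m\<^sup>2) * norm (G (th i))"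
      by (simp add: power2_eq_square field_simps)
    also have "\<dots> \<le> (1/2) * norm (G (th i))"
    proof (rule mult_right_mono)
      have "norm (G (th i)) \<le> g0" using b div_pow2_le[OF g00, of i] by linarith
      then have "L * norm (G (th i)) \<le> L * g0" using L by (rule mult_left_mono)
      then show "L * norm (G (th i)) / m\<^sup>2 \<le> 1/2" using Lg m by (simp add: field_simps)
    qed simp
    finally show ?thesis using nd2 thS by simp
  qed
  show "\<forall>i. norm (th i - t0) \<le> 2 * g0 / m * (1 - 1 / 2^i) \<and> norm (G (th i)) \<le> g0 / 2^i
           \<and> norm (th (Suc i) - th i) \<le> g0 / m / 2^i \<and> norm (G (th (Suc i))) \<le> norm (G (th i)) / 2"
    using inv stepb by blast
  define dl where "dl j = th (Suc j) - th j" for j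
  have tel: "th i = t0 + (\<Sum>j<i. dl j)" for i
    by (induction i) (simp_all add: th0 dl_def)
  have sn: "summable (\<lambda>j. norm (dl j))"
  proof (rule summable_comparison_test[where g="\<lambda>j. g0 / m * (1/2)^j"])
    show "\<exists>N. \<forall>n\<ge>N. norm (norm (dl n)) \<le> g0 / m * (1 / 2) ^ n"
    proof (intro exI allI impI)
      fix n :: nat
      have "norm (dl n) \<le> g0 / m / 2^n" using stepb[of n] by (simp add: dl_def)
      also have "g0 / m / 2^n = g0 / m * (1 / 2) ^ n" by (simp add: power_one_over)
      finally show "norm (norm (dl n)) \<le> g0 / m * (1 / 2) ^ n" by simp
    qed
    show "summable (\<lambda>j. g0 / m * (1 / 2) ^ j)" by (intro summable_mult summable_geometric) simp
  qed
  have conv: "th \<longlonglongrightarrow> t0 + suminf dl"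
    unfolding tel by (intro tendsto_add tendsto_const summable_LIMSEQ summable_norm_cancel[OF sn])
  define l where "l = t0 + suminf dl"
  have lin: "l \<in> cball t0 (2 * g0 / m)"
  proof (rule Lim_in_closed_set[OF closed_cball _ _ conv[folded l_def]])
    show "\<forall>\<^sub>F x in sequentially. th x \<in> cball t0 (2 * g0 / m)"
    proof (rule always_eventually, rule allI)
      fix i
      have "2 * g0 / m * (1 - 1 / 2^i) \<le> 2 * g0 / m" using mult_left_le[OF _ R0, of "1 - 1 / 2^i"] by simp
      then show "th i \<in> cball t0 (2 * g0 / m)" using inv[of i] by (auto simp: dist_norm norm_minus_commute)
    qed
  qed simp
  have lB: "l \<in> Bo" using lin sub by blast
  have "(\<lambda>i. G (th i)) \<longlonglongrightarrow> G l"
    using isCont_tendsto_compose[OF has_derivative_continuous[OF dG[OF lB]] conv[folded l_def]] .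
  moreover have "(\<lambda>i. G (th i)) \<longlonglongrightarrow> 0"
  proof (rule tendsto_norm_zero_cancel, rule Lim_null_comparison)
    show "\<forall>\<^sub>F i in sequentially. norm (norm (G (th i))) \<le> g0 / 2^i" using inv by simp
    show "(\<lambda>i. g0 / 2^i) \<longlonglongrightarrow> 0" by (rule LIMSEQ_divide_realpow_zero) simp
  qed
  ultimately have "G l = 0" using LIMSEQ_unique by blast
  then show "\<exists>l. th \<longlonglongrightarrow> l \<and> l \<in> cball t0 (2 * g0 / m) \<and> G l = 0"
    using conv lin l_def by blast
qed

locale rob2 = rob +
  fixes \<sigma>X :: real
  assumes sX: "\<sigma>X > 0"
    and A2: "sigma_min (integral (rR P) (\<lambda>x. (rho P x / (dt P)\<^sup>2) *\<^sub>R
          (transpose (DX P x (thm1 P)) ** DX P x (thm1 P)))) \<ge> \<sigma>X"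
begin

lemma AA_tm: "AA (thm1 P) = 0" by (simp add: AA_def hA_def dd_def)

lemma DX_eq: "x \<in> rR P \<Longrightarrow> DX P x t = matrix (D1 x t)"
  unfolding DX_def jacobian_def using frechet_derivative_at[OF H0] by metis

lemma MM_eq: "x \<in> rR P \<Longrightarrow> transpose (DX P x t) ** DX P x t =
   (\<chi> i j. \<Sum>k\<in>UNIV. D1 x t (axis i 1) $ k * D1 x t (axis j 1) $ k)"
  by (simp add: DX_eq vec_eq_iff matrix_matrix_mult_def transpose_def matrix_def)

lemma MM_cont: "continuous_on (rR P) (\<lambda>x. transpose (DX P x t) ** DX P x t)"
proof -
  have "continuous_on (rR P) (\<lambda>x. (\<chi> i j. \<Sum>k\<in>UNIV. D1 x t (axis i 1) $ k * D1 x t (axis j 1) $ k))"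
    by (intro continuous_intros D_cont)
  then show ?thesis by (rule continuous_on_eq) (simp add: MM_eq)
qed

lemma bl_mv: "bounded_linear (\<lambda>M::real^'n^'n. M *v v)"
proof -
  have "linear (\<lambda>M::real^'n^'n. M *v v)"
    by (rule linearI) (simp_all add: vec_eq_iff matrix_vector_mult_def sum.distrib sum_distrib_left algebra_simps)
  then show ?thesis by (simp add: linear_conv_bounded_linear)
qed

lemma H_apply: "(integral (rR P) (\<lambda>x. (rho P x / (dt P)\<^sup>2) *\<^sub>R (transpose (DX P x (thm1 P)) ** DX P x (thm1 P)))) *v v
   = dA (thm1 P) v"
proof -
  have rB': "\<forall>x\<in>rR P. \<bar>r x\<bar> \<le> B\<rho> / (dt P)\<^sup>2" using r_bd by auto
  have int: "(\<lambda>x. r x *\<^sub>R (transpose (DX P x (thm1 P)) ** DX P x (thm1 P))) integrable_on rR P"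
    by (rule int_scaled[OF R_compact r_meas rB' MM_cont])
  have "(integral (rR P) (\<lambda>x. r x *\<^sub>R (transpose (DX P x (thm1 P)) ** DX P x (thm1 P)))) *v v
      = integral (rR P) (\<lambda>x. (r x *\<^sub>R (transpose (DX P x (thm1 P)) ** DX P x (thm1 P))) *v v)"
    using integral_linear[OF int bl_mv] by (simp add: o_def)
  also have "\<dots> = dA (thm1 P) v"
    unfolding dA_def
  proof (rule integral_cong)
    fix x assume x: "x \<in> rR P"
    have lin: "linear (D1 x (thm1 P))" using H0[OF x] has_derivative_linear by blast
    have "(r x *\<^sub>R (transpose (DX P x (thm1 P)) ** DX P x (thm1 P))) *v v
        = r x *\<^sub>R (transpose (DX P x (thm1 P)) *v (DX P x (thm1 P) *v v))"
      by (simp add: matrix_vector_mul_assoc scaleR_matrix_vector_assoc)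
    also have "\<dots> = r x *\<^sub>R (transpose (DX P x (thm1 P)) *v D1 x (thm1 P) v)"
      using matrix_vector_mul(2)[OF lin] by (simp add: DX_eq[OF x] fun_eq_iff)
    also have "\<dots> = r x *\<^sub>R hA' x (thm1 P) v"
      unfolding DX_transpose[OF x] by (simp add: hA'_def dd_def)
    finally show "(r x *\<^sub>R (transpose (DX P x (thm1 P)) ** DX P x (thm1 P))) *v v = r x *\<^sub>R hA' x (thm1 P) v" .
  qed
  finally show ?thesis by (simp add: r_def)
qed

lemma dA_low: "\<sigma>X * norm v \<le> norm (dA (thm1 P) v)"
proof (cases "v = 0")
  case True then show ?thesis by simp
next
  case False
  define H where "H = integral (rR P) (\<lambda>x. (rho P x / (dt P)\<^sup>2) *\<^sub>R (transpose (DX P x (thm1 P)) ** DX P x (thm1 P)))"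
  define u where "u = v /\<^sub>R norm v"
  have nu: "norm u = 1" using False by (simp add: u_def)
  have "sigma_min H \<le> norm (H *v u)"
    unfolding sigma_min_def
  proof (rule cInf_lower)
    show "norm (H *v u) \<in> {norm (H *v u) |u. norm u = 1}" using nu by auto
    show "bdd_below {norm (H *v u) |u. norm u = 1}" by (rule bdd_belowI[of _ 0]) auto
  qed
  then have "\<sigma>X \<le> norm (H *v u)" using A2 H_def by simp
  also have "H *v u = inverse (norm v) *\<^sub>R (H *v v)"
    unfolding u_def using linear_scale[OF matrix_vector_mul_linear[of H], of "inverse (norm v)" v] by simp
  finally have "\<sigma>X \<le> norm (H *v v) / norm v" by (simp add: divide_inverse_commute)
  then have "\<sigma>X * norm v \<le> norm (H *v v)" using False by (simp add: field_simps)
  then show ?thesis using H_apply by (simp add: H_def)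
qed

end

context rob2 begin

definition wok where "wok w \<longleftrightarrow> (\<forall>p\<in>RI. \<bar>w (fst p) (snd p)\<bar> \<le> 1)"

lemma feasible_wok: "feasible P w \<Longrightarrow> wok w"
proof (unfold wok_def, intro ballI)
  fix p assume f: "feasible P w" and p: "p \<in> RI"
  obtain x j where pe: "p = (x, j)" and x: "x \<in> rC P" and j: "j < rV P x" using p by (auto simp: RI_def)
  have nn: "\<forall>j<rV P x. 0 \<le> w x j" and s1: "(\<Sum>j<rV P x. w x j) \<le> 1" using f x by (auto simp: feasible_def)
  have "w x j \<le> (\<Sum>j<rV P x. w x j)" using nn j by (intro member_le_sum) auto
  then show "\<bar>w (fst p) (snd p)\<bar> \<le> 1" using s1 nn j pe by auto
qed

definition GB where "GB w t = BB t - FF w t - tau P"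
definition dGB where "dGB w t v = dB t v - dF w t v"
definition GG where "GG \<alpha> w t = (1/\<alpha>) *\<^sub>R AA t + GB w t"
definition DGG where "DGG \<alpha> w t v = (1/\<alpha>) *\<^sub>R dA t v + dGB w t v"

lemma Gop_eq: "Gop P \<alpha> t w = GG \<alpha> w t"
  by (simp add: Gop_def GG_def GB_def Aop_eq Bop_eq)

lemma Gop_fun: "(\<lambda>t. Gop P \<alpha> t w) = GG \<alpha> w"
  by (rule ext) (rule Gop_eq)

lemma consts_ex: "\<exists>CA CBF. nice UNIV Bl (\<lambda>_::unit. AA) (\<lambda>_. dA) CA \<and>
   (\<forall>w. wok w \<longrightarrow> nice UNIV Bl (\<lambda>_::unit. GB w) (\<lambda>_. dGB w) CBF \<and> (\<forall>t\<in>Bl. norm (FF w t) \<le> CBF))"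
proof -
  obtain CA where CA: "nice UNIV Bl (\<lambda>_::unit. \<lambda>t. AA t) (\<lambda>_ t. dA t) CA" using AA_nice_ex by blast
  obtain CB where CB: "nice UNIV Bl (\<lambda>_::unit. \<lambda>t. BB t) (\<lambda>_ t. dB t) CB" using BB_nice_ex by blast
  obtain CF where CF: "\<And>w. wok w \<Longrightarrow> nice UNIV Bl (\<lambda>_::unit. \<lambda>t. FF w t) (\<lambda>_ t. dF w t) CF"
    using FF_nice_ex unfolding wok_def by blast
  define C1 where "C1 = CB + CF + norm (tau P)"
  have CB0: "CB \<ge> 0" using niceD(1)[OF CB] .
  have res: "nice UNIV Bl (\<lambda>_::unit. GB w) (\<lambda>_. dGB w) (4 * C1) \<and> (\<forall>t\<in>Bl. norm (FF w t) \<le> 4 * C1)" if w: "wok w" for w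
  proof -
    have CF0: "CF \<ge> 0" using niceD(1)[OF CF[OF w]] .
    have b: "nice UNIV Bl (\<lambda>_::unit. \<lambda>t. BB t) (\<lambda>_ t. dB t) C1"
      by (rule nice_mono[OF CB]) (use CF0 in \<open>auto simp: C1_def\<close>)
    have f: "nice UNIV Bl (\<lambda>_::unit. \<lambda>t. FF w t) (\<lambda>_ t. dF w t) C1"
      by (rule nice_mono[OF CF[OF w]]) (use CB0 in \<open>auto simp: C1_def\<close>)
    have c: "nice UNIV Bl (\<lambda>_::unit. \<lambda>t. tau P) (\<lambda>_ t v. 0) (2 * C1)"
      by (rule nice_const) (use CB0 CF0 in \<open>auto simp: C1_def\<close>)
    have "nice UNIV Bl (\<lambda>_::unit. \<lambda>t. BB t - FF w t - tau P) (\<lambda>_ t v. dB t v - dF w t v - 0) (2 * (2 * C1))"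
      by (rule nice_diff[OF nice_diff[OF b f] c])
    then have "nice UNIV Bl (\<lambda>_::unit. GB w) (\<lambda>_. dGB w) (2 * (2 * C1))"
      by (rule nice_cong) (simp_all add: GB_def dGB_def)
    moreover have "\<forall>t\<in>Bl. norm (FF w t) \<le> 4 * C1"
    proof
      fix t assume "t \<in> Bl"
      then have "norm (FF w t) \<le> C1" using niceD(3)[OF f, of undefined t] by simp
      moreover have "C1 \<ge> 0" using CB0 CF0 by (simp add: C1_def)
      ultimately show "norm (FF w t) \<le> 4 * C1" by linarith
    qed
    ultimately show ?thesis by simp
  qed
  show ?thesis using CA res by blast
qed

lemma tm_in: "thm1 P \<in> Bl" by (rule tm_Bl)

lemma G_analysis:
  assumes CA: "nice UNIV Bl (\<lambda>_::unit. AA) (\<lambda>_. dA) CA" and CBF: "nice UNIV Bl (\<lambda>_::unit. GB w) (\<lambda>_. dGB w) CBF"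
    and al: "0 < \<alpha>" "\<alpha> \<le> 1" "\<alpha> * (4 * (CBF + 1)) \<le> \<sigma>X"
    and r0: "\<rho>0 = min 1 (\<sigma>X / (2 * (CA + 1)))"
  shows "\<And>t. t \<in> ball (thm1 P) \<rho>0 \<Longrightarrow> (GG \<alpha> w has_derivative DGG \<alpha> w t) (at t)"
    and "\<And>t v. t \<in> ball (thm1 P) \<rho>0 \<Longrightarrow> \<sigma>X / (4 * \<alpha>) * norm v \<le> norm (DGG \<alpha> w t v)"
    and "\<And>t s. t \<in> ball (thm1 P) \<rho>0 \<Longrightarrow> s \<in> ball (thm1 P) \<rho>0 \<Longrightarrow>
           norm (GG \<alpha> w s - GG \<alpha> w t - DGG \<alpha> w t (s - t)) \<le> (CA + CBF) / \<alpha> * (norm (s - t))\<^sup>2"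
    and "\<And>t. t \<in> ball (thm1 P) \<rho>0 \<Longrightarrow> dGth P \<alpha> t w = DGG \<alpha> w t \<and> dGth_ok P \<alpha> t w"
    and "\<And>t. t \<in> ball (thm1 P) \<rho>0 \<Longrightarrow> GG \<alpha> w t = 0 \<Longrightarrow> norm (t - thm1 P) \<le> 2 * \<alpha> * CBF / \<sigma>X"
proof -
  have CA0: "CA \<ge> 0" using niceD(1)[OF CA] .
  have CBF0: "CBF \<ge> 0" using niceD(1)[OF CBF] .
  have sub: "ball (thm1 P) \<rho>0 \<subseteq> Bl" using r0 by (auto simp: Bl_def)
  have r1: "CA * \<rho>0 \<le> \<sigma>X / 2"
  proof -
    have "CA * \<rho>0 \<le> CA * (\<sigma>X / (2 * (CA + 1)))" using r0 CA0 by (intro mult_left_mono) auto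
    also have "\<dots> \<le> (CA + 1) * (\<sigma>X / (2 * (CA + 1)))" using sX CA0 by (intro mult_right_mono) auto
    also have "\<dots> = \<sigma>X / 2" using CA0 by (simp add: field_simps)
    finally show ?thesis .
  qed
  show d: "(GG \<alpha> w has_derivative DGG \<alpha> w t) (at t)" if t: "t \<in> ball (thm1 P) \<rho>0" for t
  proof -
    have tB: "t \<in> Bl" using t sub by blast
    have "((\<lambda>t. (1/\<alpha>) *\<^sub>R AA t + GB w t) has_derivative (\<lambda>v. (1/\<alpha>) *\<^sub>R dA t v + dGB w t v)) (at t)"
      by (intro has_derivative_add has_derivative_scaleR_right niceD(2)[OF CA _ tB, of undefined, simplified]
          niceD(2)[OF CBF _ tB, of undefined, simplified]) 
    then show ?thesis by (simp add: GG_def[abs_def] DGG_def[abs_def])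
  qed
  show low: "\<sigma>X / (4 * \<alpha>) * norm v \<le> norm (DGG \<alpha> w t v)" if t: "t \<in> ball (thm1 P) \<rho>0" for t v
  proof -
    have tB: "t \<in> Bl" using t sub by blast
    have dt: "norm (t - thm1 P) < \<rho>0" using t by (simp add: dist_norm norm_minus_commute)
    have l1: "norm (dA t v - dA (thm1 P) v) \<le> CA * norm (t - thm1 P) * norm v"
      using niceD(5)[OF CA _ tB tm_Bl, of undefined v] by simp
    have "CA * norm (t - thm1 P) * norm v \<le> \<sigma>X / 2 * norm v"
    proof (rule mult_right_mono)
      have "CA * norm (t - thm1 P) \<le> CA * \<rho>0" using dt CA0 by (intro mult_left_mono) auto
      then show "CA * norm (t - thm1 P) \<le> \<sigma>X / 2" using r1 by linarith
    qed simp
    then have a: "\<sigma>X / 2 * norm v \<le> norm (dA t v)"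
      using dA_low[of v] l1 norm_triangle_ineq2[of "dA (thm1 P) v" "dA t v"] norm_minus_commute[of "dA t v" "dA (thm1 P) v"]
      by linarith
    have b: "norm (dGB w t v) \<le> CBF * norm v" using niceD(4)[OF CBF _ tB, of undefined v] by simp
    have "norm ((1/\<alpha>) *\<^sub>R dA t v) - norm (dGB w t v) \<le> norm (DGG \<alpha> w t v)"
      unfolding DGG_def by (metis norm_diff_ineq diff_minus_eq_add norm_minus_cancel)
    moreover have "norm ((1/\<alpha>) *\<^sub>R dA t v) \<ge> (1/\<alpha>) * (\<sigma>X / 2 * norm v)"
    proof -
      have "(1/\<alpha>) * (\<sigma>X / 2 * norm v) \<le> (1/\<alpha>) * norm (dA t v)"
        by (rule mult_left_mono[OF a]) (use al in simp)
      then show ?thesis using al(1) by simp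
    qed
    moreover have "CBF * norm v \<le> \<sigma>X / (4 * \<alpha>) * norm v"
    proof (rule mult_right_mono)
      show "CBF \<le> \<sigma>X / (4 * \<alpha>)" using al by (simp add: field_simps)
    qed simp
    moreover have "(1/\<alpha>) * (\<sigma>X / 2 * norm v) = 2 * (\<sigma>X / (4 * \<alpha>) * norm v)" by (simp add: field_simps)
    ultimately show ?thesis using b by linarith
  qed
  show tay: "norm (GG \<alpha> w s - GG \<alpha> w t - DGG \<alpha> w t (s - t)) \<le> (CA + CBF) / \<alpha> * (norm (s - t))\<^sup>2"
    if t: "t \<in> ball (thm1 P) \<rho>0" and s: "s \<in> ball (thm1 P) \<rho>0" for t s
  proof -
    have tB: "t \<in> Bl" and sB: "s \<in> Bl" using t s sub by auto
    have ta: "norm (AA s - AA t - dA t (s - t)) \<le> CA * (norm (s - t))\<^sup>2"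
      using nice_taylor[OF CA Bl_convex _ tB sB, of undefined] by simp
    have tb: "norm (GB w s - GB w t - dGB w t (s - t)) \<le> CBF * (norm (s - t))\<^sup>2"
      using nice_taylor[OF CBF Bl_convex _ tB sB, of undefined] by simp
    have e: "GG \<alpha> w s - GG \<alpha> w t - DGG \<alpha> w t (s - t) = (1/\<alpha>) *\<^sub>R (AA s - AA t - dA t (s - t)) + (GB w s - GB w t - dGB w t (s - t))"
      by (simp add: GG_def DGG_def algebra_simps)
    have "norm (GG \<alpha> w s - GG \<alpha> w t - DGG \<alpha> w t (s - t)) \<le> (1/\<alpha>) * (CA * (norm (s - t))\<^sup>2) + CBF * (norm (s - t))\<^sup>2"
      unfolding e using ta tb al(1) norm_triangle_ineq[of "(1/\<alpha>) *\<^sub>R (AA s - AA t - dA t (s - t))" "GB w s - GB w t - dGB w t (s - t)"]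
      by (smt (verit) mult_left_mono norm_scaleR real_norm_def abs_of_pos divide_pos_pos zero_less_one)
    also have "\<dots> \<le> (CA + CBF) / \<alpha> * (norm (s - t))\<^sup>2"
    proof -
      have "CBF \<le> CBF / \<alpha>" using al CBF0 by (simp add: field_simps mult_left_le)
      then have "CBF * (norm (s - t))\<^sup>2 \<le> CBF / \<alpha> * (norm (s - t))\<^sup>2" by (rule mult_right_mono) simp
      moreover have "(1/\<alpha>) * (CA * (norm (s - t))\<^sup>2) + CBF / \<alpha> * (norm (s - t))\<^sup>2 = (CA + CBF) / \<alpha> * (norm (s - t))\<^sup>2"
        by (simp add: field_simps add_divide_distrib[symmetric])
      ultimately show ?thesis by linarith
    qed
    finally show ?thesis .
  qed
  show "dGth P \<alpha> t w = DGG \<alpha> w t \<and> dGth_ok P \<alpha> t w" if t: "t \<in> ball (thm1 P) \<rho>0" for t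
  proof
    have dd: "((\<lambda>t. Gop P \<alpha> t w) has_derivative DGG \<alpha> w t) (at t)" unfolding Gop_fun by (rule d[OF t])
    show e: "dGth P \<alpha> t w = DGG \<alpha> w t" unfolding dGth_def using frechet_derivative_at[OF dd] by simp
    have lin: "linear (DGG \<alpha> w t)" using has_derivative_linear[OF d[OF t]] .
    have "bij (DGG \<alpha> w t)"
      by (rule lin_bij_from_low[OF lin low[OF t]]) (use sX al in simp)
    then show "dGth_ok P \<alpha> t w" unfolding dGth_ok_def e using dd differentiableI by blast
  qed
  show "norm (t - thm1 P) \<le> 2 * \<alpha> * CBF / \<sigma>X" if t: "t \<in> ball (thm1 P) \<rho>0" and z: "GG \<alpha> w t = 0" for t
  proof -
    have tB: "t \<in> Bl" using t sub by blast
    define d where "d = t - thm1 P"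
    have dt: "norm d < \<rho>0" using t by (simp add: d_def dist_norm norm_minus_commute)
    have ta: "norm (AA t - dA (thm1 P) d) \<le> CA * (norm d)\<^sup>2"
      using nice_taylor[OF CA Bl_convex _ tm_Bl tB, of undefined] AA_tm by (simp add: d_def)
    have "CA * (norm d)\<^sup>2 \<le> \<sigma>X / 2 * norm d"
    proof -
      have "CA * norm d \<le> CA * \<rho>0" using dt CA0 by (intro mult_left_mono) auto
      then have "CA * norm d \<le> \<sigma>X / 2" using r1 by linarith
      from mult_right_mono[OF this norm_ge_zero[of d]] show ?thesis by (simp add: power2_eq_square mult.assoc)
    qed
    then have lowA: "\<sigma>X / 2 * norm d \<le> norm (AA t)"
      using dA_low[of d] ta norm_triangle_ineq2[of "dA (thm1 P) d" "AA t"] norm_minus_commute[of "AA t" "dA (thm1 P) d"]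
      by linarith
    have "(1/\<alpha>) *\<^sub>R AA t = - GB w t" using z unfolding GG_def by (simp add: eq_neg_iff_add_eq_0)
    then have "\<alpha> *\<^sub>R ((1/\<alpha>) *\<^sub>R AA t) = \<alpha> *\<^sub>R (- GB w t)" by simp
    then have "AA t = - \<alpha> *\<^sub>R GB w t" using al(1) by simp
    then have "norm (AA t) \<le> \<alpha> * CBF"
      using niceD(3)[OF CBF _ tB, of undefined] al(1) by (simp add: mult_left_mono)
    then have "\<sigma>X / 2 * norm d \<le> \<alpha> * CBF" using lowA by linarith
    then show ?thesis using sX by (simp add: d_def field_simps)
  qed
qed

end

context rob2 begin

lemma proj_core:
  assumes CA: "nice UNIV Bl (\<lambda>_::unit. AA) (\<lambda>_. dA) CA" and CBF: "nice UNIV Bl (\<lambda>_::unit. GB w) (\<lambda>_. dGB w) CBF"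
    and al: "0 < \<alpha>" "\<alpha> \<le> 1" "\<alpha> * (4 * (CBF + 1)) \<le> \<sigma>X"
    and r0: "\<rho>0 = min 1 (\<sigma>X / (2 * (CA + 1)))"
    and Lg: "32 * (CA + CBF) * g0 * \<alpha> \<le> \<sigma>X\<^sup>2"
    and st: "norm (t0 - thm1 P) + 8 * \<alpha> * g0 / \<sigma>X < \<rho>0" and g0: "norm (Gop P \<alpha> t0 w) \<le> g0"
    and th0: "th 0 = t0"
    and step: "\<And>i. th i \<in> ball (thm1 P) \<rho>0 \<Longrightarrow> Gop P \<alpha> (th i) w \<noteq> 0 \<Longrightarrow>
                 th (Suc i) = th i - inv (dGth P \<alpha> (th i) w) (Gop P \<alpha> (th i) w)"
    and stay: "\<And>i. Gop P \<alpha> (th i) w = 0 \<Longrightarrow> th (Suc i) = th i"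
  shows "\<forall>i. th i \<in> ball (thm1 P) \<rho>0 \<and> Vop P \<alpha> (th (Suc i)) w \<le> 3/4 * Vop P \<alpha> (th i) w"
    and "\<exists>l. th \<longlonglongrightarrow> l \<and> l \<in> ball (thm1 P) \<rho>0 \<and> Gop P \<alpha> l w = 0 \<and> norm (l - thm1 P) \<le> 2 * \<alpha> * CBF / \<sigma>X"
proof -
  note GA = G_analysis[OF CA CBF al r0]
  define m where "m = \<sigma>X / (4 * \<alpha>)"
  define L where "L = (CA + CBF) / \<alpha>"
  have CA0: "CA \<ge> 0" using niceD(1)[OF CA] .
  have CBF0: "CBF \<ge> 0" using niceD(1)[OF CBF] .
  have m0: "m > 0" using sX al by (simp add: m_def)
  have L0: "L \<ge> 0" using CA0 CBF0 al by (simp add: L_def)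
  have g00: "g0 \<ge> 0" using g0 norm_ge_zero order_trans by blast
  have R: "2 * g0 / m = 8 * \<alpha> * g0 / \<sigma>X" using sX al by (simp add: m_def field_simps)
  have sub: "cball t0 (2 * g0 / m) \<subseteq> ball (thm1 P) \<rho>0"
  proof
    fix x assume "x \<in> cball t0 (2 * g0 / m)"
    then have "norm (x - t0) \<le> 8 * \<alpha> * g0 / \<sigma>X" using R by (simp add: dist_norm norm_minus_commute)
    moreover have "norm (x - thm1 P) \<le> norm (x - t0) + norm (t0 - thm1 P)"
      using norm_triangle_ineq[of "x - t0" "t0 - thm1 P"] by simp
    ultimately show "x \<in> ball (thm1 P) \<rho>0" using st by (simp add: dist_norm norm_minus_commute)
  qed
  have Lg': "L * g0 \<le> m\<^sup>2 / 2"
  proof -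
    have "L * g0 = (CA + CBF) * g0 / \<alpha>" by (simp add: L_def)
    also have "\<dots> \<le> \<sigma>X\<^sup>2 / (32 * \<alpha>) / \<alpha>"
      using Lg al by (intro divide_right_mono) (simp_all add: field_simps)
    also have "\<dots> = m\<^sup>2 / 2" by (simp add: m_def power2_eq_square field_simps)
    finally show ?thesis .
  qed
  have N: "\<forall>i. norm (th i - t0) \<le> 2 * g0 / m * (1 - 1 / 2^i) \<and> norm (GG \<alpha> w (th i)) \<le> g0 / 2^i
           \<and> norm (th (Suc i) - th i) \<le> g0 / m / 2^i \<and> norm (GG \<alpha> w (th (Suc i))) \<le> norm (GG \<alpha> w (th i)) / 2"
   and N2: "\<exists>l. th \<longlonglongrightarrow> l \<and> l \<in> cball t0 (2 * g0 / m) \<and> GG \<alpha> w l = 0"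
  proof -
    have hyps: "\<And>t. t \<in> ball (thm1 P) \<rho>0 \<Longrightarrow> (GG \<alpha> w has_derivative DGG \<alpha> w t) (at t)"
      "\<And>t v. t \<in> ball (thm1 P) \<rho>0 \<Longrightarrow> m * norm v \<le> norm (DGG \<alpha> w t v)"
      "\<And>t s. t \<in> ball (thm1 P) \<rho>0 \<Longrightarrow> s \<in> ball (thm1 P) \<rho>0 \<Longrightarrow> norm (GG \<alpha> w s - GG \<alpha> w t - DGG \<alpha> w t (s - t)) \<le> L * (norm (s - t))\<^sup>2"
      "norm (GG \<alpha> w t0) \<le> g0"
      "\<And>i. th i \<in> ball (thm1 P) \<rho>0 \<Longrightarrow> GG \<alpha> w (th i) \<noteq> 0 \<Longrightarrow> th (Suc i) = th i - inv (DGG \<alpha> w (th i)) (GG \<alpha> w (th i))"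
      "\<And>i. GG \<alpha> w (th i) = 0 \<Longrightarrow> th (Suc i) = th i"
      using GA(1,2,3) g0 step stay GA(4) by (auto simp: m_def L_def Gop_eq)
    note nw = newton[OF hyps(1) hyps(2) m0 hyps(3) L0 sub hyps(4) Lg' th0 hyps(5) hyps(6)]
    show "\<forall>i. norm (th i - t0) \<le> 2 * g0 / m * (1 - 1 / 2^i) \<and> norm (GG \<alpha> w (th i)) \<le> g0 / 2^i
           \<and> norm (th (Suc i) - th i) \<le> g0 / m / 2^i \<and> norm (GG \<alpha> w (th (Suc i))) \<le> norm (GG \<alpha> w (th i)) / 2"
      by (rule nw(1))
    show "\<exists>l. th \<longlonglongrightarrow> l \<and> l \<in> cball t0 (2 * g0 / m) \<and> GG \<alpha> w l = 0" by (rule nw(2))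
  qed
  have inB: "th i \<in> ball (thm1 P) \<rho>0" for i
  proof -
    have "2 * g0 / m * (1 - 1 / 2^i) \<le> 2 * g0 / m"
      using mult_left_le[of "1 - 1 / 2^i" "2 * g0 / m"] g00 m0 by simp
    then have "th i \<in> cball t0 (2 * g0 / m)" using N by (auto simp: dist_norm norm_minus_commute intro: order_trans)
    then show ?thesis using sub by blast
  qed
  show "\<forall>i. th i \<in> ball (thm1 P) \<rho>0 \<and> Vop P \<alpha> (th (Suc i)) w \<le> 3/4 * Vop P \<alpha> (th i) w"
  proof
    fix i
    have h: "norm (GG \<alpha> w (th (Suc i))) \<le> norm (GG \<alpha> w (th i)) / 2" using N by blast
    have "(norm (GG \<alpha> w (th (Suc i))))\<^sup>2 \<le> (norm (GG \<alpha> w (th i)) / 2)\<^sup>2"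
      using h by (intro power_mono) auto
    also have "\<dots> \<le> 3/4 * (norm (GG \<alpha> w (th i)))\<^sup>2" by (simp add: power2_eq_square)
    finally show "th i \<in> ball (thm1 P) \<rho>0 \<and> Vop P \<alpha> (th (Suc i)) w \<le> 3/4 * Vop P \<alpha> (th i) w"
      using inB by (simp add: Vop_def Gop_eq)
  qed
  obtain l where l: "th \<longlonglongrightarrow> l" "l \<in> cball t0 (2 * g0 / m)" "GG \<alpha> w l = 0" using N2 by blast
  have lB: "l \<in> ball (thm1 P) \<rho>0" using l(2) sub by blast
  show "\<exists>l. th \<longlonglongrightarrow> l \<and> l \<in> ball (thm1 P) \<rho>0 \<and> Gop P \<alpha> l w = 0 \<and> norm (l - thm1 P) \<le> 2 * \<alpha> * CBF / \<sigma>X"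
    using l lB GA(5)[OF lB l(3)] by (auto simp: Gop_eq)
qed

end

context rob2 begin

lemma papply:
  assumes CA: "nice UNIV Bl (\<lambda>_::unit. AA) (\<lambda>_. dA) CA"
    and CB: "\<forall>w. wok w \<longrightarrow> nice UNIV Bl (\<lambda>_::unit. GB w) (\<lambda>_. dGB w) CBF \<and> (\<forall>t\<in>Bl. norm (FF w t) \<le> CBF)"
    and r0: "\<rho>0 = min 1 (\<sigma>X / (2 * (CA + 1)))"
    and al: "0 < \<alpha>" "\<alpha> \<le> 1" "\<alpha> * (4 * (CBF + 1)) \<le> \<sigma>X" "32 * (CA + CBF) * g0 * \<alpha> \<le> \<sigma>X\<^sup>2"
       "\<alpha> * (2 * CBF + 8 * g0) < \<rho>0 * \<sigma>X"
    and fw: "feasible P w'" and t0: "norm (t0 - thm1 P) \<le> 2 * \<alpha> * CBF / \<sigma>X" and g0: "norm (Gop P \<alpha> t0 w') \<le> g0"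
    and pr: "projection P \<alpha> w' t0 pth l"
  shows "(\<forall>i. Vop P \<alpha> (pth (Suc i)) w' \<le> 3/4 * Vop P \<alpha> (pth i) w') \<and> Gop P \<alpha> l w' = 0
     \<and> norm (l - thm1 P) \<le> 2 * \<alpha> * CBF / \<sigma>X \<and> Vop P \<alpha> (pth 0) w' \<le> g0\<^sup>2"
proof -
  have CBw: "nice UNIV Bl (\<lambda>_::unit. GB w') (\<lambda>_. dGB w') CBF" using CB feasible_wok[OF fw] by blast
  have st: "norm (t0 - thm1 P) + 8 * \<alpha> * g0 / \<sigma>X < \<rho>0"
  proof -
    have "norm (t0 - thm1 P) + 8 * \<alpha> * g0 / \<sigma>X \<le> \<alpha> * (2 * CBF + 8 * g0) / \<sigma>X"
      using t0 by (simp add: field_simps add_divide_distrib)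
    also have "\<dots> < \<rho>0" using al(5) sX by (simp add: field_simps)
    finally show ?thesis .
  qed
  have p0: "pth 0 = t0" using pr by (simp add: projection_def)
  have pst: "\<And>i. pth i \<in> ball (thm1 P) \<rho>0 \<Longrightarrow> Gop P \<alpha> (pth i) w' \<noteq> 0 \<Longrightarrow>
      pth (Suc i) = pth i - inv (dGth P \<alpha> (pth i) w') (Gop P \<alpha> (pth i) w')"
    using pr unfolding projection_def by (metis (full_types))
  have pstay: "\<And>i. Gop P \<alpha> (pth i) w' = 0 \<Longrightarrow> pth (Suc i) = pth i"
    using pr unfolding projection_def by (metis (full_types))
  note pc = proj_core[OF CA CBw al(1,2,3) r0 al(4) st g0 p0 pst pstay]
  obtain l' where l': "pth \<longlonglongrightarrow> l'" "Gop P \<alpha> l' w' = 0" "norm (l' - thm1 P) \<le> 2 * \<alpha> * CBF / \<sigma>X"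
    using pc(2) by blast
  have "pth \<longlonglongrightarrow> l" using pr by (simp add: projection_def)
  then have "l = l'" using l'(1) LIMSEQ_unique by blast
  moreover have "Vop P \<alpha> (pth 0) w' \<le> g0\<^sup>2"
    using g0 p0 by (simp add: Vop_def power_mono)
  ultimately show ?thesis using pc(1) l' by blast
qed

lemma feasible_zero: "feasible P (\<lambda>x j. 0)" by (simp add: feasible_def)

lemma univ:
  assumes CA: "nice UNIV Bl (\<lambda>_::unit. AA) (\<lambda>_. dA) CA"
    and CB: "\<forall>w. wok w \<longrightarrow> nice UNIV Bl (\<lambda>_::unit. GB w) (\<lambda>_. dGB w) CBF \<and> (\<forall>t\<in>Bl. norm (FF w t) \<le> CBF)"
    and r0: "\<rho>0 = min 1 (\<sigma>X / (2 * (CA + 1)))" and g0d: "g0 = 2 * CBF + 1"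
    and al: "0 < \<alpha>" "\<alpha> \<le> 1" "\<alpha> * (4 * (CBF + 1)) \<le> \<sigma>X" "32 * (CA + CBF) * g0 * \<alpha> \<le> \<sigma>X\<^sup>2"
       "\<alpha> * (2 * CBF + 8 * g0) < \<rho>0 * \<sigma>X"
    and run: "pgm_run P \<alpha> \<eta> \<epsilon> th w gam tht wt pr T"
  shows "\<forall>k. enat k \<le> T \<longrightarrow> Vop P \<alpha> (pr k 0) (proj_w w wt k) \<le> g0\<^sup>2 \<and>
           norm (th k - thm1 P) \<le> 2 * \<alpha> * CBF / \<sigma>X \<and>
           (\<forall>i. Vop P \<alpha> (pr k (Suc i)) (proj_w w wt k) \<le> 3/4 * Vop P \<alpha> (pr k i) (proj_w w wt k))"
proof -
  note pa = papply[OF CA CB r0 al]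
  have CBn: "\<And>w. feasible P w \<Longrightarrow> nice UNIV Bl (\<lambda>_::unit. GB w) (\<lambda>_. dGB w) CBF"
    using CB feasible_wok by blast
  have CBf: "\<And>w t. feasible P w \<Longrightarrow> t\<in>Bl \<Longrightarrow> norm (FF w t) \<le> CBF"
    using CB feasible_wok by blast
  have CBF0: "CBF \<ge> 0" using niceD(1)[OF CBn[OF feasible_zero]] .
  have R1: "2 * \<alpha> * CBF / \<sigma>X < 1"
  proof -
    have "2 * \<alpha> * CBF / \<sigma>X \<le> \<alpha> * (2 * CBF + 8 * g0) / \<sigma>X"
      using al(1) g0d CBF0 sX by (intro divide_right_mono) (auto simp: algebra_simps)
    also have "\<dots> < \<rho>0" using al(5) sX by (simp add: field_simps)
    also have "\<rho>0 \<le> 1" using r0 by simp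
    finally show ?thesis .
  qed
  have inBl: "t \<in> Bl" if "norm (t - thm1 P) \<le> 2 * \<alpha> * CBF / \<sigma>X" for t
    using that R1 by (simp add: Bl_def dist_norm norm_minus_commute)
  have w0: "w 0 = (\<lambda>x j. 0)" using run by (simp add: pgm_run_def)
  have pr0: "projection P \<alpha> (w 0) (thm1 P) (pr 0) (th 0)" using run unfolding pgm_run_def by blast
  have stepk: "dGth_ok P \<alpha> (th (k-1)) (w (k-1)) \<and>
        (let dw = (\<lambda>x j. wt k x j - w (k-1) x j) in
          dw \<in> qp_dom P (w (k-1)) \<and>
          (\<forall>d\<in>qp_dom P (w (k-1)).
              qp_obj P \<alpha> (gam (k-1)) (th (k-1)) (w (k-1)) dw
                \<le> qp_obj P \<alpha> (gam (k-1)) (th (k-1)) (w (k-1)) d)) \<and>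
        projection P \<alpha> (wt k) (th (k-1)) (pr k) (tht k) \<and>
        (if Kop P (tht k) > Kop P (th (k-1))
         then gam k = \<eta> * gam (k-1) \<and> th k = th (k-1) \<and> w k = w (k-1)
         else gam k = gam (k-1) / \<eta> \<and> th k = tht k \<and> w k = wt k)" if "1 \<le> k" "enat k \<le> T" for k
    using run that unfolding pgm_run_def by blast
  have Gz: "norm (Gop P \<alpha> (thm1 P) (\<lambda>x j. 0)) \<le> g0"
  proof -
    have "Gop P \<alpha> (thm1 P) (\<lambda>x j. 0) = GB (\<lambda>x j. 0) (thm1 P)"
      by (simp add: Gop_eq GG_def AA_tm)
    moreover have "norm (GB (\<lambda>x j. 0) (thm1 P)) \<le> CBF"
      using niceD(3)[OF CBn[OF feasible_zero] _ tm_Bl, of "()"] by simp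
    ultimately show ?thesis using g0d CBF0 by simp
  qed
  have wtk: "feasible P (wt k)" if "1 \<le> k" "enat k \<le> T" for k
  proof -
    have "(\<lambda>x j. wt k x j - w (k-1) x j) \<in> qp_dom P (w (k-1))" using stepk[OF that] by (simp add: Let_def)
    then show ?thesis by (simp add: qp_dom_def)
  qed
  have Gwt: "norm (Gop P \<alpha> t w2) \<le> g0" if "Gop P \<alpha> t w1 = 0" "feasible P w1" "feasible P w2" "t \<in> Bl" for t w1 w2
  proof -
    have "Gop P \<alpha> t w2 = Gop P \<alpha> t w2 - Gop P \<alpha> t w1" using that(1) by simp
    also have "\<dots> = FF w1 t - FF w2 t" by (simp add: Gop_eq GG_def GB_def)
    finally have "norm (Gop P \<alpha> t w2) \<le> norm (FF w1 t) + norm (FF w2 t)" by (simp add: norm_triangle_ineq4)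
    also have "\<dots> \<le> CBF + CBF" using CBf[OF that(2,4)] CBf[OF that(3,4)] by (rule add_mono)
    finally show ?thesis using g0d by simp
  qed
  have inv: "enat k \<le> T \<longrightarrow> norm (th k - thm1 P) \<le> 2 * \<alpha> * CBF / \<sigma>X \<and> Gop P \<alpha> (th k) (w k) = 0 \<and> feasible P (w k)" for k
  proof (induction k)
    case 0
    have "norm (thm1 P - thm1 P) \<le> 2 * \<alpha> * CBF / \<sigma>X" using al(1) CBF0 sX by simp
    from pa[OF feasible_zero this Gz pr0[unfolded w0]] show ?case using w0 feasible_zero by simp
  next
    case (Suc k)
    show ?case
    proof
      assume T: "enat (Suc k) \<le> T"
      have "enat k \<le> enat (Suc k)" by simp
      then have Tk: "enat k \<le> T" using T by (rule order_trans)
      with Suc.IH have ih: "norm (th k - thm1 P) \<le> 2 * \<alpha> * CBF / \<sigma>X" "Gop P \<alpha> (th k) (w k) = 0" "feasible P (w k)"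
        by auto
      note sk = stepk[OF _ T, simplified]
      have fwt: "feasible P (wt (Suc k))" using wtk[OF _ T] by simp
      have prj: "projection P \<alpha> (wt (Suc k)) (th k) (pr (Suc k)) (tht (Suc k))" using sk by simp
      have g: "norm (Gop P \<alpha> (th k) (wt (Suc k))) \<le> g0" by (rule Gwt[OF ih(2) ih(3) fwt inBl[OF ih(1)]])
      note pp = pa[OF fwt ih(1) g prj]
      show "norm (th (Suc k) - thm1 P) \<le> 2 * \<alpha> * CBF / \<sigma>X \<and> Gop P \<alpha> (th (Suc k)) (w (Suc k)) = 0 \<and> feasible P (w (Suc k))"
      proof (cases "Kop P (tht (Suc k)) > Kop P (th k)")
        case True
        then have "th (Suc k) = th k" "w (Suc k) = w k" using sk by auto
        then show ?thesis using ih by simp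
      next
        case False
        then have "th (Suc k) = tht (Suc k)" "w (Suc k) = wt (Suc k)" using sk by auto
        then show ?thesis using pp fwt by simp
      qed
    qed
  qed
  show ?thesis
  proof (intro allI impI)
    fix k assume T: "enat k \<le> T"
    have thk: "norm (th k - thm1 P) \<le> 2 * \<alpha> * CBF / \<sigma>X" using inv T by blast
    show "Vop P \<alpha> (pr k 0) (proj_w w wt k) \<le> g0\<^sup>2 \<and> norm (th k - thm1 P) \<le> 2 * \<alpha> * CBF / \<sigma>X \<and>
           (\<forall>i. Vop P \<alpha> (pr k (Suc i)) (proj_w w wt k) \<le> 3/4 * Vop P \<alpha> (pr k i) (proj_w w wt k))"
    proof (cases "k = 0")
      case True
      have "norm (thm1 P - thm1 P) \<le> 2 * \<alpha> * CBF / \<sigma>X" using al(1) CBF0 sX by simp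
      from pa[OF feasible_zero this Gz pr0[unfolded w0]] show ?thesis using True thk w0 by (simp add: proj_w_def)
    next
      case False
      then have k1: "1 \<le> k" by simp
      have "enat (k-1) \<le> enat k" by simp
      then have Tk: "enat (k-1) \<le> T" using T by (rule order_trans)
      then have ih: "norm (th (k-1) - thm1 P) \<le> 2 * \<alpha> * CBF / \<sigma>X" "Gop P \<alpha> (th (k-1)) (w (k-1)) = 0" "feasible P (w (k-1))"
        using inv by auto
      note sk = stepk[OF k1 T]
      have fwt: "feasible P (wt k)" using wtk[OF k1 T] .
      have prj: "projection P \<alpha> (wt k) (th (k-1)) (pr k) (tht k)" using sk by simp
      have g: "norm (Gop P \<alpha> (th (k-1)) (wt k)) \<le> g0" by (rule Gwt[OF ih(2) ih(3) fwt inBl[OF ih(1)]])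
      note pp = pa[OF fwt ih(1) g prj]
      show ?thesis using pp thk False by (simp add: proj_w_def)
    qed
  qed
qed

end

lemma cont_eval: "continuous_on UNIV (\<lambda>dw :: 'a \<Rightarrow> 'b \<Rightarrow> 'c::topological_space. dw x j)"
proof -
  have "continuous_on UNIV ((\<lambda>g :: 'b \<Rightarrow> 'c. g j) \<circ> (\<lambda>dw :: 'a \<Rightarrow> 'b \<Rightarrow> 'c. dw x))"
    by (rule continuous_on_compose) (auto intro: continuous_on_subset[OF continuous_on_product_coordinates])
  then show ?thesis by (simp add: o_def)
qed

lemma compact_PiE_UNIV:
  assumes "\<And>i. compact (S i)"
  shows "compact (PiE UNIV S :: ('a \<Rightarrow> 'b::topological_space) set)"
proof -
  have "compactin (product_topology (\<lambda>i. euclidean) UNIV) (PiE UNIV S)"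
    using assms by (simp add: compactin_PiE)
  then show ?thesis by (simp add: euclidean_product_topology)
qed

lemma compact_box: "compact {dw :: 'a \<Rightarrow> nat \<Rightarrow> real. \<forall>x j. dw x j \<in> {-2..2}}"
proof -
  have i: "compact (PiE UNIV (\<lambda>j::nat. {-2..2::real}))" by (rule compact_PiE_UNIV) simp
  have "compact (PiE UNIV (\<lambda>x::'a. PiE UNIV (\<lambda>j::nat. {-2..2::real})))"
    by (rule compact_PiE_UNIV) (rule i)
  moreover have "PiE UNIV (\<lambda>x::'a. PiE UNIV (\<lambda>j::nat. {-2..2::real})) = {dw :: 'a \<Rightarrow> nat \<Rightarrow> real. \<forall>x j. dw x j \<in> {-2..2}}"
    by (auto simp: PiE_UNIV_domain Pi_iff)
  ultimately show ?thesis by simp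
qed

lemma closed_cond_eval: "closed {dw :: 'a \<Rightarrow> 'b \<Rightarrow> real. c \<longrightarrow> dw x j = 0}"
proof (cases c)
  case True
  have "closed {dw :: 'a \<Rightarrow> 'b \<Rightarrow> real. dw x j = 0}"
    by (rule closed_Collect_eq) (auto intro: cont_eval continuous_on_const)
  then show ?thesis using True by simp
next
  case False then show ?thesis by simp
qed

lemma lin_expand: "linear f \<Longrightarrow> f (u::real^'n) = (\<Sum>k\<in>UNIV. u$k *\<^sub>R f (axis k 1))"
proof -
  assume l: "linear f"
  have "f u = f (\<Sum>k\<in>UNIV. u$k *\<^sub>R axis k 1)"
    using basis_expansion[of u] by (simp add: scalar_mult_eq_scaleR)
  also have "\<dots> = (\<Sum>k\<in>UNIV. u$k *\<^sub>R f (axis k 1))"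
    using l by (simp add: linear_sum linear_scale)
  finally show ?thesis .
qed

context rob2 begin

definition hE where "hE k x t = inner (dd x t) (D1 x t (axis k 1))"
definition hE' where "hE' k x t v = inner (D1 x t v) (D1 x t (axis k 1)) + inner (dd x t) (D2 x t (axis k 1) v)"
definition EE where "EE k t v = integral (rR P) (\<lambda>x. r x *\<^sub>R hE' k x t v)"

lemma EE_deriv: "t \<in> Bl \<Longrightarrow> ((\<lambda>t. dK t (axis k 1)) has_derivative EE k t) (at t)"
proof -
  assume t: "t \<in> Bl"
  have d1: "nice (rR P) Bl (\<lambda>x t. D1 x t (axis k 1)) (\<lambda>x t. D2 x t (axis k 1)) (2 * CX)"
    by (rule nice_mono[OF niceD1]) (use niceD(1)[OF niceX] in auto)
  have n: "nice (rR P) Bl (hE k) (hE' k) (4 * (2 * CX)\<^sup>2)"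
    using nice_inner[OF nice_dd d1 Bl_convex] unfolding hE_def[abs_def] hE'_def[abs_def] .
  have c1: "continuous_on (rR P) (\<lambda>x. hE k x t)" for t
    unfolding hE_def dd_def by (intro continuous_intros D_cont)
  have c2: "continuous_on (rR P) (\<lambda>x. hE' k x t v)" for t v
    unfolding hE'_def dd_def by (intro continuous_intros D_cont)
  note ni = nice_integral[OF n R_compact r_meas r_bd Bl_open Bl_convex c1 c2]
  have "((\<lambda>t. integral (rR P) (\<lambda>x. r x *\<^sub>R hE k x t)) has_derivative EE k t) (at t)"
    using niceD(2)[OF ni _ t, of undefined] by (simp add: EE_def[abs_def])
  moreover have "(\<lambda>t. integral (rR P) (\<lambda>x. r x *\<^sub>R hE k x t)) = (\<lambda>t. dK t (axis k 1))"
    by (simp add: dK_def hK'_def hE_def)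
  ultimately show ?thesis by simp
qed

lemma KK_deriv: "t \<in> Bl \<Longrightarrow> (KK has_derivative dK t) (at t)"
proof -
  assume t: "t \<in> Bl"
  obtain C where C: "nice UNIV Bl (\<lambda>_::unit. \<lambda>t. KK t) (\<lambda>_ t. dK t) C" using KK_nice_ex by blast
  show ?thesis using niceD(2)[OF C _ t, of "()"] by simp
qed

lemma DK_eq: "t \<in> Bl \<Longrightarrow> DK P t u = dK t u"
proof -
  assume t: "t \<in> Bl"
  have "Kop P = KK" by (rule ext) (rule Kop_eq)
  then show ?thesis unfolding DK_def using frechet_derivative_at[OF KK_deriv[OF t]] by simp
qed

lemma DK_expand: "t \<in> Bl \<Longrightarrow> DK P t u = (\<Sum>k\<in>UNIV. u$k * dK t (axis k 1))"
proof -
  assume t: "t \<in> Bl"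
  have "linear (dK t)" using has_derivative_linear[OF KK_deriv[OF t]] .
  from lin_expand[OF this, of u] show ?thesis using DK_eq[OF t] by simp
qed

lemma D2K_eq: "t \<in> Bl \<Longrightarrow> D2K P t u v = (\<Sum>k\<in>UNIV. u$k * EE k t v)"
proof -
  assume t: "t \<in> Bl"
  have "((\<lambda>s. \<Sum>k\<in>UNIV. u$k * dK s (axis k 1)) has_derivative (\<lambda>v. \<Sum>k\<in>UNIV. u$k * EE k t v)) (at t)"
    by (intro has_derivative_sum has_derivative_mult_right EE_deriv[OF t])
  then have "((\<lambda>s. DK P s u) has_derivative (\<lambda>v. \<Sum>k\<in>UNIV. u$k * EE k t v)) (at t)"
    by (rule has_derivative_transform_within_open[OF _ Bl_open t]) (simp add: DK_expand)
  then have "(\<lambda>v. \<Sum>k\<in>UNIV. u$k * EE k t v) = frechet_derivative (\<lambda>s. DK P s u) (at t)"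
    by (rule frechet_derivative_at)
  then show ?thesis unfolding D2K_def by (metis (no_types, lifting))
qed

lemma EE_lin: "t \<in> Bl \<Longrightarrow> bounded_linear (EE k t)"
  using EE_deriv has_derivative_bounded_linear by blast

lemma dK_lin: "t \<in> Bl \<Longrightarrow> bounded_linear (dK t)"
  using KK_deriv has_derivative_bounded_linear by blast

end

lemma closed_cond_le:
  fixes f g :: "'a::topological_space \<Rightarrow> real"
  assumes "continuous_on UNIV f" "continuous_on UNIV g"
  shows "closed {x. c \<longrightarrow> f x \<le> g x}"
proof (cases c)
  case True
  then show ?thesis using closed_Collect_le[OF assms] by simp
qed simp

context rob2 begin

lemma feas_bounds: "feasible P w \<Longrightarrow> x \<in> rC P \<Longrightarrow> j < rV P x \<Longrightarrow> 0 \<le> w x j \<and> w x j \<le> 1"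
proof -
  assume f: "feasible P w" and x: "x \<in> rC P" and j: "j < rV P x"
  have nn: "\<forall>j<rV P x. 0 \<le> w x j" and s1: "(\<Sum>j<rV P x. w x j) \<le> 1" using f x by (auto simp: feasible_def)
  have "w x j \<le> (\<Sum>j<rV P x. w x j)" using nn j by (intro member_le_sum) auto
  then show ?thesis using s1 nn j by auto
qed

lemma qp_compact: "feasible P w \<Longrightarrow> compact (qp_dom P w) \<and> qp_dom P w \<noteq> {}"
proof -
  assume fw: "feasible P w"
  define B2 where "B2 = {dw :: real^3 \<Rightarrow> nat \<Rightarrow> real. \<forall>x j. dw x j \<in> {-2..2}}"
  define Cl where "Cl = {dw :: real^3 \<Rightarrow> nat \<Rightarrow> real. \<forall>x. \<forall>j. (x \<notin> rC P \<or> rV P x \<le> j) \<longrightarrow> dw x j = 0}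
     \<inter> {dw. \<forall>x. \<forall>j. (x \<in> rC P \<and> j < rV P x) \<longrightarrow> 0 \<le> w x j + dw x j}
     \<inter> {dw. \<forall>x. x \<in> rC P \<longrightarrow> (\<Sum>j<rV P x. w x j + dw x j) \<le> 1}"
  have eq: "qp_dom P w = B2 \<inter> Cl"
  proof
    show "qp_dom P w \<subseteq> B2 \<inter> Cl"
    proof
      fix dw assume d: "dw \<in> qp_dom P w"
      then have s: "supp_ok P dw" and f2: "feasible P (\<lambda>x j. w x j + dw x j)" by (auto simp: qp_dom_def)
      have "dw x j \<in> {-2..2}" for x j
      proof (cases "x \<in> rC P \<and> j < rV P x")
        case True
        then show ?thesis using feas_bounds[OF fw, of x j] feas_bounds[OF f2, of x j] by auto
      next
        case False then show ?thesis using s by (auto simp: supp_ok_def)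
      qed
      then show "dw \<in> B2 \<inter> Cl" using s f2 by (auto simp: B2_def Cl_def supp_ok_def feasible_def)
    qed
    show "B2 \<inter> Cl \<subseteq> qp_dom P w"
      by (auto simp: B2_def Cl_def qp_dom_def supp_ok_def feasible_def)
  qed
  have cB: "compact B2" unfolding B2_def by (rule compact_box)
  have ce: "continuous_on UNIV (\<lambda>dw :: real^3 \<Rightarrow> nat \<Rightarrow> real. w x j + dw x j)" for x j
    by (intro continuous_intros cont_eval)
  have cCl: "closed Cl" unfolding Cl_def
  proof (intro closed_Int closed_Collect_all)
    show "closed {dw :: real^3 \<Rightarrow> nat \<Rightarrow> real. (x \<notin> rC P \<or> rV P x \<le> j) \<longrightarrow> dw x j = 0}" for x j
      by (rule closed_cond_eval)
    show "closed {dw :: real^3 \<Rightarrow> nat \<Rightarrow> real. (x \<in> rC P \<and> j < rV P x) \<longrightarrow> 0 \<le> w x j + dw x j}" for x j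
      by (rule closed_cond_le) (auto intro: ce continuous_on_const)
    show "closed {dw :: real^3 \<Rightarrow> nat \<Rightarrow> real. x \<in> rC P \<longrightarrow> (\<Sum>j<rV P x. w x j + dw x j) \<le> 1}" for x
      by (rule closed_cond_le) (auto intro!: continuous_on_sum ce continuous_on_const)
  qed
  have "compact (qp_dom P w)" unfolding eq using cB cCl by (rule compact_Int_closed)
  moreover have "(\<lambda>x j. 0) \<in> qp_dom P w" using fw by (simp add: qp_dom_def supp_ok_def)
  ultimately show ?thesis by blast
qed

lemma FF_cont: "continuous_on UNIV (\<lambda>dw. FF dw t)"
  unfolding FF_def by (intro continuous_intros cont_eval)

lemma qp_exists:
  assumes CA: "nice UNIV Bl (\<lambda>_::unit. AA) (\<lambda>_. dA) CA" and CBF: "nice UNIV Bl (\<lambda>_::unit. GB w) (\<lambda>_. dGB w) CBF"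
    and al: "0 < \<alpha>" "\<alpha> \<le> 1" "\<alpha> * (4 * (CBF + 1)) \<le> \<sigma>X"
    and r0: "\<rho>0 = min 1 (\<sigma>X / (2 * (CA + 1)))"
    and th: "\<theta> \<in> ball (thm1 P) \<rho>0" and fw: "feasible P w"
  shows "\<exists>dw\<in>qp_dom P w. \<forall>d\<in>qp_dom P w. qp_obj P \<alpha> \<gamma> \<theta> w dw \<le> qp_obj P \<alpha> \<gamma> \<theta> w d"
proof -
  note GA = G_analysis[OF CA CBF al r0]
  have tB: "\<theta> \<in> Bl" using th r0 by (auto simp: Bl_def)
  have e: "dGth P \<alpha> \<theta> w = DGG \<alpha> w \<theta>" and ok: "dGth_ok P \<alpha> \<theta> w" using GA(4)[OF th] by auto
  have bij: "bij (DGG \<alpha> w \<theta>)" using ok e by (simp add: dGth_ok_def)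
  have blD: "bounded_linear (DGG \<alpha> w \<theta>)" using has_derivative_bounded_linear[OF GA(1)[OF th]] .
  have Li: "bounded_linear (inv (DGG \<alpha> w \<theta>))"
    using inj_linear_imp_inv_bounded_linear[OF blD] bij bij_is_inj by blast
  define J where "J dw = inv (DGG \<alpha> w \<theta>) (- FF dw \<theta>)" for dw
  have Jeq: "Jmap P \<alpha> \<theta> w dw = J dw" for dw
    by (simp add: Jmap_def dGw_def Fc_eq e J_def)
  have cJ: "continuous_on UNIV J"
    unfolding J_def[abs_def] by (intro bounded_linear.continuous_on[OF Li] continuous_intros FF_cont)
  have qeq: "qp_obj P \<alpha> \<gamma> \<theta> w dw = - dK \<theta> (J dw) + 1/2 * (\<Sum>k\<in>UNIV. J dw $ k * EE k \<theta> (J dw)) + (1/\<gamma>) * wnorm2 P dw" for dw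
    by (simp add: qp_obj_def Jeq DK_eq[OF tB] D2K_eq[OF tB])
  have cq: "continuous_on UNIV (\<lambda>dw. qp_obj P \<alpha> \<gamma> \<theta> w dw)"
    unfolding qeq wnorm2_def
    by (intro continuous_intros bounded_linear.continuous_on[OF dK_lin[OF tB]] bounded_linear.continuous_on[OF EE_lin[OF tB]] cJ cont_eval)
  obtain dw where "dw \<in> qp_dom P w" "\<forall>d\<in>qp_dom P w. qp_obj P \<alpha> \<gamma> \<theta> w dw \<le> qp_obj P \<alpha> \<gamma> \<theta> w d"
    using continuous_attains_inf[of "qp_dom P w" "qp_obj P \<alpha> \<gamma> \<theta> w"] qp_compact[OF fw] continuous_on_subset[OF cq] by blast
  then show ?thesis by blast
qed

end

context rob2 begin

lemma exist_run:
  assumes CA: "nice UNIV Bl (\<lambda>_::unit. AA) (\<lambda>_. dA) CA"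
    and CB: "\<forall>w. wok w \<longrightarrow> nice UNIV Bl (\<lambda>_::unit. GB w) (\<lambda>_. dGB w) CBF \<and> (\<forall>t\<in>Bl. norm (FF w t) \<le> CBF)"
    and r0: "\<rho>0 = min 1 (\<sigma>X / (2 * (CA + 1)))" and g0d: "g0 = 2 * CBF + 1"
    and al: "0 < \<alpha>" "\<alpha> \<le> 1" "\<alpha> * (4 * (CBF + 1)) \<le> \<sigma>X" "32 * (CA + CBF) * g0 * \<alpha> \<le> \<sigma>X\<^sup>2"
       "\<alpha> * (2 * CBF + 8 * g0) < \<rho>0 * \<sigma>X"
  shows "\<exists>th w gam tht wt pr T. pgm_run P \<alpha> \<eta> \<epsilon> th w gam tht wt pr T"
proof -
  have CBn: "\<And>w. feasible P w \<Longrightarrow> nice UNIV Bl (\<lambda>_::unit. GB w) (\<lambda>_. dGB w) CBF"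
    using CB feasible_wok by blast
  have CBf: "\<And>w t. feasible P w \<Longrightarrow> t\<in>Bl \<Longrightarrow> norm (FF w t) \<le> CBF"
    using CB feasible_wok by blast
  have CBF0: "CBF \<ge> 0" using niceD(1)[OF CBn[OF feasible_zero]] .
  define R1 where "R1 = 2 * \<alpha> * CBF / \<sigma>X"
  have st: "R1 + 8 * \<alpha> * g0 / \<sigma>X < \<rho>0"
  proof -
    have "R1 + 8 * \<alpha> * g0 / \<sigma>X = \<alpha> * (2 * CBF + 8 * g0) / \<sigma>X"
      by (simp add: R1_def field_simps add_divide_distrib)
    also have "\<dots> < \<rho>0" using al(5) sX by (simp add: field_simps)
    finally show ?thesis .
  qed
  have g00: "g0 \<ge> 0" using g0d CBF0 by simp
  have R1r: "R1 < \<rho>0" using st al(1) sX g00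
    by (smt (verit) divide_nonneg_pos mult_nonneg_nonneg)
  have r01: "\<rho>0 \<le> 1" using r0 by simp
  have inBl: "t \<in> Bl" if "norm (t - thm1 P) \<le> R1" for t
    using that R1r r01 by (simp add: Bl_def dist_norm norm_minus_commute)
  have inBo: "t \<in> ball (thm1 P) \<rho>0" if "norm (t - thm1 P) \<le> R1" for t
    using that R1r by (simp add: dist_norm norm_minus_commute)
  define nstep where "nstep w t = (if Gop P \<alpha> t w = 0 then t else t - inv (dGth P \<alpha> t w) (Gop P \<alpha> t w))" for w t
  define nseq where "nseq w t0 i = (nstep w ^^ i) t0" for w t0 i
  define plim where "plim w t0 = lim (nseq w t0)" for w t0
  have NS: "projection P \<alpha> w' t0 (nseq w' t0) (plim w' t0) \<and> Gop P \<alpha> (plim w' t0) w' = 0 \<and> norm (plim w' t0 - thm1 P) \<le> R1"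
    if fw: "feasible P w'" and t0: "norm (t0 - thm1 P) \<le> R1" and g: "norm (Gop P \<alpha> t0 w') \<le> g0" for w' t0
  proof -
    have CBw: "nice UNIV Bl (\<lambda>_::unit. GB w') (\<lambda>_. dGB w') CBF" using CBn[OF fw] .
    have st': "norm (t0 - thm1 P) + 8 * \<alpha> * g0 / \<sigma>X < \<rho>0" using t0 st by linarith
    have s0: "nseq w' t0 0 = t0" by (simp add: nseq_def)
    have sS: "nseq w' t0 (Suc i) = nstep w' (nseq w' t0 i)" for i by (simp add: nseq_def)
    have step: "\<And>i. nseq w' t0 i \<in> ball (thm1 P) \<rho>0 \<Longrightarrow> Gop P \<alpha> (nseq w' t0 i) w' \<noteq> 0 \<Longrightarrow>
       nseq w' t0 (Suc i) = nseq w' t0 i - inv (dGth P \<alpha> (nseq w' t0 i) w') (Gop P \<alpha> (nseq w' t0 i) w')"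
      by (simp add: sS nstep_def)
    have stay: "\<And>i. Gop P \<alpha> (nseq w' t0 i) w' = 0 \<Longrightarrow> nseq w' t0 (Suc i) = nseq w' t0 i"
      by (simp add: sS nstep_def)
    note pc = proj_core[OF CA CBw al(1,2,3) r0 al(4) st' g s0 step stay]
    obtain l where l: "nseq w' t0 \<longlonglongrightarrow> l" "Gop P \<alpha> l w' = 0" "norm (l - thm1 P) \<le> 2 * \<alpha> * CBF / \<sigma>X"
      using pc(2) by blast
    have pl: "plim w' t0 = l" unfolding plim_def using l(1) by (rule limI)
    have "projection P \<alpha> w' t0 (nseq w' t0) (plim w' t0)"
      unfolding projection_def
    proof (intro conjI allI)
      show "nseq w' t0 0 = t0" by (rule s0)
      show "nseq w' t0 \<longlonglongrightarrow> plim w' t0" using l(1) pl by simp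
      fix i
      have bi: "nseq w' t0 i \<in> ball (thm1 P) \<rho>0" using pc(1) by blast
      have ok: "dGth_ok P \<alpha> (nseq w' t0 i) w'" using G_analysis(4)[OF CA CBw al(1,2,3) r0 bi] by blast
      show "if Gop P \<alpha> (nseq w' t0 i) w' = 0 then nseq w' t0 (Suc i) = nseq w' t0 i
          else dGth_ok P \<alpha> (nseq w' t0 i) w' \<and>
               nseq w' t0 (Suc i) = nseq w' t0 i - inv (dGth P \<alpha> (nseq w' t0 i) w') (Gop P \<alpha> (nseq w' t0 i) w')"
        using ok by (simp add: sS nstep_def)
    qed
    then show ?thesis using l pl by (simp add: R1_def)
  qed
  have Gwt: "norm (Gop P \<alpha> t w2) \<le> g0" if "Gop P \<alpha> t w1 = 0" "feasible P w1" "feasible P w2" "t \<in> Bl" for t w1 w2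
  proof -
    have "Gop P \<alpha> t w2 = Gop P \<alpha> t w2 - Gop P \<alpha> t w1" using that(1) by simp
    also have "\<dots> = FF w1 t - FF w2 t" by (simp add: Gop_eq GG_def GB_def)
    finally have "norm (Gop P \<alpha> t w2) \<le> norm (FF w1 t) + norm (FF w2 t)" by (simp add: norm_triangle_ineq4)
    also have "\<dots> \<le> CBF + CBF" using CBf[OF that(2,4)] CBf[OF that(3,4)] by (rule add_mono)
    finally show ?thesis using g0d by simp
  qed
  have Gz: "norm (Gop P \<alpha> (thm1 P) (\<lambda>x j. 0)) \<le> g0"
  proof -
    have "Gop P \<alpha> (thm1 P) (\<lambda>x j. 0) = GB (\<lambda>x j. 0) (thm1 P)"
      by (simp add: Gop_eq GG_def AA_tm)
    moreover have "norm (GB (\<lambda>x j. 0) (thm1 P)) \<le> CBF"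
      using niceD(3)[OF CBn[OF feasible_zero] _ tm_Bl, of "()"] by simp
    ultimately show ?thesis using g0d CBF0 by simp
  qed
  define qpm where "qpm \<gamma> \<theta> w = (SOME dw. dw \<in> qp_dom P w \<and> (\<forall>d\<in>qp_dom P w. qp_obj P \<alpha> \<gamma> \<theta> w dw \<le> qp_obj P \<alpha> \<gamma> \<theta> w d))" for \<gamma> \<theta> w
  have QP: "qpm \<gamma> \<theta> w \<in> qp_dom P w \<and> (\<forall>d\<in>qp_dom P w. qp_obj P \<alpha> \<gamma> \<theta> w (qpm \<gamma> \<theta> w) \<le> qp_obj P \<alpha> \<gamma> \<theta> w d)"
    if fw: "feasible P w" and th: "norm (\<theta> - thm1 P) \<le> R1" for \<gamma> \<theta> w
  proof -
    have "\<exists>dw\<in>qp_dom P w. \<forall>d\<in>qp_dom P w. qp_obj P \<alpha> \<gamma> \<theta> w dw \<le> qp_obj P \<alpha> \<gamma> \<theta> w d"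
      by (rule qp_exists[OF CA CBn[OF fw] al(1,2,3) r0 inBo[OF th] fw])
    then show ?thesis unfolding qpm_def by (rule someI2_bex) blast
  qed
  define stp where "stp s = (let \<theta> = fst s; w = fst (snd s); \<gamma> = snd (snd s);
      wt = (\<lambda>x j. w x j + qpm \<gamma> \<theta> w x j); tt = plim wt \<theta> in
      if Kop P tt > Kop P \<theta> then (\<theta>, w, \<eta> * \<gamma>) else (tt, wt, \<gamma> / \<eta>))" for s
  define sq where "sq k = (stp ^^ k) (plim (\<lambda>x j. 0) (thm1 P), (\<lambda>x j. 0), 1)" for k
  define th where "th k = fst (sq k)" for k
  define w where "w k = fst (snd (sq k))" for k
  define gam where "gam k = snd (snd (sq k))" for k
  define wt where "wt k = (\<lambda>x j. w (k-1) x j + qpm (gam (k-1)) (th (k-1)) (w (k-1)) x j)" for k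
  define tht where "tht k = plim (wt k) (th (k-1))" for k
  define pr where "pr k = (if k = 0 then nseq (\<lambda>x j. 0) (thm1 P) else nseq (wt k) (th (k-1)))" for k
  define ret where "ret k \<longleftrightarrow> 1 \<le> k \<and> \<not> Kop P (tht k) > Kop P (th (k-1)) \<and> infnorm (tht k - th (k-1)) < \<epsilon>" for k
  define T where "T = (if \<exists>k. ret k then enat (LEAST k. ret k) else \<infinity>)"
  have sqS: "sq (Suc k) = stp (sq k)" for k by (simp add: sq_def)
  have sq0: "th 0 = plim (\<lambda>x j. 0) (thm1 P)" "w 0 = (\<lambda>x j. 0)" "gam 0 = 1"
    by (simp_all add: th_def w_def gam_def sq_def)
  have thS: "th (Suc k) = (if Kop P (tht (Suc k)) > Kop P (th k) then th k else tht (Suc k))"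
   and wS: "w (Suc k) = (if Kop P (tht (Suc k)) > Kop P (th k) then w k else wt (Suc k))"
   and gS: "gam (Suc k) = (if Kop P (tht (Suc k)) > Kop P (th k) then \<eta> * gam k else gam k / \<eta>)" for k
    by (simp_all add: th_def w_def gam_def tht_def wt_def sqS stp_def Let_def)
  have N0: "projection P \<alpha> (\<lambda>x j. 0) (thm1 P) (nseq (\<lambda>x j. 0) (thm1 P)) (plim (\<lambda>x j. 0) (thm1 P)) \<and>
      Gop P \<alpha> (plim (\<lambda>x j. 0) (thm1 P)) (\<lambda>x j. 0) = 0 \<and> norm (plim (\<lambda>x j. 0) (thm1 P) - thm1 P) \<le> R1"
    by (rule NS[OF feasible_zero _ Gz]) (use al(1) CBF0 sX in \<open>simp add: R1_def\<close>)
  have inv: "norm (th k - thm1 P) \<le> R1 \<and> Gop P \<alpha> (th k) (w k) = 0 \<and> feasible P (w k)" for k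
  proof (induction k)
    case 0 then show ?case using N0 sq0 feasible_zero by simp
  next
    case (Suc k)
    then have ih: "norm (th k - thm1 P) \<le> R1" "Gop P \<alpha> (th k) (w k) = 0" "feasible P (w k)" by auto
    have q: "qpm (gam k) (th k) (w k) \<in> qp_dom P (w k)" using QP[OF ih(3) ih(1)] by blast
    have fwt: "feasible P (wt (Suc k))" using q by (simp add: qp_dom_def wt_def)
    have g: "norm (Gop P \<alpha> (th k) (wt (Suc k))) \<le> g0" by (rule Gwt[OF ih(2) ih(3) fwt inBl[OF ih(1)]])
    have ns: "Gop P \<alpha> (tht (Suc k)) (wt (Suc k)) = 0 \<and> norm (tht (Suc k) - thm1 P) \<le> R1"
      using NS[OF fwt ih(1) g] by (simp add: tht_def)
    show ?case using ih ns fwt by (simp add: thS wS)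
  qed
  have c0: "w 0 = (\<lambda>x j. 0)" "gam 0 = 1" using sq0 by simp_all
  have c0': "projection P \<alpha> (w 0) (thm1 P) (pr 0) (th 0)" using N0 sq0 by (simp add: pr_def)
  have c1: "\<forall>k. 1 \<le> k \<and> enat k \<le> T \<longrightarrow>
        dGth_ok P \<alpha> (th (k-1)) (w (k-1)) \<and>
        (let dw = (\<lambda>x j. wt k x j - w (k-1) x j) in
          dw \<in> qp_dom P (w (k-1)) \<and>
          (\<forall>d\<in>qp_dom P (w (k-1)).
              qp_obj P \<alpha> (gam (k-1)) (th (k-1)) (w (k-1)) dw
                \<le> qp_obj P \<alpha> (gam (k-1)) (th (k-1)) (w (k-1)) d)) \<and>
        projection P \<alpha> (wt k) (th (k-1)) (pr k) (tht k) \<and>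
        (if Kop P (tht k) > Kop P (th (k-1))
         then gam k = \<eta> * gam (k-1) \<and> th k = th (k-1) \<and> w k = w (k-1)
         else gam k = gam (k-1) / \<eta> \<and> th k = tht k \<and> w k = wt k)"
  proof (intro allI impI)
    fix k assume k: "1 \<le> k \<and> enat k \<le> T"
    then obtain k' where k': "k = Suc k'" by (cases k) auto
    have ih: "norm (th k' - thm1 P) \<le> R1" "Gop P \<alpha> (th k') (w k') = 0" "feasible P (w k')" using inv by auto
    have q: "qpm (gam k') (th k') (w k') \<in> qp_dom P (w k') \<and>
        (\<forall>d\<in>qp_dom P (w k'). qp_obj P \<alpha> (gam k') (th k') (w k') (qpm (gam k') (th k') (w k')) \<le> qp_obj P \<alpha> (gam k') (th k') (w k') d)"
      using QP[OF ih(3) ih(1)] .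
    have dweq: "(\<lambda>x j. wt k x j - w (k-1) x j) = qpm (gam k') (th k') (w k')"
      by (simp add: k' wt_def)
    have fwt: "feasible P (wt k)" using q by (simp add: qp_dom_def wt_def k')
    have g: "norm (Gop P \<alpha> (th k') (wt k)) \<le> g0" by (rule Gwt[OF ih(2) ih(3) fwt inBl[OF ih(1)]])
    have prj: "projection P \<alpha> (wt k) (th k') (pr k) (tht k)"
      using NS[OF fwt ih(1) g] by (simp add: tht_def pr_def k')
    have ok: "dGth_ok P \<alpha> (th k') (w k')"
      using G_analysis(4)[OF CA CBn[OF ih(3)] al(1,2,3) r0 inBo[OF ih(1)]] by blast
    show "dGth_ok P \<alpha> (th (k-1)) (w (k-1)) \<and>
        (let dw = (\<lambda>x j. wt k x j - w (k-1) x j) in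
          dw \<in> qp_dom P (w (k-1)) \<and>
          (\<forall>d\<in>qp_dom P (w (k-1)).
              qp_obj P \<alpha> (gam (k-1)) (th (k-1)) (w (k-1)) dw
                \<le> qp_obj P \<alpha> (gam (k-1)) (th (k-1)) (w (k-1)) d)) \<and>
        projection P \<alpha> (wt k) (th (k-1)) (pr k) (tht k) \<and>
        (if Kop P (tht k) > Kop P (th (k-1))
         then gam k = \<eta> * gam (k-1) \<and> th k = th (k-1) \<and> w k = w (k-1)
         else gam k = gam (k-1) / \<eta> \<and> th k = tht k \<and> w k = wt k)"
      unfolding Let_def dweq using ok q prj by (simp add: k' thS wS gS)
  qed
  have c2: "\<forall>k. 1 \<le> k \<and> enat k < T \<longrightarrow>
        \<not> (\<not> Kop P (tht k) > Kop P (th (k-1)) \<and> infnorm (tht k - th (k-1)) < \<epsilon>)"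
  proof (intro allI impI)
    fix k assume k: "1 \<le> k \<and> enat k < T"
    show "\<not> (\<not> Kop P (tht k) > Kop P (th (k-1)) \<and> infnorm (tht k - th (k-1)) < \<epsilon>)"
    proof
      assume a: "\<not> Kop P (tht k) > Kop P (th (k-1)) \<and> infnorm (tht k - th (k-1)) < \<epsilon>"
      then have rk: "ret k" using k by (simp add: ret_def)
      then have "T = enat (LEAST k. ret k)" by (auto simp: T_def)
      then have "k < (LEAST k. ret k)" using k by simp
      then show False using not_less_Least rk by blast
    qed
  qed
  have c3: "\<forall>k. T = enat k \<longrightarrow> 1 \<le> k \<and>
        \<not> Kop P (tht k) > Kop P (th (k-1)) \<and> infnorm (tht k - th (k-1)) < \<epsilon>"
  proof (intro allI impI)
    fix k assume "T = enat k"
    then have "\<exists>k. ret k" "k = (LEAST k. ret k)" by (auto simp: T_def split: if_splits)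
    then have "ret k" by (metis LeastI)
    then show "1 \<le> k \<and> \<not> Kop P (tht k) > Kop P (th (k-1)) \<and> infnorm (tht k - th (k-1)) < \<epsilon>"
      by (simp add: ret_def)
  qed
  have run: "pgm_run P \<alpha> \<eta> \<epsilon> th w gam tht wt pr T"
    unfolding pgm_run_def by (intro conjI c0 c0' c1 c2 c3)
  then show ?thesis by blast
qed

end

context rob2 begin

lemma final:
  "\<exists>r>0. \<exists>MV>0. \<forall>\<beta>. 0 < \<beta> \<and> \<beta> \<le> 1 \<longrightarrow> (\<exists>\<alpha>3>0. \<forall>\<alpha>. 0 < \<alpha> \<and> \<alpha> \<le> \<alpha>3 \<and> \<alpha> \<le> 1 \<longrightarrow>
     (\<exists>th w gam tht wt pr T. pgm_run P \<alpha> \<eta> \<epsilon> th w gam tht wt pr T) \<and>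
     (\<forall>th w gam tht wt pr T. pgm_run P \<alpha> \<eta> \<epsilon> th w gam tht wt pr T \<longrightarrow>
        (\<forall>k. enat k \<le> T \<longrightarrow>
           Vop P \<alpha> (pr k 0) (proj_w w wt k) \<le> MV \<and>
           th k \<in> cball (thm1 P) (r * \<beta> / 2) \<and>
           (\<forall>i. Vop P \<alpha> (pr k (Suc i)) (proj_w w wt k) \<le> 3/4 * Vop P \<alpha> (pr k i) (proj_w w wt k)))))"
proof -
  obtain CA CBF where CA: "nice UNIV Bl (\<lambda>_::unit. AA) (\<lambda>_. dA) CA"
    and CB: "\<forall>w. wok w \<longrightarrow> nice UNIV Bl (\<lambda>_::unit. GB w) (\<lambda>_. dGB w) CBF \<and> (\<forall>t\<in>Bl. norm (FF w t) \<le> CBF)"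
    using consts_ex by blast
  have CA0: "CA \<ge> 0" using niceD(1)[OF CA] .
  have CBF0: "CBF \<ge> 0" using CB feasible_wok[OF feasible_zero] niceD(1) by meson
  define \<rho>0 where "\<rho>0 = min 1 (\<sigma>X / (2 * (CA + 1)))"
  define g0 where "g0 = 2 * CBF + 1"
  have r0p: "\<rho>0 > 0" using sX CA0 by (simp add: \<rho>0_def)
  have g0p: "g0 > 0" using CBF0 by (simp add: g0_def)
  have main: "\<forall>\<beta>. 0 < \<beta> \<and> \<beta> \<le> 1 \<longrightarrow> (\<exists>\<alpha>3>0. \<forall>\<alpha>. 0 < \<alpha> \<and> \<alpha> \<le> \<alpha>3 \<and> \<alpha> \<le> 1 \<longrightarrow>
     (\<exists>th w gam tht wt pr T. pgm_run P \<alpha> \<eta> \<epsilon> th w gam tht wt pr T) \<and>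
     (\<forall>th w gam tht wt pr T. pgm_run P \<alpha> \<eta> \<epsilon> th w gam tht wt pr T \<longrightarrow>
        (\<forall>k. enat k \<le> T \<longrightarrow>
           Vop P \<alpha> (pr k 0) (proj_w w wt k) \<le> g0\<^sup>2 \<and>
           th k \<in> cball (thm1 P) (1 * \<beta> / 2) \<and>
           (\<forall>i. Vop P \<alpha> (pr k (Suc i)) (proj_w w wt k) \<le> 3/4 * Vop P \<alpha> (pr k i) (proj_w w wt k)))))"
  proof (intro allI impI)
    fix \<beta> :: real assume b: "0 < \<beta> \<and> \<beta> \<le> 1"
    define a3 where "a3 = min (min (min 1 (\<sigma>X / (4 * (CBF + 1)))) (\<sigma>X\<^sup>2 / (32 * (CA + CBF + 1) * g0)))
        (min (\<rho>0 * \<sigma>X / (2 * (2 * CBF + 8 * g0 + 1))) (\<beta> * \<sigma>X / (4 * (CBF + 1))))"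
    show "\<exists>\<alpha>3>0. \<forall>\<alpha>. 0 < \<alpha> \<and> \<alpha> \<le> \<alpha>3 \<and> \<alpha> \<le> 1 \<longrightarrow>
     (\<exists>th w gam tht wt pr T. pgm_run P \<alpha> \<eta> \<epsilon> th w gam tht wt pr T) \<and>
     (\<forall>th w gam tht wt pr T. pgm_run P \<alpha> \<eta> \<epsilon> th w gam tht wt pr T \<longrightarrow>
        (\<forall>k. enat k \<le> T \<longrightarrow>
           Vop P \<alpha> (pr k 0) (proj_w w wt k) \<le> g0\<^sup>2 \<and>
           th k \<in> cball (thm1 P) (1 * \<beta> / 2) \<and>
           (\<forall>i. Vop P \<alpha> (pr k (Suc i)) (proj_w w wt k) \<le> 3/4 * Vop P \<alpha> (pr k i) (proj_w w wt k))))"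
    proof (intro exI[of _ a3] conjI allI impI)
      show "0 < a3" using sX CA0 CBF0 g0p r0p b by (simp add: a3_def)
      fix \<alpha> :: real assume a: "0 < \<alpha> \<and> \<alpha> \<le> a3 \<and> \<alpha> \<le> 1"
      have a1: "\<alpha> \<le> \<sigma>X / (4 * (CBF + 1))" and a2: "\<alpha> \<le> \<sigma>X\<^sup>2 / (32 * (CA + CBF + 1) * g0)"
        and a4: "\<alpha> \<le> \<rho>0 * \<sigma>X / (2 * (2 * CBF + 8 * g0 + 1))" and a5: "\<alpha> \<le> \<beta> * \<sigma>X / (4 * (CBF + 1))"
        using a by (auto simp: a3_def)
      have al3: "\<alpha> * (4 * (CBF + 1)) \<le> \<sigma>X" using a1 CBF0 by (simp add: field_simps)
      have al4: "32 * (CA + CBF) * g0 * \<alpha> \<le> \<sigma>X\<^sup>2"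
      proof -
        have "32 * (CA + CBF) * g0 * \<alpha> \<le> 32 * (CA + CBF + 1) * g0 * \<alpha>"
          using a g0p by (intro mult_right_mono) auto
        also have "\<dots> \<le> \<sigma>X\<^sup>2"
        proof -
          have pos: "32 * (CA + CBF + 1) * g0 > 0" using CA0 CBF0 g0p by simp
          from a2 have "\<alpha> * (32 * (CA + CBF + 1) * g0) \<le> \<sigma>X\<^sup>2" by (simp only: pos_le_divide_eq[OF pos])
          then show ?thesis by (simp add: algebra_simps)
        qed
        finally show ?thesis .
      qed
      have al5: "\<alpha> * (2 * CBF + 8 * g0) < \<rho>0 * \<sigma>X"
      proof -
        have q: "2 * CBF + 8 * g0 + 1 > 0" using CBF0 g0p by simp
        have "\<alpha> * (2 * (2 * CBF + 8 * g0 + 1)) \<le> \<rho>0 * \<sigma>X" using a4 q by (simp add: field_simps)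
        moreover have "\<alpha> * (2 * CBF + 8 * g0) < \<alpha> * (2 * (2 * CBF + 8 * g0 + 1))"
          using a CBF0 g0p by (intro mult_strict_left_mono) auto
        ultimately show ?thesis by linarith
      qed
      have al: "0 < \<alpha>" "\<alpha> \<le> 1" "\<alpha> * (4 * (CBF + 1)) \<le> \<sigma>X" "32 * (CA + CBF) * g0 * \<alpha> \<le> \<sigma>X\<^sup>2"
          "\<alpha> * (2 * CBF + 8 * g0) < \<rho>0 * \<sigma>X" using a al3 al4 al5 by auto
      have R1b: "2 * \<alpha> * CBF / \<sigma>X \<le> \<beta> / 2"
      proof -
        have "\<alpha> * (4 * (CBF + 1)) \<le> \<beta> * \<sigma>X" using a5 CBF0 by (simp add: field_simps)
        moreover have "2 * \<alpha> * CBF * 2 \<le> \<alpha> * (4 * (CBF + 1))" using a by (simp add: algebra_simps)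
        ultimately have "2 * \<alpha> * CBF * 2 \<le> \<beta> * \<sigma>X" by linarith
        then show ?thesis using sX by (simp add: field_simps)
      qed
      show "\<exists>th w gam tht wt pr T. pgm_run P \<alpha> \<eta> \<epsilon> th w gam tht wt pr T"
        by (rule exist_run[OF CA CB \<rho>0_def g0_def al])
      fix th w gam tht wt pr T assume run: "pgm_run P \<alpha> \<eta> \<epsilon> th w gam tht wt pr T"
      fix k assume kT: "enat k \<le> T"
      note U = univ[OF CA CB \<rho>0_def g0_def al run, rule_format, OF kT]
      show "th k \<in> cball (thm1 P) (1 * \<beta> / 2)"
        using U R1b by (simp add: dist_norm norm_minus_commute)
      show "Vop P \<alpha> (pr k 0) (proj_w w wt k) \<le> g0\<^sup>2" using U by blast
      show "Vop P \<alpha> (pr k (Suc i)) (proj_w w wt k) \<le> 3/4 * Vop P \<alpha> (pr k i) (proj_w w wt k)" for i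
        using U by blast
    qed
  qed
  show ?thesis
    apply (rule exI[of _ 1])
    apply (rule conjI)
     apply simp
    apply (rule exI[of _ "g0\<^sup>2"])
    apply (rule conjI)
    using g0p apply simp
    using main by simp
qed

end

theorem theorem4:
  fixes P :: "('n::finite) robot" and \<eta> \<epsilon> \<sigma>X :: real
  assumes R_compact: "compact (rR P)"
    and rho_meas: "rho P measurable_on rR P"
    and rho_bdd: "\<exists>B. \<forall>x\<in>rR P. rho P x \<le> B"
    and rho_pos: "\<forall>x\<in>rR P. rho P x > 0"
    and C_fin: "finite (rC P)" and C_sub: "rC P \<subseteq> rR P"
    and dt_pos: "dt P > 0"
    and eta: "\<eta> > 1" and eps: "\<epsilon> > 0"
    and A1: "\<exists>U. rR P \<times> UNIV \<subseteq> U \<and> smooth_on U (\<lambda>p. rX P (fst p) (snd p))"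
    and A2: "\<sigma>X > 0 \<and>
       sigma_min (integral (rR P) (\<lambda>x. (rho P x / (dt P)\<^sup>2) *\<^sub>R
          (transpose (DX P x (thm1 P)) ** DX P x (thm1 P)))) \<ge> \<sigma>X"
    and A3: "\<forall>x\<in>rC P. \<forall>j<rV P x. Ck_on 3 UNIV (\<lambda>\<theta>. rv P x \<theta> j)"
  shows "\<exists>r>0. \<exists>MV>0. \<forall>\<beta>. 0 < \<beta> \<and> \<beta> \<le> 1 \<longrightarrow> (\<exists>\<alpha>3>0. \<forall>\<alpha>. 0 < \<alpha> \<and> \<alpha> \<le> \<alpha>3 \<and> \<alpha> \<le> 1 \<longrightarrow>
     (\<exists>th w gam tht wt pr T. pgm_run P \<alpha> \<eta> \<epsilon> th w gam tht wt pr T) \<and>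
     (\<forall>th w gam tht wt pr T. pgm_run P \<alpha> \<eta> \<epsilon> th w gam tht wt pr T \<longrightarrow>
        (\<forall>k. enat k \<le> T \<longrightarrow>
           Vop P \<alpha> (pr k 0) (proj_w w wt k) \<le> MV \<and>
           th k \<in> cball (thm1 P) (r * \<beta> / 2) \<and>
           (\<forall>i. Vop P \<alpha> (pr k (Suc i)) (proj_w w wt k) \<le> 3/4 * Vop P \<alpha> (pr k i) (proj_w w wt k)))))"
proof -
  obtain U where U: "rR P \<times> UNIV \<subseteq> U" "smooth_on U (\<lambda>p. rX P (fst p) (snd p))" using A1 by blast
  obtain B where B: "\<forall>x\<in>rR P. rho P x \<le> B" using rho_bdd by blast
  interpret rob2 P U B \<sigma>X
    by unfold_locales (use R_compact rho_meas B rho_pos C_fin C_sub dt_pos U A3 A2 in auto)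
  show ?thesis by (rule final)
qed

end
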